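(* For each $A\in\Pi^{\imath}_{n,d}$, $\sigma_\imath(A)=PT_\imath(w_A^+)$.
   Context: $d\ge1$, $n=2r\ge2$. $W_{C_d}$: permutations $w$ of $\{\pm1,\dots,\pm d\}$ with $w(-i)=-w(i)$. $\Pi^{\imath}_{n,d}$: matrices $(a_{ij})_{i,j\in[-r,r]\setminus\{0\}}$ over $\mathbb N$ with $a_{ij}=a_{-i,-j}$, $\sum a_{ij}=2d$. For symmetric $\lambda$ with sum $2d$: $R_i^\lambda=[\lambda_1+\dots+\lambda_{i-1}+1,\lambda_1+\dots+\lambda_i]$ ($i>0$), $R_{-i}^\lambda=-R_i^\lambda$, $W_\lambda=\{w:w(R_i^\lambda)=R_i^\lambda\ \forall i\}$. $w_A^+$ is the longest element of the unique double coset $W_{ro(A)}yW_{co(A)}$ with $\sharp(R_i^{ro(A)}\cap y(R_j^{co(A)}))=a_{ij}$ ($ro,co$ = row/column sum vectors). $\sigma_\imath(A)$: order $([-r,r]\setminus\{0\})^2$ by $(i,j)\le(i',j')$ iff $i\ge i'$ and $j\le j'$; $\mathfrak s_k(A)$ is the max over unions $F$ of $k$ disjoint chains of $\sum_{(i,j)\in F}a_{ij}$, $\mathfrak s_0=0$; $\sigma_\imath(A)=(\mathfrak s_i(A)-\mathfrak s_{i-1}(A))_{1\le i\le n}$. $PT_\imath(w)$: regard $w$ as a permutation of $\{1,\dots,2d\}$ via $-d\leftrightarrow1,\dots,-1\leftrightarrow d,1\leftrightarrow d+1,\dots,d\leftrightarrow2d$, with $w_t$ the image of $t$. For a tableau $T$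 with entries decreasing along rows and columns, $T\leftarrow k$: if $k_1=k$ is $\le$ every entry of the first row, append it there; otherwise replace the largest entry $k_2<k_1$ of the first row by $k_1$ and insert $k_2$ into the next row likewise, etc. $P_0=\emptyset$, $P_t=P_{t-1}\leftarrow w_t$; $PT_\imath(w)$ is the shape of $P_{2d}$. *)

theory Defs
  imports Main
begin

definition Ir :: "nat \<Rightarrow> int set" where
  "Ir r = {- int r .. int r} - {0}"

definition signedset :: "nat \<Rightarrow> int set" where
  "signedset d = {- int d .. int d} - {0}"

section \<open>Matrices Pi^i_{n,d} (n = 2r), entries indexed by Ir r \<times> Ir r\<close>

definition Pi_i :: "nat \<Rightarrow> nat \<Rightarrow> (int \<Rightarrow> int \<Rightarrow> nat) set" where
  "Pi_i r d = {A. (\<forall>i\<in>Ir r. \<forall>j\<in>Ir r. A i j = A (-i) (-j)) \<and>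
                  (\<Sum>(i,j)\<in>Ir r \<times> Ir r. A i j) = 2 * d}"

definition ro :: "nat \<Rightarrow> (int \<Rightarrow> int \<Rightarrow> nat) \<Rightarrow> int \<Rightarrow> nat" where
  "ro r A i = (\<Sum>j\<in>Ir r. A i j)"

definition co :: "nat \<Rightarrow> (int \<Rightarrow> int \<Rightarrow> nat) \<Rightarrow> int \<Rightarrow> nat" where
  "co r A j = (\<Sum>i\<in>Ir r. A i j)"

definition W_C :: "nat \<Rightarrow> (int \<Rightarrow> int) set" where
  "W_C d = {w. bij_betw w (signedset d) (signedset d) \<and>
               (\<forall>i\<in>signedset d. w (-i) = - w i) \<and>
               (\<forall>x. x \<notin> signedset d \<longrightarrow> w x = x)}"

text \<open>Coxeter length of type B/C (Bjorner--Brenti): inv + nsp.\<close>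
definition lenC :: "nat \<Rightarrow> (int \<Rightarrow> int) \<Rightarrow> nat" where
  "lenC d w = card {(i,j). i \<in> {1..int d} \<and> j \<in> {1..int d} \<and> i < j \<and> w i > w j}
            + card {(i,j). i \<in> {1..int d} \<and> j \<in> {1..int d} \<and> i \<le> j \<and> w i + w j < 0}"

definition Rblk :: "(int \<Rightarrow> nat) \<Rightarrow> int \<Rightarrow> int set" where
  "Rblk lam i =
     (if i > 0 then {int (\<Sum>k\<in>{1..<nat i}. lam (int k)) + 1 .. int (\<Sum>k\<in>{1..nat i}. lam (int k))}
      else uminus ` {int (\<Sum>k\<in>{1..<nat (-i)}. lam (int k)) + 1 .. int (\<Sum>k\<in>{1..nat (-i)}. lam (int k))})"

definition W_par :: "nat \<Rightarrow> nat \<Rightarrow> (int \<Rightarrow> nat) \<Rightarrow> (int \<Rightarrow> int) set" where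
  "W_par r d lam = {w \<in> W_C d. \<forall>i\<in>Ir r. w ` Rblk lam i = Rblk lam i}"

definition dcoset :: "nat \<Rightarrow> nat \<Rightarrow> (int \<Rightarrow> nat) \<Rightarrow> (int \<Rightarrow> int) \<Rightarrow> (int \<Rightarrow> nat) \<Rightarrow> (int \<Rightarrow> int) set" where
  "dcoset r d lam y mu = {u \<circ> y \<circ> v | u v. u \<in> W_par r d lam \<and> v \<in> W_par r d mu}"

definition wAplus :: "nat \<Rightarrow> nat \<Rightarrow> (int \<Rightarrow> int \<Rightarrow> nat) \<Rightarrow> (int \<Rightarrow> int)" where
  "wAplus r d A = (THE w. \<exists>y\<in>W_C d.
      (\<forall>i\<in>Ir r. \<forall>j\<in>Ir r. card (Rblk (ro r A) i \<inter> y ` Rblk (co r A) j) = A i j) \<and>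
      w \<in> dcoset r d (ro r A) y (co r A) \<and>
      (\<forall>v\<in>dcoset r d (ro r A) y (co r A). lenC d v \<le> lenC d w))"

definition ple :: "int \<times> int \<Rightarrow> int \<times> int \<Rightarrow> bool" where
  "ple x y = (fst x \<ge> fst y \<and> snd x \<le> snd y)"

definition is_chain :: "(int \<times> int) set \<Rightarrow> bool" where
  "is_chain C = (\<forall>x\<in>C. \<forall>y\<in>C. ple x y \<or> ple y x)"

definition sfrak :: "nat \<Rightarrow> (int \<Rightarrow> int \<Rightarrow> nat) \<Rightarrow> nat \<Rightarrow> nat" where
  "sfrak r A k = Max {(\<Sum>(i,j)\<in>F. A i j) | F. \<exists>C :: nat \<Rightarrow> (int \<times> int) set.
      (\<forall>l<k. C l \<subseteq> Ir r \<times> Ir r \<and> is_chain (C l)) \<and>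
      (\<forall>l<k. \<forall>m<k. l \<noteq> m \<longrightarrow> C l \<inter> C m = {}) \<and>
      F = (\<Union>l<k. C l)}"

definition sigma_i :: "nat \<Rightarrow> (int \<Rightarrow> int \<Rightarrow> nat) \<Rightarrow> nat \<Rightarrow> nat" where
  "sigma_i r A i = (if 1 \<le> i \<and> i \<le> 2 * r then sfrak r A i - sfrak r A (i - 1) else 0)"

fun tab_ins :: "nat list list \<Rightarrow> nat \<Rightarrow> nat list list" where
  "tab_ins [] k = [[k]]"
| "tab_ins (row # rows) k =
     (if \<forall>x\<in>set row. k \<le> x then (row @ [k]) # rows
      else (let k2 = Max {x \<in> set row. x < k}
            in map (\<lambda>x. if x = k2 then k else x) row # tab_ins rows k2))"

text \<open>identification -d..-1,1..d  with 1..2d\<close>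
definition to_pos :: "nat \<Rightarrow> int \<Rightarrow> nat" where
  "to_pos d x = (if x < 0 then nat (x + int d + 1) else nat (x + int d))"

definition from_pos :: "nat \<Rightarrow> nat \<Rightarrow> int" where
  "from_pos d t = (if t \<le> d then int t - int d - 1 else int t - int d)"

definition word_of :: "nat \<Rightarrow> (int \<Rightarrow> int) \<Rightarrow> nat list" where
  "word_of d w = map (\<lambda>t. to_pos d (w (from_pos d t))) [1..<2 * d + 1]"

definition shape :: "nat list list \<Rightarrow> nat \<Rightarrow> nat" where
  "shape P i = (if 1 \<le> i \<and> i \<le> length P then length (P ! (i - 1)) else 0)"

definition PT_i :: "nat \<Rightarrow> (int \<Rightarrow> int) \<Rightarrow> nat \<Rightarrow> nat" where
  "PT_i d w = shape (foldl tab_ins [] (word_of d w))"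

end

theory Submission
  imports Defs
begin


definition prec :: "nat list \<Rightarrow> nat \<Rightarrow> nat \<Rightarrow> bool" where
  "prec xs b a \<longleftrightarrow> (\<exists>i j. i < j \<and> j < length xs \<and> xs!i = b \<and> xs!j = a)"

lemma prec_Nil[simp]: "\<not> prec [] b a"
  by (simp add: prec_def)

lemma prec_Cons[simp]: "prec (x#xs) b a \<longleftrightarrow> (b = x \<and> a \<in> set xs) \<or> prec xs b a"
proof
  assume "prec (x#xs) b a"
  then obtain i j where ij: "i < j" "j < length (x#xs)" "(x#xs)!i = b" "(x#xs)!j = a"
    unfolding prec_def by blast
  show "(b = x \<and> a \<in> set xs) \<or> prec xs b a"
  proof (cases i)
    case 0
    then obtain j' where "j = Suc j'" using ij by (cases j) auto
    then show ?thesis using ij 0 by auto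
  next
    case (Suc i')
    then obtain j' where "j = Suc j'" using ij by (cases j) auto
    then show ?thesis using ij Suc unfolding prec_def by auto
  qed
next
  assume "(b = x \<and> a \<in> set xs) \<or> prec xs b a"
  then show "prec (x#xs) b a"
  proof
    assume "b = x \<and> a \<in> set xs"
    then obtain j where "j < length xs" "xs!j = a" by (auto simp: in_set_conv_nth)
    then show ?thesis unfolding prec_def using \<open>b = x \<and> a \<in> set xs\<close>
      by (intro exI[of _ 0] exI[of _ "Suc j"]) auto
  next
    assume "prec xs b a"
    then obtain i j where "i < j" "j < length xs" "xs!i = b" "xs!j = a" unfolding prec_def by blast
    then show ?thesis unfolding prec_def by (intro exI[of _ "Suc i"] exI[of _ "Suc j"]) auto
  qed
qed

lemma prec_append[simp]: "prec (xs @ ys) b a \<longleftrightarrow> prec xs b a \<or> prec ys b a \<or> (b \<in> set xs \<and> a \<in> set ys)"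
  by (induction xs) auto

lemma prec_set: "prec xs b a \<Longrightarrow> b \<in> set xs \<and> a \<in> set xs"
  by (induction xs) auto

lemma prec_asym: "distinct xs \<Longrightarrow> prec xs b a \<Longrightarrow> \<not> prec xs a b"
  by (induction xs) (auto dest: prec_set)

lemma prec_irrefl: "distinct xs \<Longrightarrow> \<not> prec xs a a"
  using prec_asym by blast

lemma prec_total: "a \<in> set xs \<Longrightarrow> b \<in> set xs \<Longrightarrow> a \<noteq> b \<Longrightarrow> prec xs a b \<or> prec xs b a"
  by (induction xs) auto

definition dec :: "nat list \<Rightarrow> nat set \<Rightarrow> bool" where
  "dec xs V \<longleftrightarrow> V \<subseteq> set xs \<and> (\<forall>a\<in>V. \<forall>b\<in>V. a < b \<longrightarrow> prec xs b a)"

lemma dec_subset: "dec xs V \<Longrightarrow> W \<subseteq> V \<Longrightarrow> dec xs W"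
  unfolding dec_def by blast

lemma dec_empty[simp]: "dec xs {}" by (simp add: dec_def)

lemma dec_union:
  assumes "dec xs S1" "dec xs S2" "\<And>a b. a \<in> S1 \<Longrightarrow> b \<in> S2 \<Longrightarrow> prec xs a b \<and> b < a"
  shows "dec xs (S1 \<union> S2)"
  using assms unfolding dec_def by (metis Un_iff Un_least not_less_iff_gr_or_eq)

lemma dec_prec: "distinct xs \<Longrightarrow> dec xs V \<Longrightarrow> a \<in> V \<Longrightarrow> b \<in> V \<Longrightarrow> prec xs b a \<Longrightarrow> a < b"
  unfolding dec_def by (metis linorder_neqE_nat prec_asym prec_irrefl)

definition fam :: "nat list \<Rightarrow> nat \<Rightarrow> (nat \<Rightarrow> nat set) \<Rightarrow> bool" where
  "fam xs k C \<longleftrightarrow> (\<forall>l<k. dec xs (C l))"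

definition greene :: "nat list \<Rightarrow> nat \<Rightarrow> nat" where
  "greene xs k = Max {card (\<Union>l<k. C l) | C. fam xs k C}"

lemma fam_union_sub: "fam xs k C \<Longrightarrow> (\<Union>l<k. C l) \<subseteq> set xs"
  unfolding fam_def dec_def by blast

lemma greene_set_finite: "finite {card (\<Union>l<k. C l) | C. fam xs k C}"
proof -
  have "{card (\<Union>l<k. C l) | C. fam xs k C} \<subseteq> {..card (set xs)}"
  proof
    fix n assume "n \<in> {card (\<Union>l<k. C l) | C. fam xs k C}"
    then obtain C where "n = card (\<Union>l<k. C l)" "fam xs k C" by blast
    then show "n \<in> {..card (set xs)}" using fam_union_sub[OF \<open>fam xs k C\<close>]
      by (simp add: card_mono)
  qed
  then show ?thesis using finite_subset by blast
qed

lemma greene_set_ne: "{card (\<Union>l<k. C l) | C. fam xs k C} \<noteq> {}"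
proof -
  have "fam xs k (\<lambda>_. {})" by (simp add: fam_def)
  then show ?thesis by blast
qed

lemma greene_ge: "fam xs k C \<Longrightarrow> card (\<Union>l<k. C l) \<le> greene xs k"
  unfolding greene_def using greene_set_finite by (intro Max_ge) auto

lemma greene_obtain: "\<exists>C. fam xs k C \<and> card (\<Union>l<k. C l) = greene xs k"
proof -
  have "greene xs k \<in> {card (\<Union>l<k. C l) | C. fam xs k C}"
    unfolding greene_def using greene_set_finite greene_set_ne by (rule Max_in)
  then show ?thesis by auto
qed

lemma greene_le_transfer:
  assumes "\<And>C. fam xs k C \<Longrightarrow> \<exists>D. fam ys k D \<and> card (\<Union>l<k. C l) \<le> card (\<Union>l<k. D l)"
  shows "greene xs k \<le> greene ys k"
proof -
  obtain C where "fam xs k C" "card (\<Union>l<k. C l) = greene xs k" using greene_obtain by blast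
  then obtain D where "fam ys k D" "card (\<Union>l<k. C l) \<le> card (\<Union>l<k. D l)" using assms by blast
  then show ?thesis using greene_ge \<open>card (\<Union>l<k. C l) = greene xs k\<close> by (metis le_trans)
qed

definition disj :: "nat \<Rightarrow> (nat \<Rightarrow> nat set) \<Rightarrow> bool" where
  "disj k C \<longleftrightarrow> (\<forall>l<k. \<forall>m<k. l \<noteq> m \<longrightarrow> C l \<inter> C m = {})"

lemma disjointify:
  assumes "fam xs k C"
  shows "\<exists>D. fam xs k D \<and> disj k D \<and> (\<Union>l<k. D l) = (\<Union>l<k. C l)"
proof -
  define D where "D l = C l - (\<Union>m<l. C m)" for l
  have "fam xs k D" using assms unfolding fam_def D_def by (auto intro: dec_subset)
  moreover have "disj k D" unfolding disj_def D_def
    by (auto, metis lessThan_iff linorder_neqE_nat)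
  moreover have "(\<Union>l<k. D l) = (\<Union>l<k. C l)"
  proof
    show "(\<Union>l<k. D l) \<subseteq> (\<Union>l<k. C l)" unfolding D_def by auto
  next
    show "(\<Union>l<k. C l) \<subseteq> (\<Union>l<k. D l)"
    proof
      fix x assume "x \<in> (\<Union>l<k. C l)"
      then have "\<exists>l<k. x \<in> C l" by auto
      define l where "l = (LEAST l. l < k \<and> x \<in> C l)"
      have l: "l < k \<and> x \<in> C l" unfolding l_def by (rule LeastI_ex) fact
      have "\<And>m. m < l \<Longrightarrow> x \<notin> C m" using l unfolding l_def
        by (metis (mono_tags, lifting) not_less_Least order.strict_trans)
      then show "x \<in> (\<Union>l<k. D l)" using l unfolding D_def by auto
    qed
  qed
  ultimately show ?thesis by blast
qed


lemma swap_dec: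
  assumes "distinct (u @ [p,q] @ v)" "dec (u @ [p,q] @ v) S" "\<not> (p \<in> S \<and> q \<in> S)"
  shows "dec (u @ [q,p] @ v) S"
  using assms unfolding dec_def by auto

lemma swap_dec':
  assumes "L = u @ [p,q] @ v" "R = u @ [q,p] @ v" "distinct L" "dec L S" "\<not> (p \<in> S \<and> q \<in> S)"
  shows "dec R S"
  using swap_dec[of u p q v S] assms by blast

lemma dec_single: "a \<in> set xs \<Longrightarrow> dec xs {a}"
  unfolding dec_def by simp

definition between :: "nat \<Rightarrow> nat \<Rightarrow> nat \<Rightarrow> bool" where
  "between y x z \<longleftrightarrow> (x < y \<and> y < z) \<or> (z < y \<and> y < x)"

lemma fam_upd: "fam xs k C \<Longrightarrow> dec xs S \<Longrightarrow> fam xs k (C(l := S))"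
  unfolding fam_def by auto

lemma card_union_le_swap:
  assumes "finite B" "x \<in> A" "y \<in> B" "A - {x} \<subseteq> B - {y}"
  shows "card A \<le> card B"
proof -
  have fA: "finite A" using assms by (metis finite_Diff finite_subset finite_insert insert_Diff)
  have "card A = Suc (card (A - {x}))" using fA assms(2) by (rule card.remove)
  also have "\<dots> \<le> Suc (card (B - {y}))" using assms by (intro Suc_le_mono[THEN iffD2] card_mono) auto
  also have "\<dots> = card B" using assms by (metis card.remove)
  finally show ?thesis .
qed

lemma K1_fam:
  assumes dist: "distinct (u @ [y,x,z] @ v)" and btw: "between y x z"
    and fam: "fam (u @ [y,x,z] @ v) k C" and dj: "disj k C"
  shows "\<exists>D. fam (u @ [y,z,x] @ v) k D \<and> card (\<Union>l<k. C l) \<le> card (\<Union>l<k. D l)"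
proof (cases "\<exists>l<k. x \<in> C l \<and> z \<in> C l")
  case False
  have "fam (u @ [y,z,x] @ v) k C" unfolding fam_def
  proof (intro allI impI)
    fix l assume "l < k"
    then have "dec (u @ [y,x,z] @ v) (C l)" using fam unfolding fam_def by blast
    then show "dec (u @ [y,z,x] @ v) (C l)"
    proof (rule swap_dec'[of "u @ [y,x,z] @ v" "u @ [y]" x z v, rotated 3])
      show "\<not> (x \<in> C l \<and> z \<in> C l)" using False \<open>l<k\<close> by blast
    qed (use dist in simp_all)
  qed
  then show ?thesis by blast
next
  case True
  then obtain l where l: "l < k" "x \<in> C l" "z \<in> C l" by blast
  let ?L = "u @ [y,x,z] @ v"
  let ?R = "u @ [y,z,x] @ v"
  have du: "distinct u" and dv: "distinct v" and uv: "set u \<inter> set v = {}"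
    and xu: "x \<notin> set u" "x \<notin> set v" and yu: "y \<notin> set u" "y \<notin> set v"
    and zu: "z \<notin> set u" "z \<notin> set v" and xyz: "x \<noteq> y" "x \<noteq> z" "y \<noteq> z"
    using dist by auto
  have distR: "distinct ?R" using dist by auto
  have decl: "dec ?L (C l)" using fam l unfolding fam_def by blast
  have "prec ?L x z" by simp
  then have zx: "z < x" using dec_prec[OF dist decl l(3) l(2)] by blast
  then have zy: "z < y" "y < x" using btw unfolding between_def by auto
  have yl: "y \<notin> C l"
  proof
    assume "y \<in> C l"
    have "prec ?L y x" by simp
    then have "x < y" using dec_prec[OF dist decl l(2) \<open>y \<in> C l\<close>] by blast
    then show False using zy by simp
  qed
  have setL: "\<And>m. m < k \<Longrightarrow> C m \<subseteq> set ?L" using fam unfolding fam_def dec_def by blast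
  define C1 where "C1 = {c \<in> C l. c \<in> set u}"
  define C2 where "C2 = {c \<in> C l. c \<in> set v}"
  have Cl_eq: "C l = C1 \<union> {x, z} \<union> C2" using setL[OF l(1)] yl l unfolding C1_def C2_def by auto
  have C1_gt: "c > x" if "c \<in> C1" for c
  proof -
    have "prec ?L c x" using that unfolding C1_def by simp
    then show ?thesis using dec_prec[OF dist decl l(2)] that unfolding C1_def by simp
  qed
  have C2_lt: "c < z" if "c \<in> C2" for c
  proof -
    have "prec ?L z c" using that unfolding C2_def by simp
    then show ?thesis using dec_prec[OF dist decl _ l(3)] that unfolding C2_def by simp
  qed
  have decR_sub: "dec ?R S" if "S \<subseteq> C m" "m < k" "\<not> (x \<in> S \<and> z \<in> S)" for S m
  proof -
    have "dec (u @ [y,x,z] @ v) S" using fam that unfolding fam_def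
      by (auto intro: dec_subset)
    then show ?thesis
      by (rule swap_dec'[of "u @ [y,x,z] @ v" "u @ [y]" x z v, rotated 3]) (use that dist in simp_all)
  qed
  have dC1: "dec ?R C1" using l xu zu by (intro decR_sub[of _ l]) (auto simp: C1_def)
  have dC2: "dec ?R C2" using l xu zu by (intro decR_sub[of _ l]) (auto simp: C2_def)
  have C1u: "C1 \<subseteq> set u" and C2v: "C2 \<subseteq> set v" unfolding C1_def C2_def by auto
  have finR: "finite (\<Union>l<k. D l)" if "fam ?R k D" for D
    using fam_union_sub[OF that] finite_subset by blast
  show ?thesis
  proof (cases "\<exists>m<k. y \<in> C m")
    case False
    define S where "S = C1 \<union> ({y} \<union> ({z} \<union> C2))"
    have dS: "dec ?R S" unfolding S_def
    proof (intro dec_union dec_single dC1 dC2)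
      fix a b assume "a \<in> C1" "b \<in> {y} \<union> ({z} \<union> C2)"
      then show "prec ?R a b \<and> b < a" using C1u C2v C1_gt[of a] C2_lt[of b] zy xu yu zu uv
        by auto
    next
      fix a b assume "a \<in> {y}" "b \<in> {z} \<union> C2"
      then show "prec ?R a b \<and> b < a" using C2v C2_lt[of b] zy yu zu by auto
    next
      fix a b assume "a \<in> {z}" "b \<in> C2"
      then show "prec ?R a b \<and> b < a" using C2v C2_lt[of b] zu by auto
    qed auto
    define D where "D = C(l := S)"
    have fD: "fam ?R k D" unfolding fam_def
    proof (intro allI impI)
      fix m assume "m < k"
      show "dec ?R (D m)"
      proof (cases "m = l")
        case True
        then show ?thesis using dS by (simp add: D_def)
      next
        case False
        then have "x \<notin> C m" using dj l \<open>m<k\<close> unfolding disj_def by blast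
        then show ?thesis using decR_sub[of "C m" m] \<open>m<k\<close> False by (simp add: D_def)
      qed
    qed
    have "card (\<Union>l<k. C l) \<le> card (\<Union>l<k. D l)"
    proof (rule card_union_le_swap[OF finR[OF fD]])
      show "x \<in> (\<Union>l<k. C l)" using l by blast
      show "y \<in> (\<Union>l<k. D l)" using l by (auto simp: D_def S_def)
      show "(\<Union>l<k. C l) - {x} \<subseteq> (\<Union>l<k. D l) - {y}"
      proof
        fix c assume c: "c \<in> (\<Union>l<k. C l) - {x}"
        then obtain m where m: "m < k" "c \<in> C m" by blast
        have "c \<noteq> y" using False m by blast
        moreover have "c \<in> D m \<or> c \<in> D l"
        proof (cases "m = l")
          case True
          then show ?thesis using m c Cl_eq by (auto simp: D_def S_def)
        qed (simp add: D_def m)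
        ultimately show "c \<in> (\<Union>l<k. D l) - {y}" using m l by blast
      qed
    qed
    then show ?thesis using fD by blast
  next
    case True
    then obtain m where m: "m < k" "y \<in> C m" by blast
    have ml: "m \<noteq> l" using m yl by blast
    have decm: "dec ?L (C m)" using fam m unfolding fam_def by blast
    have xm: "x \<notin> C m" and zm: "z \<notin> C m" using dj ml l m unfolding disj_def by blast+
    define D1 where "D1 = {c \<in> C m. c \<in> set u}"
    define D2 where "D2 = {c \<in> C m. c \<in> set v}"
    have Cm_eq: "C m = D1 \<union> {y} \<union> D2" using setL[OF m(1)] xm zm m unfolding D1_def D2_def by auto
    have D1_gt: "c > y" if "c \<in> D1" for c
    proof -
      have "prec ?L c y" using that unfolding D1_def by simp
      then show ?thesis using dec_prec[OF dist decm m(2)] that unfolding D1_def by simp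
    qed
    have D2_lt: "c < y" if "c \<in> D2" for c
    proof -
      have "prec ?L y c" using that unfolding D2_def by simp
      then show ?thesis using dec_prec[OF dist decm _ m(2)] that unfolding D2_def by simp
    qed
    have dD1: "dec ?R D1" using m xm by (intro decR_sub[of _ m]) (auto simp: D1_def)
    have dD2: "dec ?R D2" using m xm by (intro decR_sub[of _ m]) (auto simp: D2_def)
    have D1u: "D1 \<subseteq> set u" and D2v: "D2 \<subseteq> set v" unfolding D1_def D2_def by auto
    define S where "S = C1 \<union> ({x} \<union> D2)"
    define T where "T = D1 \<union> ({y} \<union> ({z} \<union> C2))"
    have dS: "dec ?R S" unfolding S_def
    proof (intro dec_union dec_single dC1 dD2)
      fix a b assume "a \<in> C1" "b \<in> {x} \<union> D2"
      then show "prec ?R a b \<and> b < a" using C1u D2v C1_gt[of a] D2_lt[of b] zy xu uv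
        by auto
    next
      fix a b assume "a \<in> {x}" "b \<in> D2"
      then show "prec ?R a b \<and> b < a" using D2v D2_lt[of b] zy xu by auto
    qed auto
    have dT: "dec ?R T" unfolding T_def
    proof (intro dec_union dec_single dD1 dC2)
      fix a b assume "a \<in> D1" "b \<in> {y} \<union> ({z} \<union> C2)"
      then show "prec ?R a b \<and> b < a" using D1u C2v D1_gt[of a] C2_lt[of b] zy yu zu uv
        by auto
    next
      fix a b assume "a \<in> {y}" "b \<in> {z} \<union> C2"
      then show "prec ?R a b \<and> b < a" using C2v C2_lt[of b] zy yu zu by auto
    next
      fix a b assume "a \<in> {z}" "b \<in> C2"
      then show "prec ?R a b \<and> b < a" using C2v C2_lt[of b] zu by auto
    qed auto
    define D where "D = C(l := S, m := T)"
    have fD: "fam ?R k D" unfolding fam_def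
    proof (intro allI impI)
      fix i assume "i < k"
      show "dec ?R (D i)"
      proof (cases "i = l \<or> i = m")
        case True
        then show ?thesis using dS dT ml by (auto simp: D_def)
      next
        case False
        then have "x \<notin> C i" using dj l \<open>i<k\<close> unfolding disj_def by blast
        then show ?thesis using decR_sub[of "C i" i] \<open>i<k\<close> False by (simp add: D_def)
      qed
    qed
    have "(\<Union>l<k. C l) \<subseteq> (\<Union>l<k. D l)"
    proof
      fix c assume "c \<in> (\<Union>l<k. C l)"
      then obtain i where i: "i < k" "c \<in> C i" by blast
      have "c \<in> D i \<or> c \<in> D l \<or> c \<in> D m"
      proof (cases "i = l \<or> i = m")
        case True
        then show ?thesis using i Cl_eq Cm_eq ml by (auto simp: D_def S_def T_def)
      qed (simp add: D_def i)
      then show "c \<in> (\<Union>l<k. D l)" using i l m by blast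
    qed
    then have "card (\<Union>l<k. C l) \<le> card (\<Union>l<k. D l)" using finR[OF fD] by (rule card_mono[rotated])
    then show ?thesis using fD by blast
  qed
qed


lemma K2_fam:
  assumes dist: "distinct (u @ [x,z,y] @ v)" and btw: "between y x z"
    and fam: "fam (u @ [x,z,y] @ v) k C" and dj: "disj k C"
  shows "\<exists>D. fam (u @ [z,x,y] @ v) k D \<and> card (\<Union>l<k. C l) \<le> card (\<Union>l<k. D l)"
proof (cases "\<exists>l<k. x \<in> C l \<and> z \<in> C l")
  case False
  have "fam (u @ [z,x,y] @ v) k C" unfolding fam_def
  proof (intro allI impI)
    fix l assume "l < k"
    then have "dec (u @ [x,z,y] @ v) (C l)" using fam unfolding fam_def by blast
    then show "dec (u @ [z,x,y] @ v) (C l)"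
    proof (rule swap_dec'[of "u @ [x,z,y] @ v" u x z "y # v", rotated 3])
      show "\<not> (x \<in> C l \<and> z \<in> C l)" using False \<open>l<k\<close> by blast
    qed (use dist in simp_all)
  qed
  then show ?thesis by blast
next
  case True
  then obtain l where l: "l < k" "x \<in> C l" "z \<in> C l" by blast
  let ?L = "u @ [x,z,y] @ v"
  let ?R = "u @ [z,x,y] @ v"
  have du: "distinct u" and dv: "distinct v" and uv: "set u \<inter> set v = {}"
    and xu: "x \<notin> set u" "x \<notin> set v" and yu: "y \<notin> set u" "y \<notin> set v"
    and zu: "z \<notin> set u" "z \<notin> set v" and xyz: "x \<noteq> y" "x \<noteq> z" "y \<noteq> z"
    using dist by auto
  have distR: "distinct ?R" using dist by auto
  have decl: "dec ?L (C l)" using fam l unfolding fam_def by blast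
  have "prec ?L x z" by simp
  then have zx: "z < x" using dec_prec[OF dist decl l(3) l(2)] by blast
  then have zy: "z < y" "y < x" using btw unfolding between_def by auto
  have yl: "y \<notin> C l"
  proof
    assume "y \<in> C l"
    have "prec ?L z y" by simp
    then have "y < z" using dec_prec[OF dist decl \<open>y \<in> C l\<close> l(3)] by blast
    then show False using zy by simp
  qed
  have setL: "\<And>m. m < k \<Longrightarrow> C m \<subseteq> set ?L" using fam unfolding fam_def dec_def by blast
  define C1 where "C1 = {c \<in> C l. c \<in> set u}"
  define C2 where "C2 = {c \<in> C l. c \<in> set v}"
  have Cl_eq: "C l = C1 \<union> {x, z} \<union> C2" using setL[OF l(1)] yl l unfolding C1_def C2_def by auto
  have C1_gt: "c > x" if "c \<in> C1" for c
  proof -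
    have "prec ?L c x" using that unfolding C1_def by simp
    then show ?thesis using dec_prec[OF dist decl l(2)] that unfolding C1_def by simp
  qed
  have C2_lt: "c < z" if "c \<in> C2" for c
  proof -
    have "prec ?L z c" using that unfolding C2_def by simp
    then show ?thesis using dec_prec[OF dist decl _ l(3)] that unfolding C2_def by simp
  qed
  have decR_sub: "dec ?R S" if "S \<subseteq> C m" "m < k" "\<not> (x \<in> S \<and> z \<in> S)" for S m
  proof -
    have "dec (u @ [x,z,y] @ v) S" using fam that unfolding fam_def
      by (auto intro: dec_subset)
    then show ?thesis
      by (rule swap_dec'[of "u @ [x,z,y] @ v" u x z "y # v", rotated 3]) (use that dist in simp_all)
  qed
  have dC1: "dec ?R C1" using l xu zu by (intro decR_sub[of _ l]) (auto simp: C1_def)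
  have dC2: "dec ?R C2" using l xu zu by (intro decR_sub[of _ l]) (auto simp: C2_def)
  have C1u: "C1 \<subseteq> set u" and C2v: "C2 \<subseteq> set v" unfolding C1_def C2_def by auto
  have finR: "finite (\<Union>l<k. D l)" if "fam ?R k D" for D
    using fam_union_sub[OF that] finite_subset by blast
  show ?thesis
  proof (cases "\<exists>m<k. y \<in> C m")
    case False
    define S where "S = C1 \<union> ({x} \<union> ({y} \<union> C2))"
    have dS: "dec ?R S" unfolding S_def
    proof (intro dec_union dec_single dC1 dC2)
      fix a b assume "a \<in> C1" "b \<in> {x} \<union> ({y} \<union> C2)"
      then show "prec ?R a b \<and> b < a" using C1u C2v C1_gt[of a] C2_lt[of b] zy xu yu zu uv
        by auto
    next
      fix a b assume "a \<in> {x}" "b \<in> {y} \<union> C2"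
      then show "prec ?R a b \<and> b < a" using C2v C2_lt[of b] zy xu yu xyz by auto
    next
      fix a b assume "a \<in> {y}" "b \<in> C2"
      then show "prec ?R a b \<and> b < a" using C2v C2_lt[of b] zy yu by auto
    qed auto
    define D where "D = C(l := S)"
    have fD: "fam ?R k D" unfolding fam_def
    proof (intro allI impI)
      fix m assume "m < k"
      show "dec ?R (D m)"
      proof (cases "m = l")
        case True
        then show ?thesis using dS by (simp add: D_def)
      next
        case False
        then have "x \<notin> C m" using dj l \<open>m<k\<close> unfolding disj_def by blast
        then show ?thesis using decR_sub[of "C m" m] \<open>m<k\<close> False by (simp add: D_def)
      qed
    qed
    have "card (\<Union>l<k. C l) \<le> card (\<Union>l<k. D l)"
    proof (rule card_union_le_swap[OF finR[OF fD]])
      show "z \<in> (\<Union>l<k. C l)" using l by blast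
      show "y \<in> (\<Union>l<k. D l)" using l by (auto simp: D_def S_def)
      show "(\<Union>l<k. C l) - {z} \<subseteq> (\<Union>l<k. D l) - {y}"
      proof
        fix c assume c: "c \<in> (\<Union>l<k. C l) - {z}"
        then obtain m where m: "m < k" "c \<in> C m" by blast
        have "c \<noteq> y" using False m by blast
        moreover have "c \<in> D m \<or> c \<in> D l"
        proof (cases "m = l")
          case True
          then show ?thesis using m c Cl_eq by (auto simp: D_def S_def)
        qed (simp add: D_def m)
        ultimately show "c \<in> (\<Union>l<k. D l) - {y}" using m l by blast
      qed
    qed
    then show ?thesis using fD by blast
  next
    case True
    then obtain m where m: "m < k" "y \<in> C m" by blast
    have ml: "m \<noteq> l" using m yl by blast
    have decm: "dec ?L (C m)" using fam m unfolding fam_def by blast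
    have xm: "x \<notin> C m" and zm: "z \<notin> C m" using dj ml l m unfolding disj_def by blast+
    define D1 where "D1 = {c \<in> C m. c \<in> set u}"
    define D2 where "D2 = {c \<in> C m. c \<in> set v}"
    have Cm_eq: "C m = D1 \<union> {y} \<union> D2" using setL[OF m(1)] xm zm m unfolding D1_def D2_def by auto
    have D1_gt: "c > y" if "c \<in> D1" for c
    proof -
      have "prec ?L c y" using that unfolding D1_def by simp
      then show ?thesis using dec_prec[OF dist decm m(2)] that unfolding D1_def by simp
    qed
    have D2_lt: "c < y" if "c \<in> D2" for c
    proof -
      have "prec ?L y c" using that unfolding D2_def by simp
      then show ?thesis using dec_prec[OF dist decm _ m(2)] that unfolding D2_def by simp
    qed
    have dD1: "dec ?R D1" using m xm by (intro decR_sub[of _ m]) (auto simp: D1_def)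
    have dD2: "dec ?R D2" using m xm by (intro decR_sub[of _ m]) (auto simp: D2_def)
    have D1u: "D1 \<subseteq> set u" and D2v: "D2 \<subseteq> set v" unfolding D1_def D2_def by auto
    define S where "S = C1 \<union> ({x} \<union> ({y} \<union> D2))"
    define T where "T = D1 \<union> ({z} \<union> C2)"
    have dS: "dec ?R S" unfolding S_def
    proof (intro dec_union dec_single dC1 dD2)
      fix a b assume "a \<in> C1" "b \<in> {x} \<union> ({y} \<union> D2)"
      then show "prec ?R a b \<and> b < a" using C1u D2v C1_gt[of a] D2_lt[of b] zy xu yu uv
        by auto
    next
      fix a b assume "a \<in> {x}" "b \<in> {y} \<union> D2"
      then show "prec ?R a b \<and> b < a" using D2v D2_lt[of b] zy xu yu xyz by auto
    next
      fix a b assume "a \<in> {y}" "b \<in> D2"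
      then show "prec ?R a b \<and> b < a" using D2v D2_lt[of b] yu by auto
    qed auto
    have dT: "dec ?R T" unfolding T_def
    proof (intro dec_union dec_single dD1 dC2)
      fix a b assume "a \<in> D1" "b \<in> {z} \<union> C2"
      then show "prec ?R a b \<and> b < a" using D1u C2v D1_gt[of a] C2_lt[of b] zy zu uv
        by auto
    next
      fix a b assume "a \<in> {z}" "b \<in> C2"
      then show "prec ?R a b \<and> b < a" using C2v C2_lt[of b] zu by auto
    qed auto
    define D where "D = C(l := S, m := T)"
    have fD: "fam ?R k D" unfolding fam_def
    proof (intro allI impI)
      fix i assume "i < k"
      show "dec ?R (D i)"
      proof (cases "i = l \<or> i = m")
        case True
        then show ?thesis using dS dT ml by (auto simp: D_def)
      next
        case False
        then have "x \<notin> C i" using dj l \<open>i<k\<close> unfolding disj_def by blast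
        then show ?thesis using decR_sub[of "C i" i] \<open>i<k\<close> False by (simp add: D_def)
      qed
    qed
    have "(\<Union>l<k. C l) \<subseteq> (\<Union>l<k. D l)"
    proof
      fix c assume "c \<in> (\<Union>l<k. C l)"
      then obtain i where i: "i < k" "c \<in> C i" by blast
      have "c \<in> D i \<or> c \<in> D l \<or> c \<in> D m"
      proof (cases "i = l \<or> i = m")
        case True
        then show ?thesis using i Cl_eq Cm_eq ml by (auto simp: D_def S_def T_def)
      qed (simp add: D_def i)
      then show "c \<in> (\<Union>l<k. D l)" using i l m by blast
    qed
    then have "card (\<Union>l<k. C l) \<le> card (\<Union>l<k. D l)" using finR[OF fD] by (rule card_mono[rotated])
    then show ?thesis using fD by blast
  qed
qed


inductive kstep :: "nat list \<Rightarrow> nat list \<Rightarrow> bool" where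
  k1: "between y x z \<Longrightarrow> kstep (u @ [y,x,z] @ v) (u @ [y,z,x] @ v)"
| k2: "between y x z \<Longrightarrow> kstep (u @ [x,z,y] @ v) (u @ [z,x,y] @ v)"

lemma between_sym: "between y x z \<Longrightarrow> between y z x"
  unfolding between_def by auto

lemma kstep_sym: "kstep xs ys \<Longrightarrow> kstep ys xs"
proof (induction rule: kstep.induct)
  case (k1 y x z u v)
  then show ?case using kstep.k1[of y z x u v] between_sym by blast
next
  case (k2 y x z u v)
  then show ?case using kstep.k2[of y z x u v] between_sym by blast
qed

lemma kstep_mset: "kstep xs ys \<Longrightarrow> set xs = set ys \<and> length xs = length ys \<and> (distinct xs \<longleftrightarrow> distinct ys)"
  by (induction rule: kstep.induct) auto

lemma kstep_distinct: "kstep xs ys \<Longrightarrow> distinct xs \<Longrightarrow> distinct ys"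
  using kstep_mset by blast

lemma kstep_greene_le:
  assumes "kstep xs ys" "distinct xs"
  shows "greene xs k \<le> greene ys k"
  using assms
proof (induction rule: kstep.induct)
  case (k1 y x z u v)
  show ?case
  proof (rule greene_le_transfer)
    fix C assume "fam (u @ [y, x, z] @ v) k C"
    then obtain C' where C': "fam (u @ [y, x, z] @ v) k C'" "disj k C'" "(\<Union>l<k. C' l) = (\<Union>l<k. C l)"
      using disjointify by blast
    then show "\<exists>D. fam (u @ [y, z, x] @ v) k D \<and> card (\<Union>l<k. C l) \<le> card (\<Union>l<k. D l)"
      using K1_fam[OF k1(2) k1(1) C'(1) C'(2)] by simp
  qed
next
  case (k2 y x z u v)
  show ?case
  proof (rule greene_le_transfer)
    fix C assume "fam (u @ [x, z, y] @ v) k C"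
    then obtain C' where C': "fam (u @ [x, z, y] @ v) k C'" "disj k C'" "(\<Union>l<k. C' l) = (\<Union>l<k. C l)"
      using disjointify by blast
    then show "\<exists>D. fam (u @ [z, x, y] @ v) k D \<and> card (\<Union>l<k. C l) \<le> card (\<Union>l<k. D l)"
      using K2_fam[OF k2(2) k2(1) C'(1) C'(2)] by simp
  qed
qed

lemma kstep_greene: "kstep xs ys \<Longrightarrow> distinct xs \<Longrightarrow> greene xs k = greene ys k"
  by (meson antisym kstep_distinct kstep_greene_le kstep_sym)

abbreviation knuth :: "nat list \<Rightarrow> nat list \<Rightarrow> bool" where
  "knuth \<equiv> kstep\<^sup>*\<^sup>*"

lemma knuth_mset: "knuth xs ys \<Longrightarrow> set xs = set ys \<and> length xs = length ys"
  by (induction rule: rtranclp_induct) (auto dest: kstep_mset)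

lemma knuth_distinct: "knuth xs ys \<Longrightarrow> distinct xs \<Longrightarrow> distinct ys"
  by (induction rule: rtranclp_induct) (auto dest: kstep_distinct)

lemma knuth_greene: "knuth xs ys \<Longrightarrow> distinct xs \<Longrightarrow> greene xs k = greene ys k"
  by (induction rule: rtranclp_induct) (auto dest: kstep_greene knuth_distinct)

lemma kstep_cong: "kstep xs ys \<Longrightarrow> kstep (a @ xs @ b) (a @ ys @ b)"
proof (induction rule: kstep.induct)
  case (k1 y x z u v)
  then show ?case using kstep.k1[of y x z "a @ u" "v @ b"] by simp
next
  case (k2 y x z u v)
  then show ?case using kstep.k2[of y x z "a @ u" "v @ b"] by simp
qed

lemma knuth_cong: "knuth xs ys \<Longrightarrow> knuth (a @ xs @ b) (a @ ys @ b)"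
  by (induction rule: rtranclp_induct) (auto intro: rtranclp.rtrancl_into_rtrancl kstep_cong)

lemma knuth_append: "knuth xs ys \<Longrightarrow> knuth xs' ys' \<Longrightarrow> knuth (xs @ xs') (ys @ ys')"
proof -
  assume a: "knuth xs ys" "knuth xs' ys'"
  have "knuth ([] @ xs @ xs') ([] @ ys @ xs')" using knuth_cong[OF a(1)] by blast
  moreover have "knuth (ys @ xs' @ []) (ys @ ys' @ [])" using knuth_cong[OF a(2)] by blast
  ultimately show ?thesis by simp
qed


lemma knuth_sym: "knuth xs ys \<Longrightarrow> knuth ys xs"
  by (induction rule: rtranclp_induct) (auto intro: converse_rtranclp_into_rtranclp kstep_sym)

lemma knuth_step1: "between y x z \<Longrightarrow> knuth (u @ [y,x,z] @ v) (u @ [y,z,x] @ v)"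
  by (intro r_into_rtranclp kstep.k1)

lemma knuth_step2: "between y x z \<Longrightarrow> knuth (u @ [x,z,y] @ v) (u @ [z,x,y] @ v)"
  by (intro r_into_rtranclp kstep.k2)

lemma moveA:
  assumes "sorted_wrt (>) (b # S)" "b < a"
  shows "knuth (b # S @ [a]) (b # a # S)"
  using assms
proof (induction S rule: rev_induct)
  case Nil
  then show ?case by simp
next
  case (snoc s S)
  obtain W y where Wy: "b # S = W @ [y]" by (cases "b # S" rule: rev_exhaust) auto
  have "y \<in> set (b # S)" using Wy by simp
  moreover have "\<forall>x\<in>set (b # S). s < x" using snoc.prems(1)
    by (simp add: sorted_wrt_append)
  ultimately have sy: "s < y" by blast
  have ya: "y < a"
  proof -
    have "y = b \<or> y \<in> set S" using \<open>y \<in> set (b # S)\<close> by auto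
    then show ?thesis using snoc.prems by (auto simp: sorted_wrt_append)
  qed
  have "knuth (W @ [y,s,a] @ []) (W @ [y,a,s] @ [])"
    by (rule knuth_step1) (simp add: between_def sy ya)
  then have 1: "knuth (b # (S @ [s]) @ [a]) (b # S @ [a] @ [s])" using Wy
    by (metis append.assoc append_Cons append_Nil append_self_conv)
  have "sorted_wrt (>) (b # S)" using snoc.prems by (simp add: sorted_wrt_append)
  then have "knuth (b # S @ [a]) (b # a # S)" using snoc.IH snoc.prems by simp
  then have "knuth ([] @ (b # S @ [a]) @ [s]) ([] @ (b # a # S) @ [s])" by (rule knuth_cong)
  then have 2: "knuth (b # S @ [a] @ [s]) (b # a # S @ [s])" by simp
  show ?case using 1 2 by simp
qed

lemma moveB:
  assumes "sorted_wrt (>) (L @ [c])" "b < c"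
  shows "knuth (L @ [b, c]) (b # L @ [c])"
  using assms
proof (induction L arbitrary: c rule: rev_induct)
  case Nil
  then show ?case by simp
next
  case (snoc l L)
  have lc: "c < l" using snoc.prems(1) by (simp add: sorted_wrt_append)
  have "knuth (L @ [l,b,c] @ []) (L @ [b,l,c] @ [])"
    by (rule knuth_step2) (simp add: between_def lc snoc.prems(2))
  then have 1: "knuth ((L @ [l]) @ [b, c]) ((L @ [b, l]) @ [c])" by simp
  have "sorted_wrt (>) (L @ [l])" using snoc.prems(1) by (simp add: sorted_wrt_append)
  then have "knuth (L @ [b, l]) (b # L @ [l])" using snoc.IH snoc.prems lc by simp
  then have "knuth ([] @ (L @ [b, l]) @ [c]) ([] @ (b # L @ [l]) @ [c])" by (rule knuth_cong)
  then show ?case using 1 by (simp add: rtranclp_trans)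
qed

definition qpos :: "nat list \<Rightarrow> nat \<Rightarrow> nat" where
  "qpos R a = length (takeWhile (\<lambda>x. a < x) R)"

lemma qpos_le: "qpos R a \<le> length R"
  unfolding qpos_def by (rule length_takeWhile_le)

lemma qpos_before: "i < qpos R a \<Longrightarrow> a < R ! i"
  unfolding qpos_def by (metis nth_mem set_takeWhileD takeWhile_nth)

lemma qpos_at: "qpos R a < length R \<Longrightarrow> \<not> a < R ! qpos R a"
  unfolding qpos_def by (rule nth_length_takeWhile)

lemma sorted_dec_nth: "sorted_wrt (>) R \<Longrightarrow> i < j \<Longrightarrow> j < length R \<Longrightarrow> R ! j < R ! i"
  using sorted_wrt_nth_less by fastforce

lemma qpos_after:
  assumes "sorted_wrt (>) R" "a \<notin> set R" "qpos R a \<le> i" "i < length R"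
  shows "R ! i < a"
proof -
  have q: "qpos R a < length R" using assms by simp
  have "R ! qpos R a < a" using qpos_at[OF q] assms(2) q by (metis linorder_neqE_nat nth_mem)
  then show ?thesis using assms sorted_dec_nth[OF assms(1), of "qpos R a" i]
    by (cases "qpos R a = i") auto
qed

lemma tab_ins_noBump:
  assumes "sorted_wrt (>) R" "a \<notin> set R" "qpos R a = length R"
  shows "tab_ins (R # T) a = (R @ [a]) # T"
proof -
  have "\<forall>x\<in>set R. a \<le> x" using qpos_before[of _ R a] assms(3)
    by (metis in_set_conv_nth less_imp_le_nat)
  then show ?thesis by simp
qed

lemma tab_ins_Bump:
  assumes "sorted_wrt (>) R" "distinct R" "a \<notin> set R" "qpos R a < length R"
  shows "tab_ins (R # T) a = R[qpos R a := a] # tab_ins T (R ! qpos R a)"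
proof -
  let ?q = "qpos R a"
  have lt: "R ! ?q < a" using qpos_after[OF assms(1,3)] assms(4) by simp
  then have nall: "\<not> (\<forall>x\<in>set R. a \<le> x)" using assms(4) by (meson leD nth_mem)
  have mx: "Max {x \<in> set R. x < a} = R ! ?q"
  proof (rule Max_eqI)
    show "finite {x \<in> set R. x < a}" by simp
    show "R ! ?q \<in> {x \<in> set R. x < a}" using lt assms(4) by simp
    fix y assume "y \<in> {x \<in> set R. x < a}"
    then obtain i where i: "i < length R" "R ! i = y" "y < a" by (auto simp: in_set_conv_nth)
    have "\<not> i < ?q" using qpos_before[of i R a] i by auto
    then show "y \<le> R ! ?q" using i sorted_dec_nth[OF assms(1), of ?q i]
      by (cases "i = ?q") auto
  qed
  have "map (\<lambda>x. if x = R ! ?q then a else x) R = R[?q := a]"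
  proof (rule nth_equalityI)
    fix i assume "i < length (map (\<lambda>x. if x = R ! ?q then a else x) R)"
    then have i: "i < length R" by simp
    have "R ! i = R ! ?q \<longleftrightarrow> i = ?q" using assms(2,4) i nth_eq_iff_index_eq by blast
    then show "map (\<lambda>x. if x = R ! ?q then a else x) R ! i = R[?q := a] ! i" using i by simp
  qed simp
  moreover have "tab_ins (R # T) a = (let k2 = Max {x \<in> set R. x < a}
      in map (\<lambda>x. if x = k2 then a else x) R # tab_ins T k2)"
    using nall by (simp only: tab_ins.simps if_False)
  ultimately show ?thesis using mx by (simp add: Let_def)
qed

lemma row_knuth:
  assumes "sorted_wrt (>) R" "a \<notin> set R" "qpos R a < length R"
  shows "knuth (R @ [a]) (R ! qpos R a # R[qpos R a := a])"
proof -
  let ?q = "qpos R a"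
  define L where "L = take ?q R"
  define b where "b = R ! ?q"
  define S where "S = drop (Suc ?q) R"
  have R: "R = L @ b # S" unfolding L_def b_def S_def using assms(3) by (simp add: id_take_nth_drop)
  have R': "R[?q := a] = L @ a # S" unfolding L_def S_def using assms(3)
    by (simp add: upd_conv_take_nth_drop)
  have ba: "b < a" unfolding b_def using qpos_after[OF assms(1,2)] assms(3) by simp
  have La: "\<forall>x\<in>set L. a < x" unfolding L_def qpos_def by (metis set_takeWhileD takeWhile_eq_take)
  have sbS: "sorted_wrt (>) (b # S)" using assms(1) R by (simp add: sorted_wrt_append)
  have sL: "sorted_wrt (>) (L @ [a])" using assms(1) R La by (simp add: sorted_wrt_append)
  have "knuth (b # S @ [a]) (b # a # S)" by (rule moveA[OF sbS ba])
  then have 1: "knuth (L @ (b # S @ [a]) @ []) (L @ (b # a # S) @ [])" by (rule knuth_cong)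
  have "knuth (L @ [b, a]) (b # L @ [a])" by (rule moveB[OF sL ba])
  then have 2: "knuth ([] @ (L @ [b, a]) @ S) ([] @ (b # L @ [a]) @ S)" by (rule knuth_cong)
  have "knuth (R @ [a]) (L @ b # a # S)" using 1 R by simp
  also have "knuth (L @ b # a # S) (b # L @ a # S)" using 2 by simp
  finally show ?thesis using R' b_def by simp
qed

definition reading :: "nat list list \<Rightarrow> nat list" where
  "reading P = concat (rev P)"

definition rows_ok :: "nat list list \<Rightarrow> bool" where
  "rows_ok P \<longleftrightarrow> (\<forall>R\<in>set P. R \<noteq> [] \<and> sorted_wrt (>) R)"

lemma ins_knuth:
  assumes "rows_ok P" "distinct (concat P)" "a \<notin> set (concat P)"
  shows "knuth (reading (tab_ins P a)) (reading P @ [a])"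
  using assms
proof (induction P arbitrary: a)
  case Nil
  then show ?case by (simp add: reading_def)
next
  case (Cons R T)
  have sR: "sorted_wrt (>) R" and dR: "distinct R" and aR: "a \<notin> set R"
    using Cons.prems by (auto simp: rows_ok_def)
  show ?case
  proof (cases "qpos R a = length R")
    case True
    then show ?thesis using tab_ins_noBump[OF sR aR True] by (simp add: reading_def)
  next
    case False
    then have q: "qpos R a < length R" using qpos_le[of R a] by simp
    let ?b = "R ! qpos R a"
    have bT: "?b \<notin> set (concat T)" using Cons.prems(2) q
      by (auto dest: nth_mem)
    have IH: "knuth (reading (tab_ins T ?b)) (reading T @ [?b])"
      using Cons.IH Cons.prems bT by (auto simp: rows_ok_def)
    have "knuth (reading (tab_ins (R # T) a)) (reading (tab_ins T ?b) @ R[qpos R a := a])"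
      using tab_ins_Bump[OF sR dR aR q] by (simp add: reading_def)
    also have "knuth \<dots> ((reading T @ [?b]) @ R[qpos R a := a])"
      using knuth_append[OF IH] by blast
    also have "knuth \<dots> (reading T @ (R @ [a]))"
      using knuth_cong[OF knuth_sym[OF row_knuth[OF sR aR q]], of "reading T" "[]"] by simp
    finally show ?thesis by (simp add: reading_def)
  qed
qed


definition cols_ok :: "nat list list \<Rightarrow> bool" where
  "cols_ok P \<longleftrightarrow> (\<forall>i. Suc i < length P \<longrightarrow> length (P ! Suc i) \<le> length (P ! i) \<and>
      (\<forall>c < length (P ! Suc i). P ! Suc i ! c < P ! i ! c))"

lemma cols_ok_Nil[simp]: "cols_ok []" and cols_ok_single[simp]: "cols_ok [X]"
  unfolding cols_ok_def by auto

lemma cols_ok_Cons2: "cols_ok (X # Y # Z) \<longleftrightarrow>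
   (length Y \<le> length X \<and> (\<forall>c<length Y. Y ! c < X ! c)) \<and> cols_ok (Y # Z)"
proof
  assume A: "cols_ok (X # Y # Z)"
  have "length Y \<le> length X \<and> (\<forall>c<length Y. Y ! c < X ! c)"
    using A[unfolded cols_ok_def, rule_format, of 0] by simp
  moreover have "cols_ok (Y # Z)" unfolding cols_ok_def
  proof (intro allI impI)
    fix i assume "Suc i < length (Y # Z)"
    then show "length ((Y # Z) ! Suc i) \<le> length ((Y # Z) ! i) \<and>
      (\<forall>c<length ((Y # Z) ! Suc i). (Y # Z) ! Suc i ! c < (Y # Z) ! i ! c)"
      using A[unfolded cols_ok_def, rule_format, of "Suc i"] by simp
  qed
  ultimately show "(length Y \<le> length X \<and> (\<forall>c<length Y. Y ! c < X ! c)) \<and> cols_ok (Y # Z)" by blast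
next
  assume B: "(length Y \<le> length X \<and> (\<forall>c<length Y. Y ! c < X ! c)) \<and> cols_ok (Y # Z)"
  show "cols_ok (X # Y # Z)" unfolding cols_ok_def
  proof (intro allI impI)
    fix i assume i: "Suc i < length (X # Y # Z)"
    show "length ((X # Y # Z) ! Suc i) \<le> length ((X # Y # Z) ! i) \<and>
      (\<forall>c<length ((X # Y # Z) ! Suc i). (X # Y # Z) ! Suc i ! c < (X # Y # Z) ! i ! c)"
    proof (cases i)
      case 0
      then show ?thesis using B by simp
    next
      case (Suc j)
      then show ?thesis using B[THEN conjunct2, unfolded cols_ok_def, rule_format, of j] i by simp
    qed
  qed
qed

definition ins_row :: "nat list \<Rightarrow> nat \<Rightarrow> nat list" where
  "ins_row R a = (if qpos R a = length R then R @ [a] else R[qpos R a := a])"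

lemma row_decomp:
  assumes "sorted_wrt (>) R" "a \<notin> set R" "qpos R a < length R"
  obtains L b S where "R = L @ b # S" "R[qpos R a := a] = L @ a # S"
    "\<forall>x\<in>set L. a < x" "\<forall>x\<in>set S. x < b" "b < a" "length L = qpos R a" "R ! qpos R a = b"
proof -
  let ?q = "qpos R a"
  define L where "L = take ?q R"
  define b where "b = R ! ?q"
  define S where "S = drop (Suc ?q) R"
  have R: "R = L @ b # S" unfolding L_def b_def S_def using assms(3) by (simp add: id_take_nth_drop)
  have R': "R[?q := a] = L @ a # S" unfolding L_def S_def using assms(3)
    by (simp add: upd_conv_take_nth_drop)
  have ba: "b < a" unfolding b_def using qpos_after[OF assms(1,2)] assms(3) by simp
  have La: "\<forall>x\<in>set L. a < x" unfolding L_def qpos_def by (metis set_takeWhileD takeWhile_eq_take)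
  have "sorted_wrt (>) (L @ b # S)" using assms(1) R by simp
  then have Sb: "\<forall>x\<in>set S. x < b" by (simp add: sorted_wrt_append)
  have len: "length L = ?q" unfolding L_def using assms(3) by simp
  show ?thesis by (rule that[OF R R' La Sb ba len b_def[symmetric]])
qed

lemma ins_row_sorted:
  assumes "sorted_wrt (>) R" "a \<notin> set R"
  shows "sorted_wrt (>) (ins_row R a)"
proof (cases "qpos R a = length R")
  case True
  have "\<forall>x\<in>set R. a < x" using qpos_before[of _ R a] True by (metis in_set_conv_nth)
  then show ?thesis using True assms by (simp add: ins_row_def sorted_wrt_append)
next
  case False
  then have q: "qpos R a < length R" using qpos_le[of R a] by simp
  obtain L b S where LS: "R = L @ b # S" "R[qpos R a := a] = L @ a # S"
    "\<forall>x\<in>set L. a < x" "\<forall>x\<in>set S. x < b" "b < a" "length L = qpos R a" "R ! qpos R a = b"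
    by (rule row_decomp[OF assms q])
  have "sorted_wrt (>) (L @ b # S)" using assms(1) LS(1) by simp
  then have "sorted_wrt (>) (L @ a # S)" using LS(3,4,5) by (auto simp: sorted_wrt_append)
  then show ?thesis using LS(2) False by (simp add: ins_row_def)
qed

lemma tab_ins_Cons:
  assumes "sorted_wrt (>) R" "distinct R" "a \<notin> set R"
  shows "tab_ins (R # T) a = (if qpos R a = length R then (R @ [a]) # T
     else ins_row R a # tab_ins T (R ! qpos R a))"
  using tab_ins_noBump[OF assms(1,3)] tab_ins_Bump[OF assms] qpos_le[of R a]
  by (auto simp: ins_row_def)

lemma ins_basic:
  assumes "rows_ok P" "distinct (concat P)" "a \<notin> set (concat P)"
  shows "rows_ok (tab_ins P a) \<and> distinct (concat (tab_ins P a)) \<and>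
    set (concat (tab_ins P a)) = insert a (set (concat P)) \<and> tab_ins P a \<noteq> [] \<and>
    hd (tab_ins P a) = (case P of [] \<Rightarrow> [a] | R # _ \<Rightarrow> ins_row R a)"
  using assms
proof (induction P arbitrary: a)
  case Nil
  then show ?case by (simp add: rows_ok_def)
next
  case (Cons R T)
  have sR: "sorted_wrt (>) R" and dR: "distinct R" and aR: "a \<notin> set R" and RnE: "R \<noteq> []"
    using Cons.prems by (auto simp: rows_ok_def)
  have rT: "rows_ok T" using Cons.prems by (simp add: rows_ok_def)
  show ?case
  proof (cases "qpos R a = length R")
    case True
    have "sorted_wrt (>) (R @ [a])" using ins_row_sorted[OF sR aR] True by (simp add: ins_row_def)
    then show ?thesis using tab_ins_noBump[OF sR aR True] Cons.prems True
      by (auto simp: rows_ok_def ins_row_def)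
  next
    case False
    then have q: "qpos R a < length R" using qpos_le[of R a] by simp
    obtain L b S where LS: "R = L @ b # S" "R[qpos R a := a] = L @ a # S"
      "\<forall>x\<in>set L. a < x" "\<forall>x\<in>set S. x < b" "b < a" "length L = qpos R a" "R ! qpos R a = b"
      by (rule row_decomp[OF sR aR q])
    have bT: "b \<notin> set (concat T)" using Cons.prems(2) q LS(7) by (auto dest: nth_mem)
    have IH: "rows_ok (tab_ins T b) \<and> distinct (concat (tab_ins T b)) \<and>
      set (concat (tab_ins T b)) = insert b (set (concat T))"
      using Cons.IH[OF rT _ bT] Cons.prems by auto
    have eq: "tab_ins (R # T) a = ins_row R a # tab_ins T b"
      using tab_ins_Cons[OF sR dR aR] False LS(7) by simp
    have ir: "ins_row R a = L @ a # S" using False LS(2) by (simp add: ins_row_def)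
    have srt: "sorted_wrt (>) (ins_row R a)" by (rule ins_row_sorted[OF sR aR])
    have dRR: "distinct (L @ b # S)" using dR LS(1) by simp
    have "distinct (concat (R # T))" using Cons.prems by simp
    then have disj: "set (L @ b # S) \<inter> set (concat T) = {}" using LS(1) by auto
    have aLS: "a \<notin> set (L @ b # S)" using aR LS(1) by simp
    have "distinct (ins_row R a @ concat (tab_ins T b))"
      using dRR IH Cons.prems(3) disj aLS ir by auto
    moreover have "set (concat (tab_ins (R # T) a)) = insert a (set (concat (R # T)))"
      using eq IH ir LS(1) by auto
    ultimately show ?thesis using eq IH srt ir
      by (auto simp: rows_ok_def)
  qed
qed

lemma pair_bump:
  assumes sR: "sorted_wrt (>) R" and sR1: "sorted_wrt (>) R1" and aR: "a \<notin> set R"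
    and q: "qpos R a < length R" and bR1: "R ! qpos R a \<notin> set R1"
    and len: "length R1 \<le> length R" and ent: "\<forall>c<length R1. R1 ! c < R ! c"
  shows "length (ins_row R1 (R ! qpos R a)) \<le> length (ins_row R a) \<and>
    (\<forall>c<length (ins_row R1 (R ! qpos R a)). ins_row R1 (R ! qpos R a) ! c < ins_row R a ! c)"
proof -
  let ?q = "qpos R a"
  let ?b = "R ! ?q"
  let ?q1 = "qpos R1 ?b"
  have ba: "?b < a" using qpos_after[OF sR aR] q by simp
  have qne: "?q \<noteq> length R" using q by simp
  have IR: "ins_row R a = R[?q := a]" using qne by (simp add: ins_row_def)
  have q1q: "?q1 \<le> ?q"
  proof (cases "?q < length R1")
    case True
    have lt: "R1 ! ?q < ?b" using ent True by blast
    show ?thesis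
    proof (rule ccontr)
      assume "\<not> ?q1 \<le> ?q"
      then have "?b < R1 ! ?q" using qpos_before[of ?q R1 ?b] by simp
      then show False using lt by simp
    qed
  next
    case False
    then show ?thesis using qpos_le[of R1 ?b] by simp
  qed
  have lenIR1: "length (ins_row R1 ?b) \<le> length R"
    using q1q q len by (auto simp: ins_row_def)
  have "ins_row R1 ?b ! c < R[?q := a] ! c" if c: "c < length (ins_row R1 ?b)" for c
  proof (cases "c = ?q1")
    case True
    then have v: "ins_row R1 ?b ! c = ?b" using qpos_le[of R1 ?b]
      by (auto simp: ins_row_def nth_append)
    show ?thesis
    proof (cases "c = ?q")
      case True
      then show ?thesis using v ba q by simp
    next
      case False
      then have "c < ?q" using True q1q by simp
      then have "?b < R ! c" using sorted_dec_nth[OF sR] q by blast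
      then show ?thesis using v False by simp
    qed
  next
    case False
    then have c1: "c < length R1" using c by (auto simp: ins_row_def split: if_splits)
    then have v: "ins_row R1 ?b ! c = R1 ! c" using False by (auto simp: ins_row_def nth_append)
    show ?thesis
    proof (cases "c = ?q")
      case True
      then have "R1 ! c < R ! c" using ent c1 by blast
      then show ?thesis using v ba q True by simp
    next
      case False
      then show ?thesis using v ent c1 by simp
    qed
  qed
  then show ?thesis using lenIR1 IR by simp
qed

lemma ins_cols:
  assumes "rows_ok P" "distinct (concat P)" "a \<notin> set (concat P)" "cols_ok P"
  shows "cols_ok (tab_ins P a)"
  using assms
proof (induction P arbitrary: a)
  case Nil
  then show ?case by simp
next
  case (Cons R T)
  have sR: "sorted_wrt (>) R" and dR: "distinct R" and aR: "a \<notin> set R" and RnE: "R \<noteq> []"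
    using Cons.prems by (auto simp: rows_ok_def)
  have rT: "rows_ok T" using Cons.prems by (simp add: rows_ok_def)
  have cT: "cols_ok T" using Cons.prems(4) by (cases T) (auto simp: cols_ok_Cons2)
  show ?case
  proof (cases "qpos R a = length R")
    case True
    then have eq: "tab_ins (R # T) a = (R @ [a]) # T" using tab_ins_Cons[OF sR dR aR] by simp
    show ?thesis
    proof (cases T)
      case Nil
      then show ?thesis using eq by simp
    next
      case (Cons R1 T')
      then show ?thesis using eq Cons.prems(4) by (auto simp: cols_ok_Cons2 nth_append)
    qed
  next
    case False
    then have q: "qpos R a < length R" using qpos_le[of R a] by simp
    let ?b = "R ! qpos R a"
    have bT: "?b \<notin> set (concat T)" using Cons.prems(2) q by (auto dest: nth_mem)
    have eq: "tab_ins (R # T) a = ins_row R a # tab_ins T ?b"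
      using tab_ins_Cons[OF sR dR aR] False by simp
    have IH: "cols_ok (tab_ins T ?b)" using Cons.IH[OF rT _ bT cT] Cons.prems by simp
    have B: "rows_ok (tab_ins T ?b) \<and> tab_ins T ?b \<noteq> [] \<and>
      hd (tab_ins T ?b) = (case T of [] \<Rightarrow> [?b] | R1 # _ \<Rightarrow> ins_row R1 ?b)"
      using ins_basic[OF rT _ bT] Cons.prems by simp
    obtain H Z where HZ: "tab_ins T ?b = H # Z" using B by (cases "tab_ins T ?b") auto
    have "length H \<le> length (ins_row R a) \<and> (\<forall>c<length H. H ! c < ins_row R a ! c)"
    proof (cases T)
      case Nil
      then have H: "H = [?b]" using B HZ by simp
      have ba: "?b < a" using qpos_after[OF sR aR] q by simp
      have "length (ins_row R a) = length R" using False by (simp add: ins_row_def)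
      moreover have "?b < ins_row R a ! 0"
      proof (cases "qpos R a = 0")
        case True
        then show ?thesis using ba q False by (simp add: ins_row_def)
      next
        case False
        then have "?b < R ! 0" using sorted_dec_nth[OF sR, of 0 "qpos R a"] q by simp
        then show ?thesis using False \<open>qpos R a \<noteq> length R\<close> by (simp add: ins_row_def)
      qed
      ultimately show ?thesis using H RnE by (cases R) auto
    next
      case (Cons R1 T')
      then have H: "H = ins_row R1 ?b" using B HZ by simp
      have sR1: "sorted_wrt (>) R1" using rT Cons by (simp add: rows_ok_def)
      have bR1: "?b \<notin> set R1" using bT Cons by simp
      have "length R1 \<le> length R \<and> (\<forall>c<length R1. R1 ! c < R ! c)"
        using Cons.prems(4) \<open>T = R1 # T'\<close> by (simp add: cols_ok_Cons2)
      then show ?thesis using pair_bump[OF sR sR1 aR q bR1] H by blast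
    qed
    then show ?thesis using eq HZ IH by (simp add: cols_ok_Cons2)
  qed
qed

definition PT :: "nat list \<Rightarrow> nat list list" where
  "PT w = foldl tab_ins [] w"

lemma PT_props:
  assumes "distinct w"
  shows "rows_ok (PT w) \<and> distinct (concat (PT w)) \<and> set (concat (PT w)) = set w \<and>
    cols_ok (PT w) \<and> knuth (reading (PT w)) w"
  using assms
proof (induction w rule: rev_induct)
  case Nil
  then show ?case by (simp add: PT_def rows_ok_def reading_def)
next
  case (snoc a w)
  have IH: "rows_ok (PT w) \<and> distinct (concat (PT w)) \<and> set (concat (PT w)) = set w \<and>
    cols_ok (PT w) \<and> knuth (reading (PT w)) w" using snoc by simp
  have aw: "a \<notin> set (concat (PT w))" using IH snoc.prems by simp
  have eq: "PT (w @ [a]) = tab_ins (PT w) a" by (simp add: PT_def)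
  have k: "knuth (reading (tab_ins (PT w) a)) (reading (PT w) @ [a])"
    using ins_knuth aw IH by blast
  have "knuth (reading (PT w) @ [a]) (w @ [a])" using knuth_append IH by blast
  then have "knuth (reading (tab_ins (PT w) a)) (w @ [a])" using k by (rule rtranclp_trans[rotated])
  then show ?case using eq ins_basic[OF _ _ aw] ins_cols[OF _ _ aw] IH by auto
qed


lemma col_strict:
  assumes "cols_ok P" "i < i'" "i' < length P" "c < length (P ! i')"
  shows "c < length (P ! i) \<and> P ! i' ! c < P ! i ! c"
  using assms(2-4)
proof (induction i' arbitrary: c)
  case 0
  then show ?case by simp
next
  case (Suc j)
  have S: "length (P ! Suc j) \<le> length (P ! j) \<and> (\<forall>c<length (P ! Suc j). P ! Suc j ! c < P ! j ! c)"
    using assms(1) Suc.prems unfolding cols_ok_def by blast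
  show ?case
  proof (cases "i = j")
    case True
    then show ?thesis using S Suc.prems by auto
  next
    case False
    then have "i < j" using Suc.prems by simp
    moreover have "c < length (P ! j)" using S Suc.prems by simp
    ultimately have "c < length (P ! i) \<and> P ! j ! c < P ! i ! c" using Suc.IH Suc.prems by simp
    then show ?thesis using S Suc.prems by force
  qed
qed

lemma reading_split:
  assumes "i < length P"
  shows "reading P = concat (rev (drop (Suc i) P)) @ P ! i @ concat (rev (take i P))"
proof -
  have "P = take i P @ [P ! i] @ drop (Suc i) P" using assms by (simp add: id_take_nth_drop)
  then have "rev P = rev (take i P @ [P ! i] @ drop (Suc i) P)" by (rule arg_cong[where f=rev])
  also have "\<dots> = rev (drop (Suc i) P) @ [P ! i] @ rev (take i P)" by simp
  finally have "rev P = rev (drop (Suc i) P) @ [P ! i] @ rev (take i P)" .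
  then show ?thesis unfolding reading_def by simp
qed

lemma prec_reading:
  assumes "i < i'" "i' < length P" "c < length (P ! i)" "c' < length (P ! i')"
  shows "prec (reading P) (P ! i' ! c') (P ! i ! c)"
proof -
  have l: "i' - Suc i < length (drop (Suc i) P)" using assms by simp
  have "drop (Suc i) P ! (i' - Suc i) = P ! i'" using assms by simp
  then have "P ! i' \<in> set (drop (Suc i) P)" using nth_mem[OF l] by simp
  moreover have "P ! i' ! c' \<in> set (P ! i')" using assms(4) by simp
  ultimately have "P ! i' ! c' \<in> set (concat (rev (drop (Suc i) P)))" by auto
  moreover have "P ! i ! c \<in> set (P ! i @ concat (rev (take i P)))" using assms(3) by simp
  ultimately show ?thesis using reading_split[of i P] assms by (simp only: prec_append) simp
qed

lemma sorted_prec: "sorted_wrt (>) R \<Longrightarrow> a \<in> set R \<Longrightarrow> b \<in> set R \<Longrightarrow> a < b \<Longrightarrow> prec R b a"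
  by (induction R) auto

lemma row_dec:
  assumes "rows_ok P" "i < length P"
  shows "dec (reading P) (set (P ! i))"
  unfolding dec_def
proof (intro conjI ballI impI)
  show "set (P ! i) \<subseteq> set (reading P)" using reading_split[OF assms(2)] by auto
  fix a b assume "a \<in> set (P ! i)" "b \<in> set (P ! i)" "a < b"
  moreover have "sorted_wrt (>) (P ! i)" using assms unfolding rows_ok_def by simp
  ultimately have "prec (P ! i) b a" using sorted_prec by blast
  then show "prec (reading P) b a" using reading_split[OF assms(2)] by simp
qed

lemma rows_disjoint:
  "distinct (concat P) \<Longrightarrow> i < j \<Longrightarrow> j < length P \<Longrightarrow> set (P ! i) \<inter> set (P ! j) = {}"
proof (induction P arbitrary: i j)
  case Nil
  then show ?case by simp
next
  case (Cons R T)
  obtain j' where j: "j = Suc j'" using Cons.prems by (cases j) auto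
  show ?case
  proof (cases i)
    case 0
    have "T ! j' \<in> set T" using Cons.prems j by simp
    then have "set (T ! j') \<subseteq> set (concat T)" by auto
    moreover have "set R \<inter> set (concat T) = {}" using Cons.prems(1) by simp
    ultimately show ?thesis using 0 j by auto
  next
    case (Suc i')
    then show ?thesis using Cons.IH[of i' j'] Cons.prems j by simp
  qed
qed

definition rowsum :: "nat list list \<Rightarrow> nat \<Rightarrow> nat" where
  "rowsum P k = (\<Sum>i<min k (length P). length (P ! i))"

lemma greene_reading_ge:
  assumes "rows_ok P" "distinct (concat P)"
  shows "rowsum P k \<le> greene (reading P) k"
proof -
  define C where "C l = (if l < length P then set (P ! l) else {})" for l
  have f: "fam (reading P) k C" unfolding fam_def C_def using row_dec[OF assms(1)] by simp
  have U: "(\<Union>l<k. C l) = (\<Union>l<min k (length P). set (P ! l))" unfolding C_def by auto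
  have "card (\<Union>l<min k (length P). set (P ! l)) = (\<Sum>l<min k (length P). card (set (P ! l)))"
  proof (rule card_UN_disjoint)
    show "\<forall>i\<in>{..<min k (length P)}. \<forall>j\<in>{..<min k (length P)}. i \<noteq> j \<longrightarrow> set (P ! i) \<inter> set (P ! j) = {}"
      using rows_disjoint[OF assms(2)] by (metis Int_commute lessThan_iff linorder_neqE_nat min_less_iff_conj)
  qed auto
  also have "\<dots> = rowsum P k" unfolding rowsum_def
  proof (rule sum.cong)
    fix l assume "l \<in> {..<min k (length P)}"
    then have "P ! l \<in> set P" by simp
    then have "distinct (P ! l)" using assms(2) by (simp add: distinct_concat_iff)
    then show "card (set (P ! l)) = length (P ! l)" by (rule distinct_card)
  qed simp
  finally show ?thesis using greene_ge[OF f] U by simp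
qed

lemma in_concat_nth: "e \<in> set (concat P) \<Longrightarrow> \<exists>i c. i < length P \<and> c < length (P ! i) \<and> P ! i ! c = e"
proof -
  assume "e \<in> set (concat P)"
  then obtain R where R: "R \<in> set P" "e \<in> set R" by auto
  then obtain i where i: "i < length P" "P ! i = R" by (auto simp: in_set_conv_nth)
  obtain c where c: "c < length R" "R ! c = e" using R(2) by (auto simp: in_set_conv_nth)
  show ?thesis using i c by blast
qed

lemma greene_reading_le:
  assumes rows: "rows_ok P" and dist: "distinct (concat P)" and cols: "cols_ok P"
    and fam: "fam (reading P) k C"
  shows "card (\<Union>l<k. C l) \<le> rowsum P k"
proof -
  define U where "U = (\<Union>l<k. C l)"
  have distR: "distinct (reading P)" using dist by (simp add: reading_def)
  have Usub: "U \<subseteq> set (concat P)" using fam_union_sub[OF fam] unfolding U_def reading_def by simp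
  have finU: "finite U" using Usub finite_subset by blast
  define crd where "crd e = (SOME ic. fst ic < length P \<and> snd ic < length (P ! fst ic) \<and> P ! fst ic ! snd ic = e)" for e
  define row where "row e = fst (crd e)" for e
  define col where "col e = snd (crd e)" for e
  have crd: "row e < length P \<and> col e < length (P ! row e) \<and> P ! row e ! col e = e" if "e \<in> U" for e
  proof -
    have "e \<in> set (concat P)" using that Usub by blast
    from in_concat_nth[OF this] obtain i c where "i < length P \<and> c < length (P ! i) \<and> P ! i ! c = e"
      by blast
    then have "\<exists>ic. fst ic < length P \<and> snd ic < length (P ! fst ic) \<and> P ! fst ic ! snd ic = e"
      by (intro exI[of _ "(i, c)"]) simp
    then show ?thesis unfolding row_def col_def crd_def by (rule someI_ex)
  qed
  have same: "e1 = e2" if "e1 \<in> U" "e2 \<in> U" "row e1 = row e2" "col e1 = col e2" for e1 e2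
    using crd[OF that(1)] crd[OF that(2)] that by metis
  have colord: "e2 < e1 \<and> prec (reading P) e2 e1"
    if "e1 \<in> U" "e2 \<in> U" "col e1 = col e2" "row e1 < row e2" for e1 e2
  proof -
    have c2: "row e2 < length P" "col e2 < length (P ! row e2)" "P ! row e2 ! col e2 = e2"
      using crd[OF that(2)] by auto
    have c1: "P ! row e1 ! col e1 = e1" using crd[OF that(1)] by auto
    have "P ! row e2 ! col e2 < P ! row e1 ! col e2"
      using col_strict[OF cols that(4) c2(1) c2(2)] by blast
    then have "e2 < e1" using c1 c2 that(3) by simp
    moreover have "prec (reading P) e2 e1"
      using prec_reading[OF that(4)] crd[OF that(1)] crd[OF that(2)] by metis
    ultimately show ?thesis by blast
  qed
  have atmost1: "e1 = e2" if "l < k" "e1 \<in> C l" "e2 \<in> C l" "col e1 = col e2" for l e1 e2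
  proof (rule ccontr)
    assume ne: "e1 \<noteq> e2"
    have U12: "e1 \<in> U" "e2 \<in> U" using that unfolding U_def by blast+
    have dC: "dec (reading P) (C l)" using fam that unfolding fam_def by blast
    have "row e1 \<noteq> row e2" using same[OF U12] that ne by blast
    then consider "row e1 < row e2" | "row e2 < row e1" by linarith
    then show False
    proof cases
      case 1
      then have "e2 < e1 \<and> prec (reading P) e2 e1" using colord U12 that by blast
      moreover have "prec (reading P) e1 e2" using dC that calculation unfolding dec_def by blast
      ultimately show False using prec_asym[OF distR] by blast
    next
      case 2
      then have "e1 < e2 \<and> prec (reading P) e1 e2" using colord U12 that by metis
      moreover have "prec (reading P) e2 e1" using dC that calculation unfolding dec_def by blast
      ultimately show False using prec_asym[OF distR] by blast
    qed
  qed
  define Y where "Y e = {e' \<in> U. col e' = col e \<and> row e' < row e}" for e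
  define rank where "rank e = card (Y e)" for e
  have finY: "finite (Y e)" for e unfolding Y_def using finU by simp
  have rank_k: "rank e < k" if "e \<in> U" for e
  proof -
    define X where "X = {e' \<in> U. col e' = col e \<and> row e' \<le> row e}"
    have "insert e (Y e) \<subseteq> X" unfolding X_def Y_def using that by auto
    moreover have "e \<notin> Y e" unfolding Y_def by simp
    moreover have finX: "finite X" unfolding X_def using finU by simp
    ultimately have "Suc (rank e) \<le> card X" unfolding rank_def
      by (metis card_insert_disjoint card_mono finY)
    moreover have "card X \<le> k"
    proof -
      have "X = (\<Union>l<k. X \<inter> C l)" unfolding X_def U_def by auto
      then have "card X \<le> (\<Sum>l<k. card (X \<inter> C l))" by (metis card_UN_le finite_lessThan)
      also have "\<dots> \<le> (\<Sum>l<k. 1)"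
      proof (rule sum_mono)
        fix l assume l: "l \<in> {..<k}"
        have "finite (X \<inter> C l)" using finX by simp
        moreover have "\<forall>x\<in>X \<inter> C l. \<forall>y\<in>X \<inter> C l. x = y"
          using atmost1[of l] l unfolding X_def by auto
        ultimately show "card (X \<inter> C l) \<le> 1" using card_le_Suc0_iff_eq by auto
      qed
      finally show ?thesis by simp
    qed
    ultimately show ?thesis by simp
  qed
  have rank_row: "rank e \<le> row e" if "e \<in> U" for e
  proof -
    have "inj_on row (Y e)" unfolding Y_def inj_on_def using same by auto
    moreover have "row ` Y e \<subseteq> {..<row e}" unfolding Y_def by auto
    ultimately show ?thesis unfolding rank_def by (metis card_inj_on_le card_lessThan finite_lessThan)
  qed
  define T where "T = Sigma {..<min k (length P)} (\<lambda>i. {..<length (P ! i)})"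
  define phi where "phi e = (rank e, col e)" for e
  have phiT: "phi ` U \<subseteq> T"
  proof
    fix x assume "x \<in> phi ` U"
    then obtain e where e: "e \<in> U" "x = phi e" by blast
    have r: "rank e < length P" using rank_row[OF e(1)] crd[OF e(1)] by simp
    have "col e < length (P ! rank e)"
    proof (cases "rank e = row e")
      case True
      then show ?thesis using crd[OF e(1)] by simp
    next
      case False
      then have "rank e < row e" using rank_row[OF e(1)] by simp
      then show ?thesis using col_strict[OF cols] crd[OF e(1)] by blast
    qed
    then show "x \<in> T" unfolding T_def e(2) phi_def using r rank_k[OF e(1)] by simp
  qed
  have inj: "inj_on phi U"
  proof (rule inj_onI)
    fix e1 e2 assume e: "e1 \<in> U" "e2 \<in> U" "phi e1 = phi e2"
    then have c: "col e1 = col e2" and r: "rank e1 = rank e2" unfolding phi_def by simp_all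
    have lt: False if "e1' \<in> U" "e2' \<in> U" "col e1' = col e2'" "row e1' < row e2'" "rank e1' = rank e2'" for e1' e2'
    proof -
      have "insert e1' (Y e1') \<subseteq> Y e2'" unfolding Y_def using that by auto
      moreover have "e1' \<notin> Y e1'" unfolding Y_def by simp
      ultimately have "Suc (rank e1') \<le> rank e2'" unfolding rank_def
        by (metis card_insert_disjoint card_mono finY)
      then show False using that by simp
    qed
    have "row e1 = row e2"
    proof (rule ccontr)
      assume "row e1 \<noteq> row e2"
      then consider "row e1 < row e2" | "row e2 < row e1" by linarith
      then show False
      proof cases
        case 1 then show False using lt[of e1 e2] e c r by blast
      next
        case 2 then show False using lt[of e2 e1] e c r by metis
      qed
    qed
    then show "e1 = e2" using same e c by blast
  qed
  have "card U \<le> card T" using card_inj_on_le[OF inj phiT] unfolding T_def by simp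
  also have "card T = rowsum P k" unfolding T_def rowsum_def by (simp add: card_SigmaI)
  finally show ?thesis unfolding U_def .
qed

lemma greene_reading:
  assumes "rows_ok P" "distinct (concat P)" "cols_ok P"
  shows "greene (reading P) k = rowsum P k"
proof -
  obtain C where "fam (reading P) k C" "card (\<Union>l<k. C l) = greene (reading P) k"
    using greene_obtain by blast
  then have "greene (reading P) k \<le> rowsum P k" using greene_reading_le[OF assms] by metis
  then show ?thesis using greene_reading_ge[OF assms(1,2), of k] by (rule antisym)
qed

theorem greene_thm:
  assumes "distinct w"
  shows "greene w k = rowsum (PT w) k"
proof -
  have p: "rows_ok (PT w)" "distinct (concat (PT w))" "cols_ok (PT w)" "knuth (reading (PT w)) w"
    using PT_props[OF assms] by auto
  have "distinct (reading (PT w))" using p(2) by (simp add: reading_def)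
  then have "greene (reading (PT w)) k = greene w k" using knuth_greene[OF p(4)] by blast
  then show ?thesis using greene_reading[OF p(1-3)] by simp
qed


definition cum :: "(int \<Rightarrow> nat) \<Rightarrow> nat \<Rightarrow> nat" where
  "cum lam i = (\<Sum>k\<in>{1..i}. lam (int k))"

lemma cum_0[simp]: "cum lam 0 = 0" by (simp add: cum_def)

lemma cum_Suc: "cum lam (Suc i) = cum lam i + lam (int (Suc i))"
  by (simp add: cum_def)

lemma cum_mono: "i \<le> j \<Longrightarrow> cum lam i \<le> cum lam j"
  unfolding cum_def by (rule sum_mono2) auto

lemma Rblk_pos: "i > 0 \<Longrightarrow> Rblk lam i = {int (cum lam (nat i - 1)) + 1 .. int (cum lam (nat i))}"
proof -
  assume "i > 0"
  have "{1..<nat i} = {1..nat i - 1}" using \<open>i > 0\<close> by auto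
  then show ?thesis using \<open>i > 0\<close> unfolding Rblk_def cum_def by simp
qed

lemma Rblk_neg: "i < 0 \<Longrightarrow> Rblk lam i = uminus ` Rblk lam (- i)"
proof -
  assume "i < 0"
  then show ?thesis unfolding Rblk_def by simp
qed

lemma Ir_iff: "i \<in> Ir r \<longleftrightarrow> i \<noteq> 0 \<and> \<bar>i\<bar> \<le> int r"
  unfolding Ir_def by auto

lemma signedset_iff: "x \<in> signedset d \<longleftrightarrow> x \<noteq> 0 \<and> \<bar>x\<bar> \<le> int d"
  unfolding signedset_def by auto

lemma Ir_uminus[simp]: "- i \<in> Ir r \<longleftrightarrow> i \<in> Ir r"
  unfolding Ir_iff by auto

lemma signedset_uminus[simp]: "- x \<in> signedset d \<longleftrightarrow> x \<in> signedset d"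
  unfolding signedset_iff by auto

lemma finite_Ir[simp]: "finite (Ir r)" unfolding Ir_def by simp
lemma finite_signedset[simp]: "finite (signedset d)" unfolding signedset_def by simp

locale blocks =
  fixes r d :: nat and lam :: "int \<Rightarrow> nat"
  assumes tot: "cum lam r = d"
begin

definition bpos :: "int \<Rightarrow> nat" where
  "bpos x = (LEAST i. x \<le> int (cum lam i))"

definition blk :: "int \<Rightarrow> int" where
  "blk x = (if x > 0 then int (bpos x) else - int (bpos (- x)))"

lemma bpos_props:
  assumes "0 < x" "x \<le> int d"
  shows "1 \<le> bpos x \<and> bpos x \<le> r \<and> x \<le> int (cum lam (bpos x)) \<and> int (cum lam (bpos x - 1)) < x"
proof -
  have ex: "x \<le> int (cum lam r)" using assms tot by simp
  have le: "x \<le> int (cum lam (bpos x))" unfolding bpos_def by (rule LeastI[of _ r]) (rule ex)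
  have r: "bpos x \<le> r" unfolding bpos_def by (rule Least_le) (rule ex)
  have ne0: "bpos x \<noteq> 0" using le assms by (intro notI) simp
  have "\<not> x \<le> int (cum lam (bpos x - 1))"
  proof
    assume "x \<le> int (cum lam (bpos x - 1))"
    then have "bpos x \<le> bpos x - 1" unfolding bpos_def by (rule Least_le)
    then show False using ne0 by simp
  qed
  then show ?thesis using le r ne0 by simp
qed

lemma bpos_mono: "0 < x \<Longrightarrow> x \<le> y \<Longrightarrow> y \<le> int d \<Longrightarrow> bpos x \<le> bpos y"
proof -
  assume a: "0 < x" "x \<le> y" "y \<le> int d"
  have "y \<le> int (cum lam (bpos y))" using bpos_props[of y] a by simp
  then have "x \<le> int (cum lam (bpos y))" using a by simp
  then show ?thesis unfolding bpos_def by (rule Least_le)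
qed

lemma bpos_eq:
  assumes "1 \<le> i" "i \<le> r" "int (cum lam (i - 1)) < x" "x \<le> int (cum lam i)"
  shows "bpos x = i"
proof -
  have le: "bpos x \<le> i" unfolding bpos_def by (rule Least_le) (rule assms(4))
  have xd: "x \<le> int d" using assms cum_mono[of i r lam] tot by simp
  have x0: "0 < x" using assms by simp
  have p: "x \<le> int (cum lam (bpos x))" using bpos_props[OF x0 xd] by simp
  have "\<not> bpos x < i"
  proof
    assume "bpos x < i"
    then have "cum lam (bpos x) \<le> cum lam (i - 1)" by (intro cum_mono) simp
    then show False using p assms(3) by simp
  qed
  then show ?thesis using le by simp
qed

lemma blk_in:
  assumes "x \<in> signedset d"
  shows "blk x \<in> Ir r \<and> x \<in> Rblk lam (blk x)"
proof (cases "x > 0")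
  case True
  have xd: "x \<le> int d" using assms unfolding signedset_iff by linarith
  note b = bpos_props[OF True xd]
  have "blk x = int (bpos x)" using True by (simp add: blk_def)
  then show ?thesis using b True by (auto simp: Ir_iff Rblk_pos)
next
  case False
  then have x0: "0 < - x" using assms unfolding signedset_iff by simp
  have xd: "- x \<le> int d" using assms unfolding signedset_iff by linarith
  note b = bpos_props[OF x0 xd]
  have bl: "blk x = - int (bpos (- x))" using False by (simp add: blk_def)
  have "- x \<in> Rblk lam (int (bpos (- x)))" using b by (auto simp: Rblk_pos)
  then have "x \<in> Rblk lam (- int (bpos (- x)))" using b by (auto simp: Rblk_neg image_iff intro: bexI[of _ "- x"])
  then show ?thesis using b bl by (auto simp: Ir_iff)
qed

lemma Rblk_blk:
  assumes "i \<in> Ir r" "x \<in> Rblk lam i"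
  shows "x \<in> signedset d \<and> blk x = i"
proof (cases "i > 0")
  case True
  have i: "1 \<le> nat i" "nat i \<le> r" using assms(1) True by (auto simp: Ir_iff)
  have x: "int (cum lam (nat i - 1)) < x" "x \<le> int (cum lam (nat i))"
    using assms(2) True by (auto simp: Rblk_pos)
  have "bpos x = nat i" by (rule bpos_eq[OF i x])
  moreover have "x \<le> int d" using x cum_mono[of "nat i" r lam] tot i by simp
  moreover have "0 < x" using x by simp
  ultimately show ?thesis using True by (simp add: blk_def signedset_iff)
next
  case False
  then have ineg: "i < 0" using assms(1) by (simp add: Ir_iff)
  then obtain y where y: "y \<in> Rblk lam (- i)" "x = - y" using assms(2) by (auto simp: Rblk_neg)
  have i: "1 \<le> nat (- i)" "nat (- i) \<le> r" using assms(1) ineg by (auto simp: Ir_iff)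
  have yy: "int (cum lam (nat (- i) - 1)) < y" "y \<le> int (cum lam (nat (- i)))"
    using y(1) ineg by (auto simp: Rblk_pos)
  have "bpos y = nat (- i)" by (rule bpos_eq[OF i yy])
  moreover have "y \<le> int d" using yy cum_mono[of "nat (- i)" r lam] tot i by simp
  moreover have "0 < y" using yy by simp
  ultimately show ?thesis using ineg y by (simp add: blk_def signedset_iff)
qed

lemma blk_mono:
  assumes "x \<in> signedset d" "y \<in> signedset d" "x \<le> y"
  shows "blk x \<le> blk y"
proof -
  have xd: "\<bar>x\<bar> \<le> int d" "x \<noteq> 0" and yd: "\<bar>y\<bar> \<le> int d" "y \<noteq> 0"
    using assms unfolding signedset_iff by auto
  show ?thesis
  proof (cases "x > 0")
    case True
    then have "y > 0" using assms by simp
    then show ?thesis using True bpos_mono[of x y] assms yd by (simp add: blk_def)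
  next
    case False
    then have x0: "x < 0" using xd by simp
    show ?thesis
    proof (cases "y > 0")
      case True
      then show ?thesis using x0 by (simp add: blk_def)
    next
      case False
      then have "y < 0" using yd by simp
      then have "bpos (- y) \<le> bpos (- x)" using bpos_mono[of "- y" "- x"] assms xd by simp
      then show ?thesis using x0 \<open>y < 0\<close> by (simp add: blk_def)
    qed
  qed
qed

lemma blk_less: "x \<in> signedset d \<Longrightarrow> y \<in> signedset d \<Longrightarrow> blk x < blk y \<Longrightarrow> x < y"
  using blk_mono[of y x] by force

lemma blk_uminus: "x \<in> signedset d \<Longrightarrow> blk (- x) = - blk x"
  unfolding blk_def signedset_iff by auto

lemma blk_sign: "x \<in> signedset d \<Longrightarrow> (blk x > 0 \<longleftrightarrow> x > 0)"
  unfolding blk_def signedset_iff using bpos_props[of x] bpos_props[of "- x"] by auto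

lemma Rblk_sub: "i \<in> Ir r \<Longrightarrow> Rblk lam i \<subseteq> signedset d"
  using Rblk_blk by blast

lemma Rblk_eq: "i \<in> Ir r \<Longrightarrow> Rblk lam i = {x \<in> signedset d. blk x = i}"
  using Rblk_blk blk_in by blast

lemma finite_Rblk[simp]: "finite (Rblk lam i)"
  by (cases "i > 0") (auto simp: Rblk_pos Rblk_neg Rblk_def)

lemma card_Rblk: "i \<in> Ir r \<Longrightarrow> card (Rblk lam i) = lam \<bar>i\<bar>"
proof -
  have pos: "card (Rblk lam i) = lam i" if "i > 0" "i \<in> Ir r" for i
  proof -
    have "nat i \<ge> 1" using that by simp
    then have "cum lam (nat i) = cum lam (nat i - 1) + lam (int (nat i))"
      using cum_Suc[of lam "nat i - 1"] by simp
    then show ?thesis using that by (simp add: Rblk_pos)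
  qed
  assume i: "i \<in> Ir r"
  show ?thesis
  proof (cases "i > 0")
    case True
    then show ?thesis using pos i by simp
  next
    case False
    then have "i < 0" using i by (simp add: Ir_iff)
    then have "card (Rblk lam i) = card (Rblk lam (- i))" by (simp add: Rblk_neg card_image)
    then show ?thesis using pos[of "- i"] i \<open>i < 0\<close> by simp
  qed
qed

end


lemma transport:
  fixes colf :: "'p \<Rightarrow> 'j" and rowf :: "'v \<Rightarrow> 'i" and a :: "'i \<Rightarrow> 'j \<Rightarrow> nat"
  assumes "finite P" "finite V" "finite I" "finite J" "colf ` P \<subseteq> J" "rowf ` V \<subseteq> I"
    "\<forall>j\<in>J. card {p\<in>P. colf p = j} = (\<Sum>i\<in>I. a i j)"
    "\<forall>i\<in>I. card {v\<in>V. rowf v = i} = (\<Sum>j\<in>J. a i j)"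
  shows "\<exists>f. bij_betw f P V \<and> (\<forall>i\<in>I. \<forall>j\<in>J. card {p\<in>P. colf p = j \<and> rowf (f p) = i} = a i j)"
  using assms
proof (induction "card P" arbitrary: P V a)
  case 0
  then have P0: "P = {}" by simp
  have a0: "a i j = 0" if "i \<in> I" "j \<in> J" for i j
  proof -
    have "(\<Sum>i\<in>I. a i j) = 0" using 0 P0 that by simp
    then show ?thesis using 0(4) that by simp
  qed
  have V0: "V = {}"
  proof (rule ccontr)
    assume "V \<noteq> {}"
    then obtain v where v: "v \<in> V" by blast
    then have i: "rowf v \<in> I" using 0(7) by blast
    have "card {w\<in>V. rowf w = rowf v} = 0" using 0(9) i a0 by simp
    moreover have "finite {w\<in>V. rowf w = rowf v}" using 0(3) by simp
    ultimately show False using v by auto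
  qed
  have "bij_betw (\<lambda>_. undefined) P V" using P0 V0 by (simp add: bij_betw_def)
  moreover have "\<forall>i\<in>I. \<forall>j\<in>J. card {p\<in>P. colf p = j \<and> rowf undefined = i} = a i j"
    using P0 a0 by simp
  ultimately show ?case by blast
next
  case (Suc n)
  then obtain p0 where p0: "p0 \<in> P" by (metis card.empty ex_in_conv nat.simps(3))
  define j0 where "j0 = colf p0"
  have j0: "j0 \<in> J" using Suc.prems(5) p0 unfolding j0_def by blast
  have "p0 \<in> {p\<in>P. colf p = j0}" using p0 unfolding j0_def by simp
  then have "card {p\<in>P. colf p = j0} > 0" using Suc.prems(1) by (auto simp: card_gt_0_iff)
  then have "(\<Sum>i\<in>I. a i j0) > 0" using Suc.prems(7) j0 by simp
  then have "\<exists>i\<in>I. a i j0 \<noteq> 0"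
  proof (rule contrapos_pp)
    assume "\<not> (\<exists>i\<in>I. a i j0 \<noteq> 0)"
    then show "\<not> (\<Sum>i\<in>I. a i j0) > 0" by simp
  qed
  then obtain i0 where i0: "i0 \<in> I" "a i0 j0 > 0" by blast
  have "(\<Sum>j\<in>J. a i0 j) \<ge> a i0 j0" using j0 Suc.prems(4) by (intro member_le_sum) auto
  then have "card {v\<in>V. rowf v = i0} > 0" using Suc.prems(8) i0 by simp
  then obtain v0 where v0: "v0 \<in> V" "rowf v0 = i0" by (metis (mono_tags, lifting) card_gt_0_iff empty_Collect_eq)
  define a' where "a' i j = (if i = i0 \<and> j = j0 then a i j - 1 else a i j)" for i j
  define P' where "P' = P - {p0}"
  define V' where "V' = V - {v0}"
  have cP': "n = card P'" unfolding P'_def using Suc.hyps(2) p0 Suc.prems(1) by simp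
  have sumI: "(\<Sum>i\<in>I. a' i j) = (\<Sum>i\<in>I. a i j) - (if j = j0 then 1 else 0)" for j
  proof (cases "j = j0")
    case True
    have "(\<Sum>i\<in>I. a i j) = a i0 j + (\<Sum>i\<in>I - {i0}. a i j)" using i0 Suc.prems(3) by (simp add: sum.remove)
    moreover have "(\<Sum>i\<in>I. a' i j) = a' i0 j + (\<Sum>i\<in>I - {i0}. a' i j)" using i0 Suc.prems(3) by (simp add: sum.remove)
    moreover have "(\<Sum>i\<in>I - {i0}. a' i j) = (\<Sum>i\<in>I - {i0}. a i j)" unfolding a'_def by (intro sum.cong) auto
    ultimately show ?thesis using True i0 unfolding a'_def by simp
  next
    case False
    then show ?thesis unfolding a'_def by simp
  qed
  have sumJ: "(\<Sum>j\<in>J. a' i j) = (\<Sum>j\<in>J. a i j) - (if i = i0 then 1 else 0)" for i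
  proof (cases "i = i0")
    case True
    have "(\<Sum>j\<in>J. a i j) = a i j0 + (\<Sum>j\<in>J - {j0}. a i j)" using j0 Suc.prems(4) by (simp add: sum.remove)
    moreover have "(\<Sum>j\<in>J. a' i j) = a' i j0 + (\<Sum>j\<in>J - {j0}. a' i j)" using j0 Suc.prems(4) by (simp add: sum.remove)
    moreover have "(\<Sum>j\<in>J - {j0}. a' i j) = (\<Sum>j\<in>J - {j0}. a i j)" unfolding a'_def by (intro sum.cong) auto
    ultimately show ?thesis using True i0 unfolding a'_def by simp
  next
    case False
    then show ?thesis unfolding a'_def by simp
  qed
  have h7: "\<forall>j\<in>J. card {p\<in>P'. colf p = j} = (\<Sum>i\<in>I. a' i j)"
  proof
    fix j assume j: "j \<in> J"
    have "{p\<in>P'. colf p = j} = {p\<in>P. colf p = j} - (if j = j0 then {p0} else {})"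
      unfolding P'_def j0_def by auto
    moreover have "finite {p\<in>P. colf p = j}" using Suc.prems(1) by simp
    ultimately have "card {p\<in>P'. colf p = j} = card {p\<in>P. colf p = j} - (if j = j0 then 1 else 0)"
      using p0 unfolding j0_def by (auto simp: card_Diff_singleton)
    then show "card {p\<in>P'. colf p = j} = (\<Sum>i\<in>I. a' i j)" using sumI Suc.prems(7) j by simp
  qed
  have h8: "\<forall>i\<in>I. card {v\<in>V'. rowf v = i} = (\<Sum>j\<in>J. a' i j)"
  proof
    fix i assume i: "i \<in> I"
    have "{v\<in>V'. rowf v = i} = {v\<in>V. rowf v = i} - (if i = i0 then {v0} else {})"
      unfolding V'_def using v0 by auto
    moreover have "finite {v\<in>V. rowf v = i}" using Suc.prems(2) by simp
    ultimately have "card {v\<in>V'. rowf v = i} = card {v\<in>V. rowf v = i} - (if i = i0 then 1 else 0)"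
      using v0 by (auto simp: card_Diff_singleton)
    then show "card {v\<in>V'. rowf v = i} = (\<Sum>j\<in>J. a' i j)" using sumJ Suc.prems(8) i by simp
  qed
  obtain f' where f': "bij_betw f' P' V'" "\<forall>i\<in>I. \<forall>j\<in>J. card {p\<in>P'. colf p = j \<and> rowf (f' p) = i} = a' i j"
  proof -
    have a1: "finite P'" "finite V'" using Suc.prems(1,2) unfolding P'_def V'_def by auto
    have a2: "colf ` P' \<subseteq> J" "rowf ` V' \<subseteq> I" using Suc.prems(5,6) unfolding P'_def V'_def by auto
    show ?thesis using Suc.hyps(1)[OF cP' a1 Suc.prems(3,4) a2 h7 h8] that by blast
  qed
  define f where "f = f'(p0 := v0)"
  have bij: "bij_betw f P V"
  proof -
    have "\<forall>x\<in>P'. f' x = (f'(p0 := v0)) x" unfolding P'_def by simp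
    then have "bij_betw f P' V'" unfolding f_def using f'(1) bij_betw_cong by metis
    moreover have "P = insert p0 P'" "V = insert v0 V'" using p0 v0 unfolding P'_def V'_def by auto
    moreover have "p0 \<notin> P'" "v0 \<notin> V'" unfolding P'_def V'_def by auto
    moreover have "f p0 = v0" unfolding f_def by simp
    ultimately show ?thesis using notIn_Un_bij_betw[of p0 P' f V'] by simp
  qed
  have cnt: "card {p\<in>P. colf p = j \<and> rowf (f p) = i} = a i j" if i: "i \<in> I" and j: "j \<in> J" for i j
  proof -
    have eq: "{p\<in>P. colf p = j \<and> rowf (f p) = i} =
      {p\<in>P'. colf p = j \<and> rowf (f' p) = i} \<union> (if i = i0 \<and> j = j0 then {p0} else {})"
      unfolding f_def P'_def j0_def using p0 v0 by auto
    have fin: "finite {p\<in>P'. colf p = j \<and> rowf (f' p) = i}" using Suc.prems(1) unfolding P'_def by simp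
    have "p0 \<notin> {p\<in>P'. colf p = j \<and> rowf (f' p) = i}" unfolding P'_def by simp
    then have "card {p\<in>P. colf p = j \<and> rowf (f p) = i} =
      card {p\<in>P'. colf p = j \<and> rowf (f' p) = i} + (if i = i0 \<and> j = j0 then 1 else 0)"
      unfolding eq using fin by auto
    then show ?thesis using f'(2) i j i0 unfolding a'_def by auto
  qed
  show ?case using bij cnt by blast
qed


lemma Ir_split: "(\<Sum>i\<in>Ir r. f i) = (\<Sum>k\<in>{1..r}. f (int k)) + (\<Sum>k\<in>{1..r}. f (- int k))"
proof -
  have I: "Ir r = int ` {1..r} \<union> (\<lambda>k. - int k) ` {1..r}"
  proof
    show "Ir r \<subseteq> int ` {1..r} \<union> (\<lambda>k. - int k) ` {1..r}"
    proof
      fix i assume "i \<in> Ir r"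
      then have i: "i \<noteq> 0" "\<bar>i\<bar> \<le> int r" by (auto simp: Ir_iff)
      show "i \<in> int ` {1..r} \<union> (\<lambda>k. - int k) ` {1..r}"
      proof (cases "i > 0")
        case True
        then have "i = int (nat i)" "nat i \<in> {1..r}" using i by auto
        then show ?thesis by blast
      next
        case False
        then have "i = - int (nat (- i))" "nat (- i) \<in> {1..r}" using i by auto
        then show ?thesis by blast
      qed
    qed
  qed (auto simp: Ir_iff)
  have "(\<Sum>i\<in>Ir r. f i) = (\<Sum>i\<in>int ` {1..r}. f i) + (\<Sum>i\<in>(\<lambda>k. - int k) ` {1..r}. f i)"
    unfolding I by (rule sum.union_disjoint) auto
  also have "\<dots> = (\<Sum>k\<in>{1..r}. f (int k)) + (\<Sum>k\<in>{1..r}. f (- int k))"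
    by (simp add: sum.reindex inj_on_def)
  finally show ?thesis .
qed

lemma sum_Ir_neg: "(\<Sum>i\<in>Ir r. f (- i)) = (\<Sum>i\<in>Ir r. f i)"
proof -
  have "(\<Sum>i\<in>Ir r. f (- i)) = (\<Sum>i\<in>uminus ` Ir r. f i)"
    by (simp add: sum.reindex inj_on_def)
  also have "uminus ` Ir r = Ir r"
  proof
    show "uminus ` Ir r \<subseteq> Ir r" by auto
    show "Ir r \<subseteq> uminus ` Ir r"
    proof
      fix x assume "x \<in> Ir r"
      then have "- x \<in> Ir r" by simp
      then show "x \<in> uminus ` Ir r" by (metis image_eqI minus_minus)
    qed
  qed
  finally show ?thesis by simp
qed

locale mainA =
  fixes r d :: nat and A :: "int \<Rightarrow> int \<Rightarrow> nat"
  assumes r1: "r \<ge> 1" and d1: "d \<ge> 1" and APi: "A \<in> Pi_i r d"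
begin

lemma A_sym: "i \<in> Ir r \<Longrightarrow> j \<in> Ir r \<Longrightarrow> A (- i) (- j) = A i j"
proof -
  assume ij: "i \<in> Ir r" "j \<in> Ir r"
  have "\<forall>i\<in>Ir r. \<forall>j\<in>Ir r. A i j = A (- i) (- j)" using APi unfolding Pi_i_def by blast
  then have "A i j = A (- i) (- j)" using ij by blast
  then show ?thesis by (rule sym)
qed

lemma A_tot: "(\<Sum>(i,j)\<in>Ir r \<times> Ir r. A i j) = 2 * d"
  using APi unfolding Pi_i_def by simp

lemma ro_sym: "i \<in> Ir r \<Longrightarrow> ro r A (- i) = ro r A i"
proof -
  assume i: "i \<in> Ir r"
  have "ro r A (- i) = (\<Sum>j\<in>Ir r. A (- i) (- j))" unfolding ro_def by (rule sum_Ir_neg[symmetric])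
  also have "\<dots> = ro r A i" unfolding ro_def using A_sym i by simp
  finally show ?thesis .
qed

lemma co_sym: "j \<in> Ir r \<Longrightarrow> co r A (- j) = co r A j"
proof -
  assume j: "j \<in> Ir r"
  have "co r A (- j) = (\<Sum>i\<in>Ir r. A (- i) (- j))" unfolding co_def by (rule sum_Ir_neg[symmetric])
  also have "\<dots> = co r A j" unfolding co_def using A_sym j by simp
  finally show ?thesis .
qed

lemma ro_tot: "(\<Sum>i\<in>Ir r. ro r A i) = 2 * d"
  using A_tot unfolding ro_def by (simp only: sum.cartesian_product)

lemma co_tot: "(\<Sum>j\<in>Ir r. co r A j) = 2 * d"
  using A_tot unfolding co_def by (subst sum.swap) (simp add: sum.cartesian_product)

lemma half_tot:
  assumes "\<And>i. i \<in> Ir r \<Longrightarrow> f (- i) = f i" "(\<Sum>i\<in>Ir r. f i) = 2 * d"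
  shows "cum f r = d"
proof -
  have "(\<Sum>k\<in>{1..r}. f (- int k)) = (\<Sum>k\<in>{1..r}. f (int k))"
    using assms(1) by (intro sum.cong) (auto simp: Ir_iff)
  then show ?thesis using assms(2) Ir_split[of f r] unfolding cum_def by simp
qed

sublocale rb: blocks r d "ro r A"
  by unfold_locales (rule half_tot[OF ro_sym ro_tot])

sublocale cb: blocks r d "co r A"
  by unfold_locales (rule half_tot[OF co_sym co_tot])

abbreviation "Sg \<equiv> signedset d"
abbreviation "Rr \<equiv> Rblk (ro r A)"
abbreviation "Rc \<equiv> Rblk (co r A)"
abbreviation "br \<equiv> rb.blk"
abbreviation "bc \<equiv> cb.blk"

definition mat :: "(int \<Rightarrow> int) \<Rightarrow> bool" where
  "mat x \<longleftrightarrow> (\<forall>i\<in>Ir r. \<forall>j\<in>Ir r. card {s \<in> Rc j. x s \<in> Rr i} = A i j)"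

definition cell :: "(int \<Rightarrow> int) \<Rightarrow> int \<Rightarrow> int \<times> int" where
  "cell x s = (br (x s), bc s)"

lemma cell_in: "s \<in> Sg \<Longrightarrow> x s \<in> Sg \<Longrightarrow> cell x s \<in> Ir r \<times> Ir r"
  unfolding cell_def using rb.blk_in cb.blk_in by auto

lemma cell_fiber:
  assumes "x ` Sg \<subseteq> Sg" "i \<in> Ir r" "j \<in> Ir r"
  shows "{s \<in> Sg. cell x s = (i, j)} = {s \<in> Rc j. x s \<in> Rr i}"
proof -
  have "s \<in> Sg \<and> cell x s = (i, j) \<longleftrightarrow> s \<in> Rc j \<and> x s \<in> Rr i" for s
  proof
    assume a: "s \<in> Sg \<and> cell x s = (i, j)"
    then have "x s \<in> Sg" using assms(1) by blast
    then show "s \<in> Rc j \<and> x s \<in> Rr i" using a cb.blk_in[of s] rb.blk_in[of "x s"]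
      unfolding cell_def by auto
  next
    assume a: "s \<in> Rc j \<and> x s \<in> Rr i"
    then show "s \<in> Sg \<and> cell x s = (i, j)" using cb.Rblk_blk[OF assms(3)] rb.Rblk_blk[OF assms(2)]
      unfolding cell_def by auto
  qed
  then show ?thesis by blast
qed

lemma cell_count:
  assumes "x ` Sg \<subseteq> Sg" "mat x" "F \<subseteq> Ir r \<times> Ir r"
  shows "card {s \<in> Sg. cell x s \<in> F} = (\<Sum>(i,j)\<in>F. A i j)"
proof -
  have finF: "finite F" using assms(3) by (rule finite_subset) simp
  have "{s \<in> Sg. cell x s \<in> F} = (\<Union>c\<in>F. {s \<in> Sg. cell x s = c})" by auto
  moreover have "card (\<Union>c\<in>F. {s \<in> Sg. cell x s = c}) = (\<Sum>c\<in>F. card {s \<in> Sg. cell x s = c})"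
    by (rule card_UN_disjoint[OF finF]) auto
  ultimately have "card {s \<in> Sg. cell x s \<in> F} = (\<Sum>c\<in>F. card {s \<in> Sg. cell x s = c})"
    by simp
  also have "\<dots> = (\<Sum>(i,j)\<in>F. A i j)"
  proof (rule sum.cong)
    fix c assume "c \<in> F"
    then obtain i j where c: "c = (i, j)" "i \<in> Ir r" "j \<in> Ir r" using assms(3) by blast
    then show "card {s \<in> Sg. cell x s = c} = (case c of (i, j) \<Rightarrow> A i j)"
      using cell_fiber[OF assms(1) c(2,3)] assms(2) unfolding mat_def by simp
  qed simp
  finally show ?thesis .
qed

lemma pair_count:
  assumes "x ` Sg \<subseteq> Sg" "mat x" "J \<subseteq> (Ir r \<times> Ir r) \<times> (Ir r \<times> Ir r)"
  shows "card {(p, q). p \<in> Sg \<and> q \<in> Sg \<and> (cell x p, cell x q) \<in> J} =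
    (\<Sum>(c1, c2)\<in>J. (case c1 of (i, j) \<Rightarrow> A i j) * (case c2 of (i, j) \<Rightarrow> A i j))"
proof -
  have finJ: "finite J" using assms(3) by (rule finite_subset) simp
  have "{(p, q). p \<in> Sg \<and> q \<in> Sg \<and> (cell x p, cell x q) \<in> J} =
    (\<Union>cc\<in>J. {s \<in> Sg. cell x s = fst cc} \<times> {s \<in> Sg. cell x s = snd cc})" by auto
  moreover have "card (\<Union>cc\<in>J. {s \<in> Sg. cell x s = fst cc} \<times> {s \<in> Sg. cell x s = snd cc}) =
    (\<Sum>cc\<in>J. card ({s \<in> Sg. cell x s = fst cc} \<times> {s \<in> Sg. cell x s = snd cc}))"
  proof (rule card_UN_disjoint[OF finJ])
    show "\<forall>cc\<in>J. finite ({s \<in> Sg. cell x s = fst cc} \<times> {s \<in> Sg. cell x s = snd cc})" by simp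
    show "\<forall>cc1\<in>J. \<forall>cc2\<in>J. cc1 \<noteq> cc2 \<longrightarrow>
      ({s \<in> Sg. cell x s = fst cc1} \<times> {s \<in> Sg. cell x s = snd cc1}) \<inter>
      ({s \<in> Sg. cell x s = fst cc2} \<times> {s \<in> Sg. cell x s = snd cc2}) = {}"
    proof (intro ballI impI)
      fix cc1 cc2 :: "(int \<times> int) \<times> (int \<times> int)" assume "cc1 \<noteq> cc2"
      then have "fst cc1 \<noteq> fst cc2 \<or> snd cc1 \<noteq> snd cc2" by (simp add: prod_eq_iff)
      then show "({s \<in> Sg. cell x s = fst cc1} \<times> {s \<in> Sg. cell x s = snd cc1}) \<inter>
        ({s \<in> Sg. cell x s = fst cc2} \<times> {s \<in> Sg. cell x s = snd cc2}) = {}" by auto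
    qed
  qed
  ultimately have "card {(p, q). p \<in> Sg \<and> q \<in> Sg \<and> (cell x p, cell x q) \<in> J} =
    (\<Sum>cc\<in>J. card ({s \<in> Sg. cell x s = fst cc} \<times> {s \<in> Sg. cell x s = snd cc}))"
    by simp
  also have "\<dots> = (\<Sum>(c1, c2)\<in>J. (case c1 of (i, j) \<Rightarrow> A i j) * (case c2 of (i, j) \<Rightarrow> A i j))"
  proof (rule sum.cong)
    fix cc assume "cc \<in> J"
    then obtain i1 j1 i2 j2 where c: "cc = ((i1, j1), (i2, j2))" "i1 \<in> Ir r" "j1 \<in> Ir r"
      "i2 \<in> Ir r" "j2 \<in> Ir r" using assms(3) by force
    show "card ({s \<in> Sg. cell x s = fst cc} \<times> {s \<in> Sg. cell x s = snd cc}) =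
      (case cc of (c1, c2) \<Rightarrow> (case c1 of (i, j) \<Rightarrow> A i j) * (case c2 of (i, j) \<Rightarrow> A i j))"
      using cell_fiber[OF assms(1) c(2,3)] cell_fiber[OF assms(1) c(4,5)] assms(2) c
      unfolding mat_def by (simp add: card_cartesian_product)
  qed simp
  finally show ?thesis .
qed

end


lemma tp_range: "s \<in> signedset d \<Longrightarrow> 1 \<le> to_pos d s \<and> to_pos d s \<le> 2 * d"
  unfolding to_pos_def signedset_iff by auto

lemma fp_range: "1 \<le> t \<Longrightarrow> t \<le> 2 * d \<Longrightarrow> from_pos d t \<in> signedset d"
  unfolding from_pos_def signedset_iff by auto

lemma fp_tp: "s \<in> signedset d \<Longrightarrow> from_pos d (to_pos d s) = s"
  unfolding to_pos_def from_pos_def signedset_iff by auto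

lemma tp_fp: "1 \<le> t \<Longrightarrow> t \<le> 2 * d \<Longrightarrow> to_pos d (from_pos d t) = t"
  unfolding to_pos_def from_pos_def by auto

lemma tp_less: "s1 \<in> signedset d \<Longrightarrow> s2 \<in> signedset d \<Longrightarrow> to_pos d s1 < to_pos d s2 \<longleftrightarrow> s1 < s2"
  unfolding to_pos_def signedset_iff by auto

lemma tp_inj: "s1 \<in> signedset d \<Longrightarrow> s2 \<in> signedset d \<Longrightarrow> to_pos d s1 = to_pos d s2 \<longleftrightarrow> s1 = s2"
  unfolding to_pos_def signedset_iff by auto

lemma word_length: "length (word_of d w) = 2 * d"
  unfolding word_of_def by simp

lemma word_nth: "p < 2 * d \<Longrightarrow> word_of d w ! p = to_pos d (w (from_pos d (Suc p)))"
  unfolding word_of_def by (simp del: upt_Suc)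

context mainA
begin

definition p3 :: "(int \<Rightarrow> int) \<Rightarrow> bool" where
  "p3 x \<longleftrightarrow> (\<forall>s1\<in>Sg. \<forall>s2\<in>Sg. s1 < s2 \<and> (bc s1 = bc s2 \<or> br (x s1) = br (x s2)) \<longrightarrow> x s2 < x s1)"

definition wdec :: "(int \<Rightarrow> int) \<Rightarrow> int set \<Rightarrow> bool" where
  "wdec w S \<longleftrightarrow> S \<subseteq> Sg \<and> (\<forall>s1\<in>S. \<forall>s2\<in>S. s1 < s2 \<longrightarrow> w s2 < w s1)"

lemma chain_sub: "is_chain C \<Longrightarrow> D \<subseteq> C \<Longrightarrow> is_chain D"
  unfolding is_chain_def by blast

definition SF :: "nat \<Rightarrow> nat set" where
  "SF k = {(\<Sum>(i,j)\<in>F. A i j) | F. \<exists>C :: nat \<Rightarrow> (int \<times> int) set.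
      (\<forall>l<k. C l \<subseteq> Ir r \<times> Ir r \<and> is_chain (C l)) \<and>
      (\<forall>l<k. \<forall>m<k. l \<noteq> m \<longrightarrow> C l \<inter> C m = {}) \<and>
      F = (\<Union>l<k. C l)}"

lemma sfrak_SF: "sfrak r A k = Max (SF k)"
  unfolding sfrak_def SF_def by simp

lemma SF_finite: "finite (SF k)"
proof -
  have "SF k \<subseteq> (\<lambda>F. \<Sum>(i,j)\<in>F. A i j) ` Pow (Ir r \<times> Ir r)"
    unfolding SF_def by blast
  then show ?thesis by (rule finite_subset) simp
qed

lemma SF_ne: "SF k \<noteq> {}"
proof -
  define C :: "nat \<Rightarrow> (int \<times> int) set" where "C = (\<lambda>_. {})"
  have P: "(\<forall>l<k. C l \<subseteq> Ir r \<times> Ir r \<and> is_chain (C l)) \<and>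
      (\<forall>l<k. \<forall>m<k. l \<noteq> m \<longrightarrow> C l \<inter> C m = {}) \<and> {} = (\<Union>l<k. C l)"
    unfolding C_def by (simp add: is_chain_def)
  have "(\<Sum>(i,j)\<in>{}. A i j) \<in> SF k" unfolding SF_def using P by blast
  then show ?thesis by blast
qed

lemma sfrak_ge:
  assumes "\<forall>l<k. C l \<subseteq> Ir r \<times> Ir r \<and> is_chain (C l)" "\<forall>l<k. \<forall>m<k. l \<noteq> m \<longrightarrow> C l \<inter> C m = {}"
  shows "(\<Sum>(i,j)\<in>(\<Union>l<k. C l). A i j) \<le> sfrak r A k"
proof -
  have "(\<Sum>(i,j)\<in>(\<Union>l<k. C l). A i j) \<in> SF k" unfolding SF_def using assms by blast
  then show ?thesis unfolding sfrak_SF using SF_finite by (rule Max_ge[rotated])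
qed

lemma sfrak_obtain:
  obtains C where "\<forall>l<k. C l \<subseteq> Ir r \<times> Ir r \<and> is_chain (C l)" "\<forall>l<k. \<forall>m<k. l \<noteq> m \<longrightarrow> C l \<inter> C m = {}"
    "sfrak r A k = (\<Sum>(i,j)\<in>(\<Union>l<k. C l). A i j)"
proof -
  have "sfrak r A k \<in> SF k" unfolding sfrak_SF using SF_finite SF_ne by (rule Max_in)
  then show ?thesis unfolding SF_def using that by blast
qed

lemma greene_word:
  assumes bij: "bij_betw w Sg Sg" and p3: "p3 w" and mat: "mat w"
  shows "greene (word_of d w) k = sfrak r A k"
proof -
  define xs where "xs = word_of d w"
  define g where "g s = to_pos d (w s)" for s
  have wS: "w s \<in> Sg" if "s \<in> Sg" for s by (rule bij_betw_apply[OF bij that])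
  have winj: "w s1 = w s2 \<longleftrightarrow> s1 = s2" if "s1 \<in> Sg" "s2 \<in> Sg" for s1 s2
    using bij that unfolding bij_betw_def inj_on_def by metis
  have wimg: "w ` Sg \<subseteq> Sg" using wS by blast
  have ginj: "inj_on g Sg" unfolding inj_on_def g_def
  proof (intro ballI impI)
    fix s1 s2 assume "s1 \<in> Sg" "s2 \<in> Sg" "to_pos d (w s1) = to_pos d (w s2)"
    then show "s1 = s2" using tp_inj[OF wS wS] winj by blast
  qed
  have gless: "g s1 < g s2 \<longleftrightarrow> w s1 < w s2" if "s1 \<in> Sg" "s2 \<in> Sg" for s1 s2
    unfolding g_def using tp_less[OF wS[OF that(1)] wS[OF that(2)]] .
  have xnth: "xs ! p = g (from_pos d (Suc p))" if "p < 2 * d" for p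
    unfolding xs_def g_def using word_nth that by blast
  have xlen: "length xs = 2 * d" unfolding xs_def by (rule word_length)
  have gpos: "xs ! (to_pos d s - 1) = g s" if "s \<in> Sg" for s
  proof -
    have t: "to_pos d s - 1 < 2 * d" "Suc (to_pos d s - 1) = to_pos d s" using tp_range[OF that] by linarith+
    show ?thesis using xnth[OF t(1)] t(2) fp_tp[OF that] by simp
  qed
  have setxs: "set xs = g ` Sg"
  proof
    show "set xs \<subseteq> g ` Sg"
    proof
      fix e assume "e \<in> set xs"
      then obtain p where "p < length xs" "xs ! p = e" by (auto simp: in_set_conv_nth)
      then show "e \<in> g ` Sg" using xnth xlen fp_range[of "Suc p" d] by auto
    qed
    show "g ` Sg \<subseteq> set xs"
    proof
      fix e assume "e \<in> g ` Sg"
      then obtain s where s: "s \<in> Sg" "e = g s" by blast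
      have "to_pos d s - 1 < length xs" using tp_range[OF s(1)] xlen by linarith
      then show "e \<in> set xs" using gpos[OF s(1)] s(2) by (metis nth_mem)
    qed
  qed
  have precg: "prec xs (g s1) (g s2) \<longleftrightarrow> s1 < s2" if "s1 \<in> Sg" "s2 \<in> Sg" for s1 s2
  proof
    assume "prec xs (g s1) (g s2)"
    then obtain i j where ij: "i < j" "j < length xs" "xs ! i = g s1" "xs ! j = g s2"
      unfolding prec_def by blast
    have fi: "from_pos d (Suc i) \<in> Sg" "from_pos d (Suc j) \<in> Sg"
      using ij xlen fp_range by auto
    have "g (from_pos d (Suc i)) = g s1" "g (from_pos d (Suc j)) = g s2"
      using ij xnth xlen by auto
    then have "from_pos d (Suc i) = s1" "from_pos d (Suc j) = s2"
      using ginj fi that unfolding inj_on_def by blast+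
    moreover have "from_pos d (Suc i) < from_pos d (Suc j)"
      using ij unfolding from_pos_def by auto
    ultimately show "s1 < s2" by simp
  next
    assume "s1 < s2"
    then have "to_pos d s1 - 1 < to_pos d s2 - 1" using tp_less[OF that] tp_range[OF that(1)] by (simp add: less_diff_iff)
    moreover have "to_pos d s2 - 1 < length xs" using tp_range[OF that(2)] xlen by linarith
    ultimately show "prec xs (g s1) (g s2)" unfolding prec_def using gpos that by metis
  qed
  have dec_iff: "dec xs (g ` S) \<longleftrightarrow> wdec w S" if "S \<subseteq> Sg" for S
  proof
    assume D: "dec xs (g ` S)"
    show "wdec w S" unfolding wdec_def
    proof (intro conjI ballI impI)
      show "S \<subseteq> Sg" by fact
      fix s1 s2 assume s: "s1 \<in> S" "s2 \<in> S" "s1 < s2"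
      have in12: "s1 \<in> Sg" "s2 \<in> Sg" using s that by auto
      show "w s2 < w s1"
      proof (rule ccontr)
        assume "\<not> w s2 < w s1"
        moreover have "w s1 \<noteq> w s2" using winj in12 s(3) by simp
        ultimately have "g s1 < g s2" using gless in12 by simp
        then have "prec xs (g s2) (g s1)" using D s unfolding dec_def by blast
        then show False using precg in12 s(3) by simp
      qed
    qed
  next
    assume W: "wdec w S"
    show "dec xs (g ` S)" unfolding dec_def
    proof (intro conjI ballI impI)
      show "g ` S \<subseteq> set xs" using setxs that by auto
      fix a b assume ab: "a \<in> g ` S" "b \<in> g ` S" "a < b"
      then obtain sa sb where s: "sa \<in> S" "sb \<in> S" "a = g sa" "b = g sb" by blast
      have in12: "sa \<in> Sg" "sb \<in> Sg" using s that by auto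
      have "w sa < w sb" using gless in12 ab s by simp
      have "sb < sa"
      proof (rule ccontr)
        assume "\<not> sb < sa"
        then consider "sa < sb" | "sa = sb" by linarith
        then show False
        proof cases
          case 1
          then have "w sb < w sa" using W s(1,2) unfolding wdec_def by blast
          then show False using \<open>w sa < w sb\<close> by simp
        next
          case 2
          then show False using \<open>w sa < w sb\<close> by simp
        qed
      qed
      then show "prec xs b a" using precg in12 s by simp
    qed
  qed
  have cardg: "card (g ` S) = card S" if "S \<subseteq> Sg" for S
    using card_image[OF inj_on_subset[OF ginj that]] .
  show ?thesis
  proof (rule antisym)
    obtain C where C: "fam xs k C" "card (\<Union>l<k. C l) = greene xs k" using greene_obtain by blast
    define S where "S l = {s \<in> Sg. g s \<in> C l}" for l
    have CS: "C l = g ` S l" if "l < k" for l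
    proof -
      have "C l \<subseteq> set xs" using C(1) that unfolding fam_def dec_def by blast
      then show ?thesis unfolding S_def using setxs by auto
    qed
    have wS': "wdec w (S l)" if "l < k" for l
      using dec_iff[of "S l"] C(1) CS that unfolding fam_def S_def by auto
    define D where "D l = cell w ` S l" for l
    have Dch: "D l \<subseteq> Ir r \<times> Ir r \<and> is_chain (D l)" if "l < k" for l
    proof
      show "D l \<subseteq> Ir r \<times> Ir r" unfolding D_def S_def using cell_in wS by blast
      show "is_chain (D l)" unfolding is_chain_def D_def
      proof (intro ballI)
        fix c1 c2 assume "c1 \<in> cell w ` S l" "c2 \<in> cell w ` S l"
        then obtain s1 s2 where s: "s1 \<in> S l" "s2 \<in> S l" "c1 = cell w s1" "c2 = cell w s2" by blast
        have in12: "s1 \<in> Sg" "s2 \<in> Sg" using s unfolding S_def by auto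
        have cmp: "ple (cell w a) (cell w b)" if "a \<in> S l" "b \<in> S l" "a \<le> b" for a b
        proof (cases "a = b")
          case True
          then show ?thesis unfolding ple_def by simp
        next
          case False
          then have "a < b" using that by simp
          then have "w b < w a" using wS'[OF \<open>l < k\<close>] that unfolding wdec_def by blast
          moreover have "a \<in> Sg" "b \<in> Sg" using that unfolding S_def by auto
          ultimately show ?thesis unfolding ple_def cell_def
            using rb.blk_mono[of "w b" "w a"] cb.blk_mono[of a b] wS \<open>a < b\<close> by simp
        qed
        show "ple c1 c2 \<or> ple c2 c1"
        proof (cases "s1 \<le> s2")
          case True then show ?thesis using cmp s by blast
        next
          case False then show ?thesis using cmp[of s2 s1] s by simp
        qed
      qed
    qed
    define E where "E l = D l - (\<Union>m<l. D m)" for l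
    have Ech: "\<forall>l<k. E l \<subseteq> Ir r \<times> Ir r \<and> is_chain (E l)"
      using Dch chain_sub unfolding E_def by blast
    have Edj: "\<forall>l<k. \<forall>m<k. l \<noteq> m \<longrightarrow> E l \<inter> E m = {}"
      unfolding E_def by (auto, metis lessThan_iff linorder_neqE_nat)
    have EU: "(\<Union>l<k. E l) = (\<Union>l<k. D l)"
    proof
      show "(\<Union>l<k. E l) \<subseteq> (\<Union>l<k. D l)" unfolding E_def by auto
      show "(\<Union>l<k. D l) \<subseteq> (\<Union>l<k. E l)"
      proof
        fix x assume "x \<in> (\<Union>l<k. D l)"
        then have "\<exists>l<k. x \<in> D l" by auto
        define l where "l = (LEAST l. l < k \<and> x \<in> D l)"
        have l: "l < k \<and> x \<in> D l" unfolding l_def by (rule LeastI_ex) fact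
        have "\<And>m. m < l \<Longrightarrow> x \<notin> D m" using l unfolding l_def
          by (metis (mono_tags, lifting) not_less_Least order.strict_trans)
        then show "x \<in> (\<Union>l<k. E l)" using l unfolding E_def by auto
      qed
    qed
    have "greene xs k = card (\<Union>l<k. C l)" using C(2) by simp
    also have "(\<Union>l<k. C l) = g ` (\<Union>l<k. S l)" using CS by auto
    also have "card (g ` (\<Union>l<k. S l)) = card (\<Union>l<k. S l)" by (rule cardg) (auto simp: S_def)
    also have "\<dots> \<le> card {s \<in> Sg. cell w s \<in> (\<Union>l<k. D l)}"
      by (rule card_mono) (auto simp: S_def D_def)
    also have "\<dots> = (\<Sum>(i,j)\<in>(\<Union>l<k. E l). A i j)"
      using cell_count[OF wimg mat, of "\<Union>l<k. E l"] EU Ech by auto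
    also have "\<dots> \<le> sfrak r A k" by (rule sfrak_ge[OF Ech Edj])
    finally show "greene (word_of d w) k \<le> sfrak r A k" unfolding xs_def .
  next
    obtain C where C: "\<forall>l<k. C l \<subseteq> Ir r \<times> Ir r \<and> is_chain (C l)"
      "\<forall>l<k. \<forall>m<k. l \<noteq> m \<longrightarrow> C l \<inter> C m = {}" "sfrak r A k = (\<Sum>(i,j)\<in>(\<Union>l<k. C l). A i j)"
      by (rule sfrak_obtain)
    define S where "S l = {s \<in> Sg. cell w s \<in> C l}" for l
    have wdS: "wdec w (S l)" if "l < k" for l
      unfolding wdec_def
    proof (intro conjI ballI impI)
      show "S l \<subseteq> Sg" unfolding S_def by auto
      fix s1 s2 assume s: "s1 \<in> S l" "s2 \<in> S l" "s1 < s2"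
      have in12: "s1 \<in> Sg" "s2 \<in> Sg" using s unfolding S_def by auto
      have ch: "ple (cell w s1) (cell w s2) \<or> ple (cell w s2) (cell w s1)"
        using C(1) that s unfolding S_def is_chain_def by blast
      have bcle: "bc s1 \<le> bc s2" using cb.blk_mono in12 s(3) by simp
      show "w s2 < w s1"
      proof (cases "br (w s2) < br (w s1)")
        case True
        then show ?thesis using rb.blk_less wS in12 by blast
      next
        case False
        then have "br (w s1) \<le> br (w s2)" by simp
        then have "br (w s1) = br (w s2) \<or> bc s1 = bc s2"
          using ch bcle unfolding ple_def cell_def by auto
        then show ?thesis using p3 in12 s(3) unfolding p3_def by blast
      qed
    qed
    define G where "G l = g ` S l" for l
    have fG: "fam xs k G" unfolding fam_def G_def
      using dec_iff wdS unfolding S_def by auto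
    have sub: "(\<Union>l<k. C l) \<subseteq> Ir r \<times> Ir r" using C(1) by blast
    have "sfrak r A k = card {s \<in> Sg. cell w s \<in> (\<Union>l<k. C l)}"
      using C(3) cell_count[OF wimg mat sub] by simp
    also have "{s \<in> Sg. cell w s \<in> (\<Union>l<k. C l)} = (\<Union>l<k. S l)" unfolding S_def by auto
    also have "card (\<Union>l<k. S l) = card (g ` (\<Union>l<k. S l))" by (rule cardg[symmetric]) (auto simp: S_def)
    also have "g ` (\<Union>l<k. S l) = (\<Union>l<k. G l)" unfolding G_def by auto
    also have "card (\<Union>l<k. G l) \<le> greene xs k" by (rule greene_ge[OF fG])
    finally show "sfrak r A k \<le> greene (word_of d w) k" unfolding xs_def .
  qed
qed

end


definition swap2 :: "int \<Rightarrow> int \<Rightarrow> int \<Rightarrow> int" where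
  "swap2 a b x = (if x = a then b else if x = b then a else if x = - a then - b else if x = - b then - a else x)"

lemma WC_bij: "x \<in> W_C d \<Longrightarrow> bij_betw x (signedset d) (signedset d)"
  unfolding W_C_def by blast

lemma WC_odd: "x \<in> W_C d \<Longrightarrow> s \<in> signedset d \<Longrightarrow> x (- s) = - x s"
  unfolding W_C_def by blast

lemma WC_out: "x \<in> W_C d \<Longrightarrow> s \<notin> signedset d \<Longrightarrow> x s = s"
  unfolding W_C_def by blast

lemma WC_in: "x \<in> W_C d \<Longrightarrow> s \<in> signedset d \<Longrightarrow> x s \<in> signedset d"
  by (rule bij_betw_apply[OF WC_bij])

lemma WC_inj: "x \<in> W_C d \<Longrightarrow> s \<in> signedset d \<Longrightarrow> t \<in> signedset d \<Longrightarrow> x s = x t \<longleftrightarrow> s = t"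
  using WC_bij unfolding bij_betw_def inj_on_def by metis

lemma WC_surj: "x \<in> W_C d \<Longrightarrow> a \<in> signedset d \<Longrightarrow> \<exists>s\<in>signedset d. x s = a"
  using WC_bij unfolding bij_betw_def by (metis imageE)

lemma WC_comp: "x \<in> W_C d \<Longrightarrow> y \<in> W_C d \<Longrightarrow> x \<circ> y \<in> W_C d"
  unfolding W_C_def by (auto intro: bij_betw_trans)

lemma WC_id: "id \<in> W_C d"
  unfolding W_C_def by simp

lemma Wpar_comp: "x \<in> W_par r d lam \<Longrightarrow> y \<in> W_par r d lam \<Longrightarrow> x \<circ> y \<in> W_par r d lam"
proof -
  assume x: "x \<in> W_par r d lam" and y: "y \<in> W_par r d lam"
  have "x \<in> W_C d" "y \<in> W_C d" using x y unfolding W_par_def by auto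
  then have "x \<circ> y \<in> W_C d" by (rule WC_comp)
  moreover have "(x \<circ> y) ` Rblk lam i = Rblk lam i" if "i \<in> Ir r" for i
  proof -
    have "(x \<circ> y) ` Rblk lam i = x ` (y ` Rblk lam i)" by (simp add: image_comp)
    then show ?thesis using x y that unfolding W_par_def by simp
  qed
  ultimately show ?thesis unfolding W_par_def by blast
qed

lemma Wpar_id: "id \<in> W_par r d lam"
  unfolding W_par_def using WC_id by simp

lemma swap2_invol:
  assumes "a \<noteq> 0" "b \<noteq> 0" shows "swap2 a b (swap2 a b x) = x"
proof -
  have "a \<noteq> - a" "b \<noteq> - b" using assms by auto
  then show ?thesis unfolding swap2_def by auto
qed

lemma swap2_odd:
  assumes "a \<noteq> 0" "b \<noteq> 0" shows "swap2 a b (- x) = - swap2 a b x"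
proof -
  have "a \<noteq> - a" "b \<noteq> - b" using assms by auto
  then show ?thesis unfolding swap2_def
    by (cases "x = a"; cases "x = b"; cases "x = - a"; cases "x = - b") auto
qed

context blocks
begin

lemma Wpar_mem:
  assumes "u \<in> W_par r d lam" "i \<in> Ir r" "z \<in> signedset d"
  shows "u z \<in> Rblk lam i \<longleftrightarrow> z \<in> Rblk lam i"
proof
  assume "z \<in> Rblk lam i"
  then show "u z \<in> Rblk lam i" using assms unfolding W_par_def by blast
next
  assume "u z \<in> Rblk lam i"
  then have "u z \<in> u ` Rblk lam i" using assms unfolding W_par_def by blast
  then obtain z' where z': "z' \<in> Rblk lam i" "u z = u z'" by blast
  have uW: "u \<in> W_C d" using assms unfolding W_par_def by blast
  have "z' \<in> signedset d" using Rblk_sub[OF assms(2)] z'(1) by blast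
  then have "z = z'" using WC_inj[OF uW assms(3)] z'(2) by blast
  then show "z \<in> Rblk lam i" using z' by simp
qed

lemma blk_neq_neg: "x \<in> signedset d \<Longrightarrow> blk (- x) \<noteq> blk x"
  using blk_uminus blk_in[of x] by (auto simp: Ir_iff)

lemma swap2_Wpar:
  assumes i: "i \<in> Ir r" and a: "a \<in> Rblk lam i" and b: "b \<in> Rblk lam i"
  shows "swap2 a b \<in> W_par r d lam"
proof -
  have aS: "a \<in> signedset d" "blk a = i" and bS: "b \<in> signedset d" "blk b = i"
    using Rblk_blk[OF i a] Rblk_blk[OF i b] by auto
  have a0: "a \<noteq> 0" "b \<noteq> 0" using aS bS by (auto simp: signedset_iff)
  have into: "swap2 a b x \<in> signedset d" if "x \<in> signedset d" for x
    using that aS bS unfolding swap2_def by auto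
  have bij: "bij_betw (swap2 a b) (signedset d) (signedset d)"
  proof (rule bij_betw_byWitness[where f' = "swap2 a b"])
    show "\<forall>x\<in>signedset d. swap2 a b (swap2 a b x) = x" by (simp add: swap2_invol[OF a0])
    show "\<forall>x\<in>signedset d. swap2 a b (swap2 a b x) = x" by (simp add: swap2_invol[OF a0])
    show "swap2 a b ` signedset d \<subseteq> signedset d" using into by blast
    show "swap2 a b ` signedset d \<subseteq> signedset d" using into by blast
  qed
  have out: "swap2 a b x = x" if "x \<notin> signedset d" for x
    using that aS bS unfolding swap2_def by auto
  have WC: "swap2 a b \<in> W_C d" unfolding W_C_def using bij swap2_odd[OF a0] out by blast
  have pres: "swap2 a b x \<in> Rblk lam j" if j: "j \<in> Ir r" and x: "x \<in> Rblk lam j" for j x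
  proof -
    have xS: "x \<in> signedset d" "blk x = j" using Rblk_blk[OF j x] by auto
    have "swap2 a b x \<in> signedset d \<and> blk (swap2 a b x) = j"
    proof -
      consider "x = a" | "x \<noteq> a" "x = b" | "x \<noteq> a" "x \<noteq> b" "x = - a" | "x \<noteq> a" "x \<noteq> b" "x \<noteq> - a" "x = - b"
        | "x \<noteq> a" "x \<noteq> b" "x \<noteq> - a" "x \<noteq> - b" by blast
      then show ?thesis
      proof cases
        case 1 then show ?thesis using xS aS bS by (simp add: swap2_def)
      next
        case 2 then show ?thesis using xS aS bS by (simp add: swap2_def)
      next
        case 3 then show ?thesis using xS aS bS blk_uminus by (simp add: swap2_def)
      next
        case 4 then show ?thesis using xS aS bS blk_uminus by (simp add: swap2_def)
      next
        case 5 then show ?thesis using xS by (simp add: swap2_def)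
      qed
    qed
    then show ?thesis using blk_in by metis
  qed
  have "swap2 a b ` Rblk lam j = Rblk lam j" if "j \<in> Ir r" for j
  proof
    show "swap2 a b ` Rblk lam j \<subseteq> Rblk lam j" using pres that by blast
    show "Rblk lam j \<subseteq> swap2 a b ` Rblk lam j"
    proof
      fix x assume "x \<in> Rblk lam j"
      then have "swap2 a b x \<in> Rblk lam j" using pres that by blast
      then show "x \<in> swap2 a b ` Rblk lam j" using swap2_invol[OF a0] by (metis image_eqI)
    qed
  qed
  then show ?thesis unfolding W_par_def using WC by blast
qed

end

context mainA
begin

abbreviation "Wr \<equiv> W_par r d (ro r A)"
abbreviation "Wc \<equiv> W_par r d (co r A)"
abbreviation "D y \<equiv> dcoset r d (ro r A) y (co r A)"

lemma D_iff: "x \<in> D y \<longleftrightarrow> (\<exists>u\<in>Wr. \<exists>v\<in>Wc. x = u \<circ> y \<circ> v)"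
  unfolding dcoset_def by blast

lemma D_self: "y \<in> D y"
  unfolding D_iff by (rule bexI[of _ id], rule bexI[of _ id]) (auto simp: Wpar_id)

lemma D_WC: "y \<in> W_C d \<Longrightarrow> x \<in> D y \<Longrightarrow> x \<in> W_C d"
proof -
  assume y: "y \<in> W_C d" and "x \<in> D y"
  then obtain u v where uv: "u \<in> Wr" "v \<in> Wc" "x = u \<circ> y \<circ> v" unfolding D_iff by blast
  have "u \<in> W_C d" "v \<in> W_C d" using uv unfolding W_par_def by auto
  then show ?thesis using uv(3) y WC_comp by metis
qed

lemma D_left: "x \<in> D y \<Longrightarrow> t \<in> Wr \<Longrightarrow> t \<circ> x \<in> D y"
proof -
  assume "x \<in> D y" "t \<in> Wr"
  then obtain u v where uv: "u \<in> Wr" "v \<in> Wc" "x = u \<circ> y \<circ> v" unfolding D_iff by blast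
  have "t \<circ> x = (t \<circ> u) \<circ> y \<circ> v" using uv(3) by (simp add: comp_assoc)
  moreover have "t \<circ> u \<in> Wr" by (rule Wpar_comp[OF \<open>t \<in> Wr\<close> uv(1)])
  ultimately show ?thesis unfolding D_iff using uv(2) by blast
qed

lemma D_right: "x \<in> D y \<Longrightarrow> t \<in> Wc \<Longrightarrow> x \<circ> t \<in> D y"
proof -
  assume "x \<in> D y" "t \<in> Wc"
  then obtain u v where uv: "u \<in> Wr" "v \<in> Wc" "x = u \<circ> y \<circ> v" unfolding D_iff by blast
  have "x \<circ> t = u \<circ> y \<circ> (v \<circ> t)" using uv(3) by (simp add: comp_assoc)
  moreover have "v \<circ> t \<in> Wc" by (rule Wpar_comp[OF uv(2) \<open>t \<in> Wc\<close>])
  ultimately show ?thesis unfolding D_iff using uv(1) by blast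
qed

lemma mat_of_card:
  assumes "y \<in> W_C d" "\<forall>i\<in>Ir r. \<forall>j\<in>Ir r. card (Rr i \<inter> y ` Rc j) = A i j"
  shows "mat y"
  unfolding mat_def
proof (intro ballI)
  fix i j assume ij: "i \<in> Ir r" "j \<in> Ir r"
  have "Rr i \<inter> y ` Rc j = y ` {s \<in> Rc j. y s \<in> Rr i}" by auto
  moreover have "inj_on y {s \<in> Rc j. y s \<in> Rr i}"
    using WC_inj[OF assms(1)] cb.Rblk_sub[OF ij(2)] unfolding inj_on_def by blast
  ultimately have "card (Rr i \<inter> y ` Rc j) = card {s \<in> Rc j. y s \<in> Rr i}" by (simp add: card_image)
  then show "card {s \<in> Rc j. y s \<in> Rr i} = A i j" using assms(2) ij by simp
qed

lemma D_mat:
  assumes y: "y \<in> W_C d" "mat y" and x: "x \<in> D y"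
  shows "mat x"
proof -
  obtain u v where uv: "u \<in> Wr" "v \<in> Wc" "x = u \<circ> y \<circ> v" using x unfolding D_iff by blast
  have vW: "v \<in> W_C d" and uW: "u \<in> W_C d" using uv unfolding W_par_def by auto
  show ?thesis unfolding mat_def
  proof (intro ballI)
    fix i j assume ij: "i \<in> Ir r" "j \<in> Ir r"
    define X where "X = {s \<in> Rc j. x s \<in> Rr i}"
    have XS: "X \<subseteq> Sg" unfolding X_def using cb.Rblk_sub[OF ij(2)] by blast
    have "v ` X = {t \<in> Rc j. y t \<in> Rr i}"
    proof
      show "v ` X \<subseteq> {t \<in> Rc j. y t \<in> Rr i}"
      proof
        fix t assume "t \<in> v ` X"
        then obtain s where s: "s \<in> X" "t = v s" by blast
        have sS: "s \<in> Sg" using s XS by blast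
        have "v s \<in> Rc j" using s cb.Wpar_mem[OF uv(2) ij(2) sS] unfolding X_def by blast
        moreover have "y (v s) \<in> Rr i"
          using s rb.Wpar_mem[OF uv(1) ij(1) WC_in[OF y(1) WC_in[OF vW sS]]] uv(3) unfolding X_def by simp
        ultimately show "t \<in> {t \<in> Rc j. y t \<in> Rr i}" using s by simp
      qed
      show "{t \<in> Rc j. y t \<in> Rr i} \<subseteq> v ` X"
      proof
        fix t assume t: "t \<in> {t \<in> Rc j. y t \<in> Rr i}"
        then have "t \<in> v ` Rc j" using uv(2) ij(2) unfolding W_par_def by blast
        then obtain s where s: "s \<in> Rc j" "t = v s" by blast
        have tS: "t \<in> Sg" using t cb.Rblk_sub[OF ij(2)] by blast
        have "u (y t) \<in> Rr i" using t rb.Wpar_mem[OF uv(1) ij(1) WC_in[OF y(1) tS]] by simp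
        then have "s \<in> X" unfolding X_def using s uv(3) by simp
        then show "t \<in> v ` X" using s by blast
      qed
    qed
    moreover have "inj_on v X" using WC_inj[OF vW] XS unfolding inj_on_def by blast
    ultimately have "card X = card {t \<in> Rc j. y t \<in> Rr i}" by (metis card_image)
    then show "card {s \<in> Rc j. x s \<in> Rr i} = A i j" using y(2) ij unfolding mat_def X_def by simp
  qed
qed

definition phi :: "(int \<Rightarrow> int) \<Rightarrow> int" where
  "phi x = (\<Sum>s\<in>Sg. (s + x s)\<^sup>2)"

lemma phi_nonneg: "0 \<le> phi x"
  unfolding phi_def by (intro sum_nonneg) simp

lemma phi_swap:
  assumes x: "x \<in> W_C d" and pq: "p \<in> Sg" "q \<in> Sg" "p < q" "q \<noteq> - p" and lt: "x p < x q"
    and x'1: "x' p = x q" "x' q = x p" "x' (- p) = x (- q)" "x' (- q) = x (- p)"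
    and x'2: "\<And>s. s \<in> Sg \<Longrightarrow> s \<notin> {p, q, - p, - q} \<Longrightarrow> x' s = x s"
  shows "phi x' < phi x"
proof -
  define K where "K = {p, q, - p, - q}"
  have KS: "K \<subseteq> Sg" unfolding K_def using pq by simp
  have p0: "p \<noteq> 0" "q \<noteq> 0" using pq by (auto simp: signedset_iff)
  have dist: "p \<noteq> q" "p \<noteq> - p" "q \<noteq> - q" "- p \<noteq> - q" "p \<noteq> - q" using pq p0 by auto
  have split: "(\<Sum>s\<in>Sg. f s) = (\<Sum>s\<in>Sg - K. f s) + (f p + f q + f (- p) + f (- q))" for f :: "int \<Rightarrow> int"
  proof -
    have "(\<Sum>s\<in>Sg. f s) = (\<Sum>s\<in>Sg - K. f s) + (\<Sum>s\<in>K. f s)"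
      using KS by (metis add.commute finite_signedset sum.subset_diff)
    moreover have "(\<Sum>s\<in>K. f s) = f p + f q + f (- p) + f (- q)"
      unfolding K_def using dist by (simp add: add.assoc)
    ultimately show ?thesis by simp
  qed
  have rest: "(\<Sum>s\<in>Sg - K. (s + x' s)\<^sup>2) = (\<Sum>s\<in>Sg - K. (s + x s)\<^sup>2)"
    using x'2 unfolding K_def by (intro sum.cong) auto
  have oddp: "x (- p) = - x p" and oddq: "x (- q) = - x q" using WC_odd[OF x] pq by auto
  have key: "(p + x q)\<^sup>2 + (q + x p)\<^sup>2 + (- p + - x q)\<^sup>2 + (- q + - x p)\<^sup>2
      - ((p + x p)\<^sup>2 + (q + x q)\<^sup>2 + (- p + - x p)\<^sup>2 + (- q + - x q)\<^sup>2) = 4 * ((p - q) * (x q - x p))"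
    by (simp add: power2_eq_square algebra_simps)
  have neg: "(p - q) * (x q - x p) < 0" using pq(3) lt by (simp add: mult_neg_pos)
  have "phi x' - phi x = 4 * ((p - q) * (x q - x p))"
    unfolding phi_def using split[of "\<lambda>s. (s + x' s)\<^sup>2"] split[of "\<lambda>s. (s + x s)\<^sup>2"] rest x'1 oddp oddq key
    by simp
  then show ?thesis using neg by simp
qed

lemma min_p3:
  assumes y: "y \<in> W_C d" and m: "m \<in> D y" and mmin: "\<And>x. x \<in> D y \<Longrightarrow> phi m \<le> phi x"
  shows "p3 m"
  unfolding p3_def
proof (intro ballI impI)
  fix s1 s2 assume s: "s1 \<in> Sg" "s2 \<in> Sg" "s1 < s2 \<and> (bc s1 = bc s2 \<or> br (m s1) = br (m s2))"
  have mW: "m \<in> W_C d" using D_WC[OF y m] .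
  show "m s2 < m s1"
  proof (rule ccontr)
    assume "\<not> m s2 < m s1"
    moreover have "m s1 \<noteq> m s2" using WC_inj[OF mW s(1,2)] s(3) by simp
    ultimately have lt: "m s1 < m s2" by simp
    consider "bc s1 = bc s2" | "br (m s1) = br (m s2)" using s(3) by blast
    then show False
    proof cases
      case 1
      define j where "j = bc s1"
      have j: "j \<in> Ir r" "s1 \<in> Rc j" "s2 \<in> Rc j" using cb.blk_in s(1,2) 1 unfolding j_def by metis+
      have ns: "s2 \<noteq> - s1" using cb.blk_neq_neg[OF s(1)] 1 by auto
      define t where "t = swap2 s1 s2"
      have tW: "t \<in> Wc" unfolding t_def by (rule cb.swap2_Wpar[OF j])
      have x'D: "m \<circ> t \<in> D y" by (rule D_right[OF m tW])
      have s0: "s1 \<noteq> 0" "s2 \<noteq> 0" using s by (auto simp: signedset_iff)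
      have "phi (m \<circ> t) < phi m"
      proof (rule phi_swap[OF mW s(1,2) _ ns lt])
        show "s1 < s2" using s(3) by simp
        show "(m \<circ> t) s1 = m s2" "(m \<circ> t) s2 = m s1" "(m \<circ> t) (- s1) = m (- s2)" "(m \<circ> t) (- s2) = m (- s1)"
          unfolding t_def swap2_def using s0 ns s(3) by auto
        fix s assume "s \<in> Sg" "s \<notin> {s1, s2, - s1, - s2}"
        then show "(m \<circ> t) s = m s" unfolding t_def swap2_def by auto
      qed
      then show False using mmin[OF x'D] by simp
    next
      case 2
      define i where "i = br (m s1)"
      have mS: "m s1 \<in> Sg" "m s2 \<in> Sg" using WC_in[OF mW] s(1,2) by auto
      have i: "i \<in> Ir r" "m s1 \<in> Rr i" "m s2 \<in> Rr i" using rb.blk_in mS 2 unfolding i_def by metis+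
      have ns: "m s2 \<noteq> - m s1" using rb.blk_neq_neg[OF mS(1)] 2 by auto
      have ns': "s2 \<noteq> - s1" using ns WC_odd[OF mW s(1)] by auto
      define t where "t = swap2 (m s1) (m s2)"
      have tW: "t \<in> Wr" unfolding t_def by (rule rb.swap2_Wpar[OF i])
      have x'D: "t \<circ> m \<in> D y" by (rule D_left[OF m tW])
      have s0: "m s1 \<noteq> 0" "m s2 \<noteq> 0" using mS by (auto simp: signedset_iff)
      have odd: "m (- s1) = - m s1" "m (- s2) = - m s2" using WC_odd[OF mW] s(1,2) by auto
      have "phi (t \<circ> m) < phi m"
      proof (rule phi_swap[OF mW s(1,2) _ ns' lt])
        show "s1 < s2" using s(3) by simp
        show "(t \<circ> m) s1 = m s2" "(t \<circ> m) s2 = m s1" "(t \<circ> m) (- s1) = m (- s2)" "(t \<circ> m) (- s2) = m (- s1)"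
          unfolding t_def swap2_def using s0 ns lt odd by auto
        fix s assume sS: "s \<in> Sg" "s \<notin> {s1, s2, - s1, - s2}"
        have "m s \<noteq> m s1" "m s \<noteq> m s2" using WC_inj[OF mW] sS s(1,2) by auto
        moreover have "m s \<noteq> - m s1"
          using WC_inj[OF mW sS(1), of "- s1"] sS s(1) odd by auto
        moreover have "m s \<noteq> - m s2"
          using WC_inj[OF mW sS(1), of "- s2"] sS s(2) odd by auto
        ultimately show "(t \<circ> m) s = m s" unfolding t_def swap2_def by auto
      qed
      then show False using mmin[OF x'D] by simp
    qed
  qed
qed

lemma exists_p3:
  assumes y: "y \<in> W_C d"
  shows "\<exists>m\<in>D y. p3 m"
proof -
  obtain m where m: "m \<in> D y" "\<forall>x. x \<in> D y \<longrightarrow> nat (phi m) \<le> nat (phi x)"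
    using ex_has_least_nat[of "\<lambda>x. x \<in> D y" y "\<lambda>x. nat (phi x)"] D_self by blast
  have "phi m \<le> phi x" if "x \<in> D y" for x using m(2) that phi_nonneg[of m] phi_nonneg[of x] by force
  then show ?thesis using min_p3[OF y m(1)] m(1) by blast
qed

end


lemma lenC_formula:
  assumes x: "x \<in> W_C d"
  shows "2 * lenC d x = card {(p, q). p \<in> signedset d \<and> q \<in> signedset d \<and> p < q \<and> x q < x p}
      + card {p \<in> signedset d. 0 < p \<and> x p < 0}"
proof -
  define Sg where "Sg = signedset d"
  define Pp where "Pp = {1..int d}"
  have PpS: "Pp \<subseteq> Sg" unfolding Pp_def Sg_def by (auto simp: signedset_iff)
  have SgPp: "p \<in> Sg \<Longrightarrow> 0 < p \<Longrightarrow> p \<in> Pp" for p unfolding Pp_def Sg_def signedset_iff by auto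
  have negPp: "p \<in> Sg \<Longrightarrow> p < 0 \<Longrightarrow> - p \<in> Pp" for p unfolding Pp_def Sg_def signedset_iff by auto
  have Pp_pos: "p \<in> Pp \<Longrightarrow> 0 < p" for p unfolding Pp_def by auto
  have odd: "x (- p) = - x p" if "p \<in> Sg" for p using WC_odd[OF x] that unfolding Sg_def by blast
  have Sg0: "p \<in> Sg \<Longrightarrow> p \<noteq> 0" for p unfolding Sg_def signedset_iff by auto
  have finPP: "finite (Pp \<times> Pp)" unfolding Pp_def by simp
  have finSS: "finite (Sg \<times> Sg)" unfolding Sg_def by simp
  define N where "N = {(i, j). i \<in> Pp \<and> j \<in> Pp \<and> i < j \<and> x i > x j}"
  define Z where "Z = {(i, j). i \<in> Pp \<and> j \<in> Pp \<and> i \<le> j \<and> x i + x j < 0}"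
  define I2 where "I2 = {(p, q). p \<in> Sg \<and> q \<in> Sg \<and> p < q \<and> x q < x p}"
  define NEG where "NEG = {p \<in> Sg. 0 < p \<and> x p < 0}"
  define M where "M = {(i, j). i \<in> Pp \<and> j \<in> Pp \<and> x i + x j < 0}"
  define Mlt where "Mlt = {(i, j). i \<in> Pp \<and> j \<in> Pp \<and> i < j \<and> x i + x j < 0}"
  define Mgt where "Mgt = {(i, j). i \<in> Pp \<and> j \<in> Pp \<and> j < i \<and> x i + x j < 0}"
  define Meq where "Meq = {(i, j). i \<in> Pp \<and> j \<in> Pp \<and> i = j \<and> x i + x j < 0}"
  have L: "lenC d x = card N + card Z" unfolding lenC_def N_def Z_def Pp_def by simp
  have fN: "finite N" using finPP unfolding N_def by (rule finite_subset[rotated]) auto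
  have fMlt: "finite Mlt" using finPP unfolding Mlt_def by (rule finite_subset[rotated]) auto
  have fMgt: "finite Mgt" using finPP unfolding Mgt_def by (rule finite_subset[rotated]) auto
  have fMeq: "finite Meq" using finPP unfolding Meq_def by (rule finite_subset[rotated]) auto
  define Ipp where "Ipp = {(p, q). p \<in> Sg \<and> q \<in> Sg \<and> p < q \<and> x q < x p \<and> 0 < p}"
  define Inn where "Inn = {(p, q). p \<in> Sg \<and> q \<in> Sg \<and> p < q \<and> x q < x p \<and> q < 0}"
  define Inp where "Inp = {(p, q). p \<in> Sg \<and> q \<in> Sg \<and> p < q \<and> x q < x p \<and> p < 0 \<and> 0 < q}"
  have fIpp: "finite Ipp" using finSS unfolding Ipp_def by (rule finite_subset[rotated]) auto
  have fInn: "finite Inn" using finSS unfolding Inn_def by (rule finite_subset[rotated]) auto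
  have fInp: "finite Inp" using finSS unfolding Inp_def by (rule finite_subset[rotated]) auto
  have I2eq: "I2 = Ipp \<union> Inn \<union> Inp"
  proof -
    have sgn: "p \<in> Sg \<Longrightarrow> p < 0 \<or> 0 < p" for p using Sg0[of p] by linarith
    show ?thesis unfolding I2_def Ipp_def Inn_def Inp_def using sgn by auto
  qed
  have cI2: "card I2 = card Ipp + card Inn + card Inp"
  proof -
    have d1: "Ipp \<inter> Inn = {}" unfolding Ipp_def Inn_def by auto
    have d2: "(Ipp \<union> Inn) \<inter> Inp = {}" unfolding Ipp_def Inn_def Inp_def by auto
    show ?thesis unfolding I2eq
      using card_Un_disjoint[OF fIpp fInn d1] card_Un_disjoint[OF _ fInp d2] fIpp fInn by simp
  qed
  have Ipp_N: "Ipp = N" unfolding Ipp_def N_def using PpS SgPp Pp_pos by auto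
  have Inn_N: "Inn = (\<lambda>(i, j). (- j, - i)) ` N"
  proof
    show "Inn \<subseteq> (\<lambda>(i, j). (- j, - i)) ` N"
    proof
      fix pq assume "pq \<in> Inn"
      then obtain p q where pq: "pq = (p, q)" "p \<in> Sg" "q \<in> Sg" "p < q" "x q < x p" "q < 0"
        unfolding Inn_def by blast
      have "(- q, - p) \<in> N" unfolding N_def using pq odd negPp by auto
      moreover have "pq = (\<lambda>(i, j). (- j, - i)) (- q, - p)" using pq by simp
      ultimately show "pq \<in> (\<lambda>(i, j). (- j, - i)) ` N" by blast
    qed
    show "(\<lambda>(i, j). (- j, - i)) ` N \<subseteq> Inn"
    proof
      fix pq assume "pq \<in> (\<lambda>(i, j). (- j, - i)) ` N"
      then obtain ij where ij0: "ij \<in> N" "pq = (\<lambda>(i, j). (- j, - i)) ij" by blast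
      then obtain i j where ij: "pq = (- j, - i)" "i \<in> Pp" "j \<in> Pp" "i < j" "x j < x i"
        unfolding N_def by (cases ij) auto
      have "i \<in> Sg" "j \<in> Sg" using ij PpS by auto
      then show "pq \<in> Inn" unfolding Inn_def using ij odd Pp_pos[of i] Pp_pos[of j] by (auto simp: Sg_def)
    qed
  qed
  have cInn: "card Inn = card N" unfolding Inn_N by (rule card_image) (auto simp: inj_on_def)
  have Inp_M: "Inp = (\<lambda>(i, j). (- i, j)) ` M"
  proof
    show "Inp \<subseteq> (\<lambda>(i, j). (- i, j)) ` M"
    proof
      fix pq assume "pq \<in> Inp"
      then obtain p q where pq: "pq = (p, q)" "p \<in> Sg" "q \<in> Sg" "x q < x p" "p < 0" "0 < q"
        unfolding Inp_def by blast
      have "(- p, q) \<in> M" unfolding M_def using pq odd negPp SgPp by auto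
      moreover have "pq = (\<lambda>(i, j). (- i, j)) (- p, q)" using pq by simp
      ultimately show "pq \<in> (\<lambda>(i, j). (- i, j)) ` M" by blast
    qed
    show "(\<lambda>(i, j). (- i, j)) ` M \<subseteq> Inp"
    proof
      fix pq assume "pq \<in> (\<lambda>(i, j). (- i, j)) ` M"
      then obtain ij where ij0: "ij \<in> M" "pq = (\<lambda>(i, j). (- i, j)) ij" by blast
      then obtain i j where ij: "pq = (- i, j)" "i \<in> Pp" "j \<in> Pp" "x i + x j < 0"
        unfolding M_def by (cases ij) auto
      have "i \<in> Sg" "j \<in> Sg" using ij PpS by auto
      then show "pq \<in> Inp" unfolding Inp_def using ij odd Pp_pos[of i] Pp_pos[of j] by (auto simp: Sg_def)
    qed
  qed
  have cInp: "card Inp = card M" unfolding Inp_M by (rule card_image) (auto simp: inj_on_def)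
  have Meq3: "M = Mlt \<union> Mgt \<union> Meq" unfolding M_def Mlt_def Mgt_def Meq_def by auto
  have cM: "card M = card Mlt + card Mgt + card Meq"
  proof -
    have d1: "Mlt \<inter> Mgt = {}" unfolding Mlt_def Mgt_def by auto
    have d2: "(Mlt \<union> Mgt) \<inter> Meq = {}" unfolding Mlt_def Mgt_def Meq_def by auto
    show ?thesis unfolding Meq3
      using card_Un_disjoint[OF fMlt fMgt d1] card_Un_disjoint[OF _ fMeq d2] fMlt fMgt by simp
  qed
  have "Mgt = (\<lambda>(i, j). (j, i)) ` Mlt" unfolding Mgt_def Mlt_def by (auto simp: image_iff add.commute)
  moreover have "inj_on (\<lambda>(i, j). (j, i)) Mlt" by (auto simp: inj_on_def)
  ultimately have cMgt: "card Mgt = card Mlt" by (simp add: card_image)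
  have Zeq: "Z = Mlt \<union> Meq" unfolding Z_def Mlt_def Meq_def by auto
  have cZ: "card Z = card Mlt + card Meq"
  proof -
    have d1: "Mlt \<inter> Meq = {}" unfolding Mlt_def Meq_def by auto
    show ?thesis unfolding Zeq using card_Un_disjoint[OF fMlt fMeq d1] by simp
  qed
  have "Meq = (\<lambda>i. (i, i)) ` NEG" unfolding Meq_def NEG_def using PpS SgPp Pp_pos by auto
  then have cNEG: "card Meq = card NEG" by (simp add: card_image inj_on_def)
  have "2 * lenC d x = card I2 + card NEG" using L cI2 Ipp_N cInn cInp cM cMgt cZ cNEG by simp
  then show ?thesis unfolding I2_def NEG_def Sg_def .
qed


context mainA
begin

definition I2 :: "(int \<Rightarrow> int) \<Rightarrow> (int \<times> int) set" where
  "I2 x = {(p, q). p \<in> Sg \<and> q \<in> Sg \<and> p < q \<and> x q < x p}"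

definition NI :: "(int \<Rightarrow> int) \<Rightarrow> (int \<times> int) set" where
  "NI x = {(p, q). p \<in> Sg \<and> q \<in> Sg \<and> p < q \<and> x p < x q}"

definition TT :: "(int \<times> int) set" where
  "TT = {(p, q). p \<in> Sg \<and> q \<in> Sg \<and> p < q}"

definition J0 :: "((int \<times> int) \<times> (int \<times> int)) set" where
  "J0 = {(c1, c2). c1 \<in> Ir r \<times> Ir r \<and> c2 \<in> Ir r \<times> Ir r \<and> fst c1 < fst c2 \<and> snd c1 < snd c2}"

definition Bs :: "(int \<Rightarrow> int) \<Rightarrow> (int \<times> int) set" where
  "Bs x = {(p, q). p \<in> Sg \<and> q \<in> Sg \<and> (cell x p, cell x q) \<in> J0}"

definition F0 :: "(int \<times> int) set" where
  "F0 = {(i, j). i \<in> Ir r \<and> j \<in> Ir r \<and> i < 0 \<and> 0 < j}"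

lemma finTT: "finite TT"
proof -
  have "TT \<subseteq> Sg \<times> Sg" unfolding TT_def by auto
  then show ?thesis by (rule finite_subset) simp
qed

lemma I2_NI:
  assumes x: "x \<in> W_C d"
  shows "card (I2 x) + card (NI x) = card TT"
proof -
  have "TT = I2 x \<union> NI x"
  proof
    show "TT \<subseteq> I2 x \<union> NI x"
    proof
      fix pq assume "pq \<in> TT"
      then obtain p q where pq: "pq = (p, q)" "p \<in> Sg" "q \<in> Sg" "p < q" unfolding TT_def by blast
      have "x p \<noteq> x q" using WC_inj[OF x pq(2,3)] pq(4) by simp
      then show "pq \<in> I2 x \<union> NI x" unfolding I2_def NI_def using pq by (auto simp: neq_iff)
    qed
    show "I2 x \<union> NI x \<subseteq> TT" unfolding I2_def NI_def TT_def by auto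
  qed
  moreover have "I2 x \<inter> NI x = {}" unfolding I2_def NI_def by auto
  moreover have "finite (I2 x)" "finite (NI x)"
    using finTT unfolding TT_def I2_def NI_def by (auto elim: finite_subset[rotated])
  ultimately show ?thesis by (simp add: card_Un_disjoint)
qed

lemma Bs_sub_NI:
  assumes x: "x \<in> W_C d"
  shows "Bs x \<subseteq> NI x"
proof
  fix pq assume "pq \<in> Bs x"
  then obtain p q where pq: "pq = (p, q)" "p \<in> Sg" "q \<in> Sg" "(cell x p, cell x q) \<in> J0"
    unfolding Bs_def by blast
  have lt: "br (x p) < br (x q)" "bc p < bc q" using pq(4) unfolding J0_def cell_def by auto
  have "p < q" using cb.blk_less pq(2,3) lt(2) by blast
  moreover have "x p < x q" using rb.blk_less WC_in[OF x pq(2)] WC_in[OF x pq(3)] lt(1) by blast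
  ultimately show "pq \<in> NI x" unfolding NI_def using pq by simp
qed

lemma NI_sub_Bs:
  assumes x: "x \<in> W_C d" and p3: "p3 x"
  shows "NI x \<subseteq> Bs x"
proof
  fix pq assume "pq \<in> NI x"
  then obtain p q where pq: "pq = (p, q)" "p \<in> Sg" "q \<in> Sg" "p < q" "x p < x q"
    unfolding NI_def by blast
  have ne: "bc p \<noteq> bc q" "br (x p) \<noteq> br (x q)"
  proof -
    have "\<not> x q < x p" using pq(5) by simp
    then show "bc p \<noteq> bc q" "br (x p) \<noteq> br (x q)"
      using p3 pq(2,3,4) unfolding p3_def by blast+
  qed
  have xS: "x p \<in> Sg" "x q \<in> Sg" using WC_in[OF x] pq by auto
  have "bc p \<le> bc q" using cb.blk_mono pq by simp
  moreover have "br (x p) \<le> br (x q)" using rb.blk_mono xS pq(5) by simp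
  ultimately have "bc p < bc q" "br (x p) < br (x q)" using ne by auto
  moreover have "cell x p \<in> Ir r \<times> Ir r" "cell x q \<in> Ir r \<times> Ir r" using cell_in pq xS by auto
  ultimately show "pq \<in> Bs x" unfolding Bs_def J0_def cell_def using pq by auto
qed

lemma card_Bs:
  assumes x: "x \<in> W_C d" and mat: "mat x"
  shows "card (Bs x) = (\<Sum>(c1, c2)\<in>J0. (case c1 of (i, j) \<Rightarrow> A i j) * (case c2 of (i, j) \<Rightarrow> A i j))"
proof -
  have "x ` Sg \<subseteq> Sg" using WC_in[OF x] by blast
  moreover have "J0 \<subseteq> (Ir r \<times> Ir r) \<times> (Ir r \<times> Ir r)" unfolding J0_def by auto
  ultimately show ?thesis unfolding Bs_def using pair_count mat by blast
qed

lemma card_NEG: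
  assumes x: "x \<in> W_C d" and mat: "mat x"
  shows "card {p \<in> Sg. 0 < p \<and> x p < 0} = (\<Sum>(i,j)\<in>F0. A i j)"
proof -
  have xs: "x ` Sg \<subseteq> Sg" using WC_in[OF x] by blast
  have "{p \<in> Sg. 0 < p \<and> x p < 0} = {p \<in> Sg. cell x p \<in> F0}"
  proof -
    have "0 < p \<and> x p < 0 \<longleftrightarrow> cell x p \<in> F0" if p: "p \<in> Sg" for p
    proof -
      have xp: "x p \<in> Sg" using WC_in[OF x p] .
      have "x p < 0 \<longleftrightarrow> br (x p) < 0"
        using rb.blk_sign[OF xp] rb.blk_in[OF xp] xp by (auto simp: signedset_iff Ir_iff)
      moreover have "0 < p \<longleftrightarrow> 0 < bc p" using cb.blk_sign[OF p] by simp
      moreover have "cell x p \<in> Ir r \<times> Ir r" using cell_in p xp by blast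
      ultimately show ?thesis unfolding F0_def cell_def by auto
    qed
    then show ?thesis by blast
  qed
  moreover have "F0 \<subseteq> Ir r \<times> Ir r" unfolding F0_def by auto
  ultimately show ?thesis using cell_count[OF xs mat] by simp
qed

lemma lenC_cmp:
  assumes x: "x \<in> W_C d" "mat x" and m: "m \<in> W_C d" "mat m" "p3 m"
  shows "lenC d x \<le> lenC d m" and "lenC d m \<le> lenC d x \<Longrightarrow> p3 x"
proof -
  have fNI: "finite (NI x)" using finTT unfolding TT_def NI_def by (auto elim: finite_subset[rotated])
  have B: "card (Bs x) = card (Bs m)" using card_Bs x m by simp
  have Bm: "Bs m = NI m" using Bs_sub_NI[OF m(1)] NI_sub_Bs[OF m(1) m(3)] by blast
  have NIx: "card (Bs x) \<le> card (NI x)" using Bs_sub_NI[OF x(1)] fNI by (rule card_mono[rotated])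
  have neg: "card {p \<in> Sg. 0 < p \<and> x p < 0} = card {p \<in> Sg. 0 < p \<and> m p < 0}"
    using card_NEG x m by simp
  have Lx: "2 * lenC d x = card (I2 x) + card {p \<in> Sg. 0 < p \<and> x p < 0}"
    using lenC_formula[OF x(1)] unfolding I2_def by simp
  have Lm: "2 * lenC d m = card (I2 m) + card {p \<in> Sg. 0 < p \<and> m p < 0}"
    using lenC_formula[OF m(1)] unfolding I2_def by simp
  have Ix: "card (I2 x) + card (NI x) = card TT" by (rule I2_NI[OF x(1)])
  have Im: "card (I2 m) + card (NI m) = card TT" by (rule I2_NI[OF m(1)])
  show "lenC d x \<le> lenC d m" using Lx Lm Ix Im neg B Bm NIx by simp
  assume "lenC d m \<le> lenC d x"
  then have "card (NI x) \<le> card (Bs x)" using Lx Lm Ix Im neg B Bm by simp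
  then have eq: "NI x = Bs x" using Bs_sub_NI[OF x(1)] fNI by (metis card_seteq)
  show "p3 x" unfolding p3_def
  proof (intro ballI impI)
    fix s1 s2 assume s: "s1 \<in> Sg" "s2 \<in> Sg" "s1 < s2 \<and> (bc s1 = bc s2 \<or> br (x s1) = br (x s2))"
    show "x s2 < x s1"
    proof (rule ccontr)
      assume "\<not> x s2 < x s1"
      moreover have "x s1 \<noteq> x s2" using WC_inj[OF x(1) s(1,2)] s(3) by simp
      ultimately have "x s1 < x s2" by simp
      then have "(s1, s2) \<in> Bs x" using eq s unfolding NI_def by auto
      then show False using s(3) unfolding Bs_def J0_def cell_def by auto
    qed
  qed
qed

end


context mainA
begin

lemma exists_y': "\<exists>y\<in>W_C d. \<forall>i\<in>Ir r. \<forall>j\<in>Ir r. card (Rr i \<inter> y ` Rc j) = A i j"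
proof -
  define Pp where "Pp = {1..int d}"
  define Jp where "Jp = {j \<in> Ir r. 0 < j}"
  define c where "c i = (\<Sum>j\<in>Jp. A i j)" for i
  have PpS: "Pp \<subseteq> Sg" unfolding Pp_def by (auto simp: signedset_iff)
  have PpI: "s \<in> Pp \<longleftrightarrow> s \<in> Sg \<and> 0 < s" for s unfolding Pp_def by (auto simp: signedset_iff)
  have finJp: "finite Jp" unfolding Jp_def by simp
  have cle: "c i \<le> card (Rr i)" if "i \<in> Jp" for i
  proof -
    have "c i \<le> (\<Sum>j\<in>Ir r. A i j)" unfolding c_def Jp_def by (rule sum_mono2) auto
    also have "\<dots> = card (Rr i)" using rb.card_Rblk[of i] that unfolding Jp_def ro_def by simp
    finally show ?thesis .
  qed
  have "\<forall>i. \<exists>T. i \<in> Jp \<longrightarrow> T \<subseteq> Rr i \<and> card T = c i"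
  proof
    fix i
    show "\<exists>T. i \<in> Jp \<longrightarrow> T \<subseteq> Rr i \<and> card T = c i"
    proof (cases "i \<in> Jp")
      case True
      obtain T where "T \<subseteq> Rr i" "card T = c i" using obtain_subset_with_card_n[OF cle[OF True]] by blast
      then show ?thesis by blast
    qed blast
  qed
  then obtain X where X: "\<And>i. i \<in> Jp \<Longrightarrow> X i \<subseteq> Rr i \<and> card (X i) = c i" by metis
  define V where "V = (\<Union>i\<in>Jp. X i) \<union> (\<Union>i\<in>Jp. uminus ` (Rr i - X i))"
  have brpos: "br v \<in> Jp \<longleftrightarrow> 0 < v" if "v \<in> Sg" for v
    using rb.blk_sign[OF that] rb.blk_in[OF that] unfolding Jp_def by auto
  have bcpos: "bc v \<in> Jp \<longleftrightarrow> 0 < v" if "v \<in> Sg" for v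
    using cb.blk_sign[OF that] cb.blk_in[OF that] unfolding Jp_def by auto
  have JpIr: "Jp \<subseteq> Ir r" unfolding Jp_def by auto
  have inRr: "u \<in> Rr i \<longleftrightarrow> u \<in> Sg \<and> br u = i" if "i \<in> Jp" for u i
    using rb.Rblk_eq[of i] that JpIr by auto
  have Vpos: "v \<in> V \<longleftrightarrow> v \<in> X (br v)" if "v \<in> Sg" "0 < v" for v
  proof
    assume "v \<in> V"
    then consider i where "i \<in> Jp" "v \<in> X i" | i where "i \<in> Jp" "v \<in> uminus ` (Rr i - X i)"
      unfolding V_def by blast
    then show "v \<in> X (br v)"
    proof cases
      case 1
      have "v \<in> Rr i" using X[OF 1(1)] 1(2) by blast
      then have "br v = i" using inRr[OF 1(1)] by simp
      then show ?thesis using 1 by simp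
    next
      case 2
      then obtain u where "u \<in> Rr i" "v = - u" by blast
      then have "u \<in> Sg" "br u = i" using inRr[OF 2(1)] by simp_all
      then have "u > 0" using brpos 2(1) by blast
      then show ?thesis using \<open>v = - u\<close> that by simp
    qed
  next
    assume "v \<in> X (br v)"
    moreover have "br v \<in> Jp" using brpos that by blast
    ultimately show "v \<in> V" unfolding V_def by blast
  qed
  have Vneg: "v \<in> V \<longleftrightarrow> - v \<notin> X (br (- v))" if "v \<in> Sg" "v < 0" for v
  proof
    assume "v \<in> V"
    then consider i where "i \<in> Jp" "v \<in> X i" | i where "i \<in> Jp" "v \<in> uminus ` (Rr i - X i)"
      unfolding V_def by blast
    then show "- v \<notin> X (br (- v))"
    proof cases
      case 1
      have "v \<in> Rr i" using X[OF 1(1)] 1(2) by blast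
      then have "br v = i" "v \<in> Sg" using inRr[OF 1(1)] by simp_all
      then have "0 < v" using brpos 1(1) by blast
      then show ?thesis using that by simp
    next
      case 2
      then obtain u where u: "u \<in> Rr i" "u \<notin> X i" "v = - u" by blast
      then have "br u = i" using inRr[OF 2(1)] by blast
      then show ?thesis using u by simp
    qed
  next
    assume a: "- v \<notin> X (br (- v))"
    have mv: "- v \<in> Sg" "0 < - v" using that by auto
    then have j: "br (- v) \<in> Jp" using brpos by blast
    moreover have "- v \<in> Rr (br (- v))" using inRr[OF j] mv by simp
    ultimately have "v \<in> uminus ` (Rr (br (- v)) - X (br (- v)))" using a by (auto intro: image_eqI[of _ _ "- v"])
    then show "v \<in> V" unfolding V_def using j by blast
  qed
  have VS: "V \<subseteq> Sg"
  proof -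
    have "X i \<subseteq> Sg" "uminus ` (Rr i - X i) \<subseteq> Sg" if "i \<in> Jp" for i
    proof -
      have R: "Rr i \<subseteq> Sg" using rb.Rblk_sub[of i] that JpIr by blast
      show "X i \<subseteq> Sg" using X[OF that] R by blast
      show "uminus ` (Rr i - X i) \<subseteq> Sg" using R by auto
    qed
    then show ?thesis unfolding V_def by blast
  qed
  have Vcompl: "v \<in> V \<longleftrightarrow> - v \<notin> V" if "v \<in> Sg" for v
  proof (cases "0 < v")
    case True
    then show ?thesis using Vpos[OF that True] Vneg[of "- v"] that by simp
  next
    case False
    then have "v < 0" using that by (auto simp: signedset_iff)
    then show ?thesis using Vneg[OF that] Vpos[of "- v"] that by simp
  qed
  have h5: "bc ` Pp \<subseteq> Jp" using bcpos PpI by auto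
  have h6: "br ` V \<subseteq> Ir r" using VS rb.blk_in by blast
  have RcJp: "Rc j = {p \<in> Pp. bc p = j}" if "j \<in> Jp" for j
  proof -
    have e: "Rc j = {x \<in> Sg. bc x = j}" using cb.Rblk_eq[of j] that JpIr by blast
    have "x \<in> Sg \<and> bc x = j \<longleftrightarrow> x \<in> Pp \<and> bc x = j" for x
      using bcpos[of x] PpI[of x] that by auto
    then show ?thesis using e by blast
  qed
  have h7: "\<forall>j\<in>Jp. card {p\<in>Pp. bc p = j} = (\<Sum>i\<in>Ir r. A i j)"
  proof
    fix j assume j: "j \<in> Jp"
    have "card {p\<in>Pp. bc p = j} = card (Rc j)" using RcJp[OF j] by simp
    also have "\<dots> = co r A j" using cb.card_Rblk[of j] j JpIr unfolding Jp_def by auto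
    finally show "card {p\<in>Pp. bc p = j} = (\<Sum>i\<in>Ir r. A i j)" unfolding co_def .
  qed
  have sumJn: "(\<Sum>j\<in>Ir r. f j) = (\<Sum>j\<in>Jp. f j) + (\<Sum>j\<in>Jp. f (- j))" for f :: "int \<Rightarrow> nat"
  proof -
    have "Ir r = Jp \<union> uminus ` Jp"
    proof
      show "Ir r \<subseteq> Jp \<union> uminus ` Jp"
      proof
        fix j assume j: "j \<in> Ir r"
        show "j \<in> Jp \<union> uminus ` Jp"
        proof (cases "0 < j")
          case True then show ?thesis using j unfolding Jp_def by simp
        next
          case False
          then have "- j \<in> Jp" using j unfolding Jp_def by (auto simp: Ir_iff)
          then show ?thesis by (metis UnI2 image_eqI minus_minus)
        qed
      qed
      show "Jp \<union> uminus ` Jp \<subseteq> Ir r" unfolding Jp_def by auto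
    qed
    moreover have "Jp \<inter> uminus ` Jp = {}" unfolding Jp_def by auto
    ultimately have "(\<Sum>j\<in>Ir r. f j) = (\<Sum>j\<in>Jp. f j) + (\<Sum>j\<in>uminus ` Jp. f j)"
      using finJp by (simp add: sum.union_disjoint)
    also have "(\<Sum>j\<in>uminus ` Jp. f j) = (\<Sum>j\<in>Jp. f (- j))" by (simp add: sum.reindex inj_on_def)
    finally show ?thesis .
  qed
  have h8: "\<forall>i\<in>Ir r. card {v\<in>V. br v = i} = (\<Sum>j\<in>Jp. A i j)"
  proof
    fix i assume i: "i \<in> Ir r"
    show "card {v\<in>V. br v = i} = (\<Sum>j\<in>Jp. A i j)"
    proof (cases "0 < i")
      case True
      then have iJ: "i \<in> Jp" using i unfolding Jp_def by simp
      have "{v\<in>V. br v = i} = X i"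
      proof
        show "{v\<in>V. br v = i} \<subseteq> X i"
        proof
          fix v assume v: "v \<in> {v\<in>V. br v = i}"
          then have vS: "v \<in> Sg" using VS by blast
          then have "0 < v" using brpos v iJ by auto
          then show "v \<in> X i" using Vpos[OF vS] v by auto
        qed
        show "X i \<subseteq> {v\<in>V. br v = i}"
        proof
          fix v assume v: "v \<in> X i"
          have "v \<in> Rr i" using X[OF iJ] v by blast
          then have "v \<in> Sg" "br v = i" using inRr[OF iJ] by simp_all
          then show "v \<in> {v\<in>V. br v = i}" using v iJ unfolding V_def by blast
        qed
      qed
      then show ?thesis using X[OF iJ] unfolding c_def by simp
    next
      case False
      then have iJ: "- i \<in> Jp" using i unfolding Jp_def by (auto simp: Ir_iff)
      have eq: "{v\<in>V. br v = i} = uminus ` (Rr (- i) - X (- i))"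
      proof
        show "{v\<in>V. br v = i} \<subseteq> uminus ` (Rr (- i) - X (- i))"
        proof
          fix v assume v: "v \<in> {v\<in>V. br v = i}"
          then have vS: "v \<in> Sg" using VS by blast
          have "v < 0" using brpos[OF vS] v False i vS by (auto simp: signedset_iff Jp_def)
          then have "- v \<notin> X (br (- v))" using Vneg[OF vS] v by auto
          moreover have "br (- v) = - i" using rb.blk_uminus[OF vS] v by simp
          moreover have "- v \<in> Rr (- i)" using inRr[OF iJ] vS calculation(2) by simp
          ultimately show "v \<in> uminus ` (Rr (- i) - X (- i))" by (auto intro: image_eqI[of _ _ "- v"])
        qed
        show "uminus ` (Rr (- i) - X (- i)) \<subseteq> {v\<in>V. br v = i}"
        proof
          fix v assume "v \<in> uminus ` (Rr (- i) - X (- i))"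
          then obtain u where u: "u \<in> Rr (- i)" "u \<notin> X (- i)" "v = - u" by blast
          have uS: "u \<in> Sg" "br u = - i" using inRr[OF iJ] u(1) by auto
          then have "br v = i" using rb.blk_uminus[OF uS(1)] u(3) by simp
          moreover have "v \<in> V" unfolding V_def using u iJ by blast
          ultimately show "v \<in> {v\<in>V. br v = i}" by simp
        qed
      qed
      have "card (uminus ` (Rr (- i) - X (- i))) = card (Rr (- i) - X (- i))" by (simp add: card_image)
      also have "\<dots> = card (Rr (- i)) - c (- i)"
      proof -
        have "X (- i) \<subseteq> Rr (- i)" "card (X (- i)) = c (- i)" using X[OF iJ] by auto
        moreover have "finite (X (- i))" using calculation(1) by (rule finite_subset) simp
        ultimately show ?thesis by (simp add: card_Diff_subset)
      qed
      also have "card (Rr (- i)) = (\<Sum>j\<in>Ir r. A (- i) j)"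
        using rb.card_Rblk[of "- i"] iJ JpIr unfolding ro_def Jp_def by auto
      also have "\<dots> = c (- i) + (\<Sum>j\<in>Jp. A (- i) (- j))" unfolding c_def by (rule sumJn)
      also have "(\<Sum>j\<in>Jp. A (- i) (- j)) = (\<Sum>j\<in>Jp. A i j)"
        using A_sym[OF i] JpIr by (intro sum.cong) auto
      finally show ?thesis using eq by simp
    qed
  qed
  have finV: "finite V" using VS by (rule finite_subset) simp
  have finPp: "finite Pp" unfolding Pp_def by simp
  obtain f where f: "bij_betw f Pp V" "\<forall>i\<in>Ir r. \<forall>j\<in>Jp. card {p\<in>Pp. bc p = j \<and> br (f p) = i} = A i j"
    using transport[OF finPp finV finite_Ir finJp h5 h6 h7 h8] by blast
  define y where "y s = (if s \<in> Pp then f s else if - s \<in> Pp then - f (- s) else s)" for s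
  have fV: "f p \<in> V" if "p \<in> Pp" for p using bij_betw_apply[OF f(1) that] .
  have yimg: "y ` Sg = Sg"
  proof
    show "y ` Sg \<subseteq> Sg"
    proof
      fix t assume "t \<in> y ` Sg"
      then obtain s where s: "s \<in> Sg" "t = y s" by blast
      show "t \<in> Sg"
      proof (cases "s \<in> Pp")
        case True then show ?thesis using s fV VS unfolding y_def by auto
      next
        case False
        then have "- s \<in> Pp" using s PpI by (auto simp: signedset_iff)
        then show ?thesis using s fV[of "- s"] VS False unfolding y_def by auto
      qed
    qed
    show "Sg \<subseteq> y ` Sg"
    proof
      fix v assume v: "v \<in> Sg"
      show "v \<in> y ` Sg"
      proof (cases "v \<in> V")
        case True
        then have "v \<in> f ` Pp" using f(1) unfolding bij_betw_def by simp
        then obtain p where p: "p \<in> Pp" "f p = v" by (metis imageE)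
        then have "y p = v" unfolding y_def by simp
        then show ?thesis using p PpS by blast
      next
        case False
        then have "- v \<in> V" using Vcompl[OF v] False by blast
        then have "- v \<in> f ` Pp" using f(1) unfolding bij_betw_def by simp
        then obtain p where p: "p \<in> Pp" "f p = - v" by (metis imageE)
        have "- p \<notin> Pp" using p PpI by simp
        then have "y (- p) = v" unfolding y_def using p by simp
        moreover have "- p \<in> Sg" using p PpS by auto
        ultimately show ?thesis by (metis image_eqI)
      qed
    qed
  qed
  have yinj: "inj_on y Sg" using yimg by (intro eq_card_imp_inj_on) simp_all
  have yW: "y \<in> W_C d" unfolding W_C_def
  proof (intro CollectI conjI allI ballI impI)
    show "bij_betw y Sg Sg" using yinj yimg unfolding bij_betw_def by simp
    fix s assume s: "s \<in> Sg"
    show "y (- s) = - y s"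
    proof (cases "s \<in> Pp")
      case True
      then have "- s \<notin> Pp" using PpI by auto
      then show ?thesis using True unfolding y_def by simp
    next
      case False
      then have "- s \<in> Pp" using s PpI by (auto simp: signedset_iff)
      then show ?thesis using False unfolding y_def by simp
    qed
  next
    fix s assume "s \<notin> Sg"
    then have "s \<notin> Pp" "- s \<notin> Pp" using PpS by auto
    then show "y s = s" unfolding y_def by simp
  qed
  have cnt: "card (Rr i \<inter> y ` Rc j) = A i j" if i: "i \<in> Ir r" and j: "j \<in> Ir r" for i j
  proof -
    have RcS: "Rc j \<subseteq> Sg" by (rule cb.Rblk_sub[OF j])
    have "Rr i \<inter> y ` Rc j = y ` {s \<in> Rc j. y s \<in> Rr i}" by auto
    then have c1: "card (Rr i \<inter> y ` Rc j) = card {s \<in> Rc j. y s \<in> Rr i}"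
      using card_image inj_on_subset[OF yinj] RcS by (metis (no_types, lifting) mem_Collect_eq subsetI subset_trans)
    have yS: "y s \<in> Sg" if "s \<in> Sg" for s using yimg that by blast
    have inRr': "u \<in> Rr i \<longleftrightarrow> br u = i" if "u \<in> Sg" for u
      using rb.Rblk_eq[OF i] that by auto
    show ?thesis
    proof (cases "0 < j")
      case True
      then have jJ: "j \<in> Jp" using j unfolding Jp_def by simp
      have "{s \<in> Rc j. y s \<in> Rr i} = {p\<in>Pp. bc p = j \<and> br (f p) = i}"
        using RcJp[OF jJ] inRr' fV VS unfolding y_def by auto
      then show ?thesis using c1 f(2) i jJ by simp
    next
      case False
      then have jJ: "- j \<in> Jp" using j unfolding Jp_def by (auto simp: Ir_iff)
      have "{s \<in> Rc j. y s \<in> Rr i} = uminus ` {p\<in>Pp. bc p = - j \<and> br (f p) = - i}"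
      proof
        show "{s \<in> Rc j. y s \<in> Rr i} \<subseteq> uminus ` {p\<in>Pp. bc p = - j \<and> br (f p) = - i}"
        proof
          fix s assume s: "s \<in> {s \<in> Rc j. y s \<in> Rr i}"
          then have sS: "s \<in> Sg" "bc s = j" using cb.Rblk_blk[OF j] by auto
          have "s < 0" using bcpos[OF sS(1)] sS False j signedset_iff[of s d] unfolding Jp_def by force
          then have ms: "- s \<in> Pp" "s \<notin> Pp" using sS PpI by auto
          have ys: "y s = - f (- s)" unfolding y_def using ms by simp
          have fS: "f (- s) \<in> Sg" using fV[OF ms(1)] VS by blast
          have "br (- f (- s)) = i" using s ys inRr' yS[OF sS(1)] by auto
          then have "br (f (- s)) = - i" using rb.blk_uminus[OF fS] by simp
          moreover have "bc (- s) = - j" using cb.blk_uminus[OF sS(1)] sS(2) by simp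
          ultimately show "s \<in> uminus ` {p\<in>Pp. bc p = - j \<and> br (f p) = - i}"
            using ms(1) by (auto intro: image_eqI[of _ _ "- s"])
        qed
        show "uminus ` {p\<in>Pp. bc p = - j \<and> br (f p) = - i} \<subseteq> {s \<in> Rc j. y s \<in> Rr i}"
        proof
          fix s assume "s \<in> uminus ` {p\<in>Pp. bc p = - j \<and> br (f p) = - i}"
          then obtain p where p: "p \<in> Pp" "bc p = - j" "br (f p) = - i" "s = - p" by blast
          have pS: "p \<in> Sg" using p PpS by blast
          have "- p \<notin> Pp" using p PpI by simp
          then have ys: "y s = - f p" unfolding y_def using p by simp
          have fS: "f p \<in> Sg" using fV[OF p(1)] VS by blast
          have "br (- f p) = i" using rb.blk_uminus[OF fS] p(3) by simp
          then have "y s \<in> Rr i" using inRr' ys fS by simp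
          moreover have "s \<in> Rc j"
          proof -
            have "bc s = j" using cb.blk_uminus[OF pS] p(2,4) by simp
            moreover have "s \<in> Sg" using pS p(4) by simp
            ultimately show ?thesis using cb.Rblk_eq[OF j] by simp
          qed
          ultimately show "s \<in> {s \<in> Rc j. y s \<in> Rr i}" by simp
        qed
      qed
      moreover have "card (uminus ` {p\<in>Pp. bc p = - j \<and> br (f p) = - i}) = card {p\<in>Pp. bc p = - j \<and> br (f p) = - i}"
        by (simp add: card_image)
      moreover have "card {p\<in>Pp. bc p = - j \<and> br (f p) = - i} = A (- i) (- j)" using f(2) i jJ by simp
      ultimately show ?thesis using c1 A_sym[OF i j] by simp
    qed
  qed
  show ?thesis using yW cnt by blast
qed

end


context mainA
begin

lemma uniq_aux:
  assumes x: "x \<in> W_C d" "p3 x" "mat x" and x': "x' \<in> W_C d" "p3 x'" "mat x'"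
    and p: "p \<in> Sg" and below: "\<And>s. s \<in> Sg \<Longrightarrow> s < p \<Longrightarrow> x s = x' s"
    and lt: "br (x' p) < br (x p)"
  shows False
proof -
  define i where "i = br (x p)"
  define j where "j = bc p"
  have xp: "x p \<in> Sg" "x' p \<in> Sg" using WC_in x(1) x'(1) p by auto
  have ij: "i \<in> Ir r" "j \<in> Ir r" "x p \<in> Rr i" "p \<in> Rc j"
    using rb.blk_in[OF xp(1)] cb.blk_in[OF p] unfolding i_def j_def by auto
  define K where "K = {s \<in> Rc j. x s \<in> Rr i}"
  define K' where "K' = {s \<in> Rc j. x' s \<in> Rr i}"
  have cK: "card K = card K'" using x(3) x'(3) ij unfolding mat_def K_def K'_def by simp
  have fin: "finite K" "finite K'" unfolding K_def K'_def by auto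
  have lo: "{s \<in> K. s < p} = {s \<in> K'. s < p}"
    unfolding K_def K'_def using below cb.Rblk_sub[OF ij(2)] by auto
  have spl: "card A' = card {s \<in> A'. s < p} + card {s \<in> A'. \<not> s < p}" if "finite A'" for A'
  proof -
    have "A' = {s \<in> A'. s < p} \<union> {s \<in> A'. \<not> s < p}" by auto
    moreover have "{s \<in> A'. s < p} \<inter> {s \<in> A'. \<not> s < p} = {}" by auto
    ultimately show ?thesis using that by (metis (no_types, lifting) card_Un_disjoint finite_Un)
  qed
  have "card {s \<in> K'. \<not> s < p} = card {s \<in> K. \<not> s < p}"
    using spl[OF fin(1)] spl[OF fin(2)] cK lo by simp
  moreover have "p \<in> {s \<in> K. \<not> s < p}" unfolding K_def using ij by simp
  moreover have "finite {s \<in> K. \<not> s < p}" using fin by simp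
  ultimately have "card {s \<in> K'. \<not> s < p} \<noteq> 0" by (metis card_0_eq empty_iff)
  then obtain q where q: "q \<in> K'" "\<not> q < p" by (metis (no_types, lifting) Collect_empty_eq card.empty)
  have qS: "q \<in> Sg" using q cb.Rblk_sub[OF ij(2)] unfolding K'_def by blast
  have bq: "bc q = j" "br (x' q) = i" using q cb.Rblk_blk[OF ij(2)] rb.Rblk_blk[OF ij(1)] unfolding K'_def by auto
  have "q \<noteq> p" using bq(2) lt unfolding i_def by auto
  then have pq: "p < q" using q(2) by simp
  then have "x' q < x' p" using x'(2) p qS bq(1) unfolding p3_def j_def by auto
  moreover have "x' p < x' q" using rb.blk_less[OF xp(2) WC_in[OF x'(1) qS]] bq(2) lt unfolding i_def by simp
  ultimately show False by simp
qed

lemma uniq: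
  assumes x: "x \<in> W_C d" "p3 x" "mat x" and x': "x' \<in> W_C d" "p3 x'" "mat x'"
  shows "x = x'"
proof (rule ccontr)
  assume ne: "x \<noteq> x'"
  have "\<exists>s. x s \<noteq> x' s" using ne by auto
  then obtain s0 where s0: "x s0 \<noteq> x' s0" by blast
  have s0S: "s0 \<in> Sg" using s0 WC_out[OF x(1)] WC_out[OF x'(1)] by metis
  define Dif where "Dif = {s \<in> Sg. x s \<noteq> x' s}"
  have fD: "finite Dif" "Dif \<noteq> {}" unfolding Dif_def using s0 s0S by auto
  define p where "p = Min Dif"
  have pD: "p \<in> Dif" unfolding p_def using fD by (rule Min_in)
  have pS: "p \<in> Sg" and pne: "x p \<noteq> x' p" using pD unfolding Dif_def by auto
  have below: "x s = x' s" if "s \<in> Sg" "s < p" for s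
  proof (rule ccontr)
    assume "x s \<noteq> x' s"
    then have "s \<in> Dif" unfolding Dif_def using that by simp
    then have "p \<le> s" unfolding p_def using fD by simp
    then show False using that by simp
  qed
  consider "br (x' p) < br (x p)" | "br (x p) < br (x' p)" | "br (x p) = br (x' p)" by linarith
  then show False
  proof cases
    case 1
    then show False using uniq_aux[OF x x' pS below] by blast
  next
    case 2
    then show False using uniq_aux[OF x' x pS] below by (metis)
  next
    case 3
    have xpS: "x p \<in> Sg" "x' p \<in> Sg" using WC_in x(1) x'(1) pS by auto
    obtain q where q: "q \<in> Sg" "x q = x' p" using WC_surj[OF x(1) xpS(2)] by blast
    have "q \<noteq> p" using q pne by auto
    moreover have "\<not> q < p"
    proof
      assume "q < p"
      then have "x' q = x' p" using below q by simp
      then have "q = p" using WC_inj[OF x'(1) q(1) pS] by simp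
      then show False using \<open>q < p\<close> by simp
    qed
    ultimately have "p < q" by simp
    then have lt1: "x' p < x p" using x(2) pS q 3 unfolding p3_def by metis
    obtain q' where q': "q' \<in> Sg" "x' q' = x p" using WC_surj[OF x'(1) xpS(1)] by blast
    have "q' \<noteq> p" using q' pne by auto
    moreover have "\<not> q' < p"
    proof
      assume "q' < p"
      then have "x q' = x p" using below q' by simp
      then have "q' = p" using WC_inj[OF x(1) q'(1) pS] by simp
      then show False using \<open>q' < p\<close> by simp
    qed
    ultimately have "p < q'" by simp
    then have "x p < x' p" using x'(2) pS q' 3 unfolding p3_def by metis
    then show False using lt1 by simp
  qed
qed

lemma exists_y: "\<exists>y\<in>W_C d. \<forall>i\<in>Ir r. \<forall>j\<in>Ir r. card (Rr i \<inter> y ` Rc j) = A i j"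
  by (rule exists_y')

lemma wAplus_props': "wAplus r d A \<in> W_C d \<and> p3 (wAplus r d A) \<and> mat (wAplus r d A)"
proof -
  define Q where "Q w \<longleftrightarrow> (\<exists>y\<in>W_C d. (\<forall>i\<in>Ir r. \<forall>j\<in>Ir r. card (Rr i \<inter> y ` Rc j) = A i j) \<and>
      w \<in> D y \<and> (\<forall>v\<in>D y. lenC d v \<le> lenC d w))" for w
  have W: "wAplus r d A = (THE w. Q w)" unfolding wAplus_def Q_def by simp
  have props: "w \<in> W_C d \<and> p3 w \<and> mat w" if "Q w" for w
  proof -
    obtain y where y: "y \<in> W_C d" "\<forall>i\<in>Ir r. \<forall>j\<in>Ir r. card (Rr i \<inter> y ` Rc j) = A i j"
      "w \<in> D y" "\<forall>v\<in>D y. lenC d v \<le> lenC d w" using \<open>Q w\<close> unfolding Q_def by blast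
    have my: "mat y" by (rule mat_of_card[OF y(1,2)])
    have wW: "w \<in> W_C d" and mw: "mat w" using D_WC[OF y(1) y(3)] D_mat[OF y(1) my y(3)] by auto
    obtain m where m: "m \<in> D y" "p3 m" using exists_p3[OF y(1)] by blast
    have mW: "m \<in> W_C d" and mm: "mat m" using D_WC[OF y(1) m(1)] D_mat[OF y(1) my m(1)] by auto
    have "lenC d m \<le> lenC d w" using y(4) m(1) by blast
    then have "p3 w" using lenC_cmp(2)[OF wW mw mW mm m(2)] by blast
    then show ?thesis using wW mw by blast
  qed
  have ex: "\<exists>w. Q w"
  proof -
    obtain y where y: "y \<in> W_C d" "\<forall>i\<in>Ir r. \<forall>j\<in>Ir r. card (Rr i \<inter> y ` Rc j) = A i j"
      using exists_y by blast
    have my: "mat y" by (rule mat_of_card[OF y(1,2)])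
    obtain m where m: "m \<in> D y" "p3 m" using exists_p3[OF y(1)] by blast
    have mW: "m \<in> W_C d" and mm: "mat m" using D_WC[OF y(1) m(1)] D_mat[OF y(1) my m(1)] by auto
    have "\<forall>v\<in>D y. lenC d v \<le> lenC d m"
    proof
      fix v assume v: "v \<in> D y"
      have vW: "v \<in> W_C d" and mv: "mat v" using D_WC[OF y(1) v] D_mat[OF y(1) my v] by auto
      show "lenC d v \<le> lenC d m" by (rule lenC_cmp(1)[OF vW mv mW mm m(2)])
    qed
    then have "Q m" unfolding Q_def using y m(1) by blast
    then show ?thesis by blast
  qed
  have un: "w1 = w2" if "Q w1" "Q w2" for w1 w2
    using props[OF that(1)] props[OF that(2)] uniq by blast
  have "Q (THE w. Q w)" using ex un by (metis theI)
  then show ?thesis using props W by simp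
qed

end


context mainA
begin

lemma word_distinct:
  assumes bij: "bij_betw w Sg Sg"
  shows "distinct (word_of d w)"
proof -
  have wS: "w s \<in> Sg" if "s \<in> Sg" for s by (rule bij_betw_apply[OF bij that])
  have "inj_on (\<lambda>t. to_pos d (w (from_pos d t))) (set [1..<2 * d + 1])"
  proof (rule inj_onI)
    fix t1 t2 assume t: "t1 \<in> set [1..<2 * d + 1]" "t2 \<in> set [1..<2 * d + 1]"
      "to_pos d (w (from_pos d t1)) = to_pos d (w (from_pos d t2))"
    have f: "from_pos d t1 \<in> Sg" "from_pos d t2 \<in> Sg" using t(1,2) fp_range by auto
    then have "w (from_pos d t1) = w (from_pos d t2)" using tp_inj[OF wS wS] t(3) by blast
    then have "from_pos d t1 = from_pos d t2" using bij f unfolding bij_betw_def inj_on_def by blast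
    then show "t1 = t2" using tp_fp t(1,2) by (metis atLeastLessThan_iff less_Suc_eq_le set_upt Suc_eq_plus1)
  qed
  then show ?thesis unfolding word_of_def by (simp add: distinct_map del: upt_Suc)
qed

lemma sfrak_full: "2 * d \<le> sfrak r A (2 * r)"
proof -
  define jl :: "nat \<Rightarrow> int" where "jl l = (if l < r then int l + 1 else - (int (l - r) + 1))" for l
  define C where "C l = {(i, jl l) | i. i \<in> Ir r}" for l
  have jlI: "jl l \<in> Ir r" if "l < 2 * r" for l using that unfolding jl_def Ir_iff by auto
  have jlinj: "jl l = jl m \<Longrightarrow> l < 2 * r \<Longrightarrow> m < 2 * r \<Longrightarrow> l = m" for l m
    unfolding jl_def by (auto split: if_splits)
  have jlsurj: "\<exists>l<2 * r. jl l = j" if "j \<in> Ir r" for j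
  proof (cases "j > 0")
    case True
    then show ?thesis using that unfolding jl_def Ir_iff
      by (intro exI[of _ "nat j - 1"]) auto
  next
    case False
    then show ?thesis using that unfolding jl_def Ir_iff
      by (intro exI[of _ "r + nat (- j) - 1"]) auto
  qed
  have ch: "\<forall>l<2 * r. C l \<subseteq> Ir r \<times> Ir r \<and> is_chain (C l)"
    unfolding C_def is_chain_def ple_def using jlI by auto
  have dj: "\<forall>l<2 * r. \<forall>m<2 * r. l \<noteq> m \<longrightarrow> C l \<inter> C m = {}"
    unfolding C_def using jlinj by auto
  have U: "(\<Union>l<2 * r. C l) = Ir r \<times> Ir r"
  proof
    show "(\<Union>l<2 * r. C l) \<subseteq> Ir r \<times> Ir r" using ch by blast
    show "Ir r \<times> Ir r \<subseteq> (\<Union>l<2 * r. C l)"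
    proof
      fix x assume "x \<in> Ir r \<times> Ir r"
      then obtain i j where x: "x = (i, j)" "i \<in> Ir r" "j \<in> Ir r" by blast
      obtain l where "l < 2 * r" "jl l = j" using jlsurj x(3) by blast
      then show "x \<in> (\<Union>l<2 * r. C l)" unfolding C_def using x by blast
    qed
  qed
  show ?thesis using sfrak_ge[OF ch dj] U A_tot by simp
qed

lemma final:
  assumes bij: "bij_betw w Sg Sg" and p3: "p3 w" and mat: "mat w"
  shows "sigma_i r A = PT_i d w"
proof
  fix i
  define xs where "xs = word_of d w"
  define P where "P = PT xs"
  have dxs: "distinct xs" unfolding xs_def by (rule word_distinct[OF bij])
  have G: "sfrak r A k = rowsum P k" for k
    using greene_word[OF bij p3 mat, of k] greene_thm[OF dxs, of k] unfolding P_def xs_def by simp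
  have props: "rows_ok P" "distinct (concat P)" "set (concat P) = set xs"
    using PT_props[OF dxs] unfolding P_def by auto
  have lenP: "length (concat P) = 2 * d"
    using props distinct_card[OF props(2)] distinct_card[OF dxs] word_length[of d w] unfolding xs_def
    by metis
  have rs_all: "rowsum P (length P) = 2 * d"
  proof -
    have "rowsum P (length P) = (\<Sum>l<length P. length (P ! l))" unfolding rowsum_def by simp
    also have "\<dots> = sum_list (map length P)" by (simp add: sum_list_sum_nth atLeast0LessThan)
    also have "\<dots> = length (concat P)" by (simp add: length_concat)
    finally show ?thesis using lenP by simp
  qed
  have lenPr: "length P \<le> 2 * r"
  proof (rule ccontr)
    assume "\<not> length P \<le> 2 * r"
    then have lt: "2 * r < length P" by simp
    have "rowsum P (2 * r) = (\<Sum>l<2 * r. length (P ! l))" unfolding rowsum_def using lt by simp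
    also have "\<dots> < (\<Sum>l<length P. length (P ! l))"
    proof -
      have "(\<Sum>l<length P. length (P ! l)) = (\<Sum>l<2 * r. length (P ! l)) + (\<Sum>l\<in>{2 * r..<length P}. length (P ! l))"
      proof -
        have "{..<length P} = {..<2 * r} \<union> {2 * r..<length P}" using lt by auto
        moreover have "{..<2 * r} \<inter> {2 * r..<length P} = {}" by auto
        ultimately show ?thesis by (simp add: sum.union_disjoint)
      qed
      moreover have "0 < (\<Sum>l\<in>{2 * r..<length P}. length (P ! l))"
      proof -
        have "P ! (2 * r) \<in> set P" using lt by simp
        then have "0 < length (P ! (2 * r))" using props(1) unfolding rows_ok_def by auto
        moreover have "length (P ! (2 * r)) \<le> (\<Sum>l\<in>{2 * r..<length P}. length (P ! l))"
          using lt by (intro member_le_sum) auto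
        ultimately show ?thesis by (metis length_greater_0_conv order.strict_trans2)
      qed
      ultimately show ?thesis by simp
    qed
    also have "\<dots> = 2 * d" using rs_all unfolding rowsum_def by simp
    finally have "rowsum P (2 * r) < 2 * d" .
    then show False using sfrak_full G by (metis not_le)
  qed
  have PTi: "PT_i d w = shape P" unfolding PT_i_def P_def PT_def xs_def by simp
  have rsdiff: "rowsum P (Suc j) = rowsum P j + (if j < length P then length (P ! j) else 0)" for j
    unfolding rowsum_def by (cases "j < length P") (auto simp: min_def lessThan_Suc)
  show "sigma_i r A i = PT_i d w i"
  proof (cases "1 \<le> i \<and> i \<le> 2 * r")
    case True
    then obtain j where j: "i = Suc j" by (cases i) auto
    have "sigma_i r A i = rowsum P (Suc j) - rowsum P j" unfolding sigma_i_def using True G j by simp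
    also have "\<dots> = (if j < length P then length (P ! j) else 0)" using rsdiff by simp
    also have "\<dots> = shape P i" unfolding shape_def j by simp
    finally show ?thesis using PTi by simp
  next
    case False
    then have "sigma_i r A i = 0" unfolding sigma_i_def by (rule if_not_P)
    moreover have "shape P i = 0" using False lenPr unfolding shape_def by auto
    ultimately show ?thesis using PTi by simp
  qed
qed

lemma wAplus_props: "bij_betw (wAplus r d A) Sg Sg \<and> p3 (wAplus r d A) \<and> mat (wAplus r d A)"
proof -
  have h: "wAplus r d A \<in> W_C d \<and> p3 (wAplus r d A) \<and> mat (wAplus r d A)" by (rule wAplus_props')
  have "bij_betw (wAplus r d A) Sg Sg" using WC_bij h by simp
  then show ?thesis using h by simp
qed

end

theorem lemma5p6:
  fixes r d :: nat and A :: "int \<Rightarrow> int \<Rightarrow> nat"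
  assumes "r \<ge> 1" and "d \<ge> 1" and "A \<in> Pi_i r d"
  shows "sigma_i r A = PT_i d (wAplus r d A)"
proof -
  interpret mainA r d A using assms by unfold_locales
  show ?thesis using final wAplus_props by blast
qed


end
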